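(* Consider the $2\times2\times M$ model described in the context (an analogue of the gonihedric model with cyclic closure in the transverse directions), with real parameters $J_1,J_2,J_3$ and temperature $T>0$. Let $\lambda_{\max}$ be the largest real root of the characteristic equation of the $4\times4$ matrix $\tau$ and $\mu_{\max}$ the largest real root of the characteristic equation of the $3\times3$ matrix $\tau'$ (defined in the context). Then the free energy per site $f(T)=-k_BT\lim_{M\to\infty}\frac{1}{4M}\ln Z_M$ equals $-\frac{k_BT}{4}\ln\lambda_{\max}$, the internal energy per site $u=-T^2\partial_T[f/T]$ equals $k_BT^2\partial_T[\frac14\ln\lambda_{\max}]$, the heat capacity per site $C=\partial_Tu$ equals $2k_BT\partial_T[\frac14\ln\lambda_{\max}]+k_BT^2\partial_T^2[\frac14\ln\lambda_{\max}]$, and the non-percolation probability satisfies $\lim_{M\to\infty}\frac{\ln(Z'_M/Z_M)}{M}=\ln\frac{\mu_{\max}}{\lambda_{\max}}$.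
   Context: Sites $t_i^m$, $i\in\{0,1,2,3\}$ (indices mod 4), $m\in\{0,\dots,M-1\}$, cyclically closed in $m$, spins $\sigma_i^m\in\{-1,1\}$. The cube energy is $$\mathcal H^m=-\sum_{r=0}^3\Big(J_1\big[\sigma_r^m\sigma_{r+1}^m+\sigma_r^{m+1}\sigma_{r+1}^{m+1}+\sigma_r^m\sigma_r^{m+1}\big]+J_2\big[\tfrac38\sigma_r^m\sigma_{r+2}^m+\tfrac38\sigma_r^{m+1}\sigma_{r+2}^{m+1}+\sigma_r^m\sigma_{r+1}^{m+1}+\sigma_r^m\sigma_{r-1}^{m+1}\big]+J_3\big[\tfrac{3}{16}\textstyle\prod_i\sigma_i^m+\tfrac{3}{16}\prod_i\sigma_i^{m+1}+\sigma_r^m\sigma_{r+1}^m\sigma_r^{m+1}\sigma_{r+1}^{m+1}\big]\Big),$$ i.e. the couplings $J_{\{t_0^m,t_1^m\}}=J_{\{t_0^{m+1},t_1^{m+1}\}}=J_{\{t_0^m,t_0^{m+1}\}}=J_1$, $\frac83J_{\{t_0^m,t_2^m\}}=\frac83J_{\{t_0^{m+1},t_2^{m+1}\}}=J_{\{t_0^m,t_1^{m+1}\}}=J_{\{t_0^m,t_3^{m+1}\}}=J_2$, $\frac{16}{3}J_{\{t_0^m,\dots,t_3^m\}}=\frac{16}{3}J_{\{t_0^{m+1},\dots,t_3^{m+1}\}}=J_{\{t_0^m,t_1^m,t_0^{m+1},t_1^{m+1}\}}=J_3$, each summed over the four rotations $i\mapsto i+r$. $\mathcal H=\sum_m\mathcal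 H^m$, $Z_M=\sum_\sigma e^{-\mathcal H/(k_BT)}$ over all $\sigma\in\{-1,1\}^{4M}$; $Z'_M$ is the same sum restricted to configurations with no $m,r$ such that $\sigma_r^m=\sigma_{r+1}^m=-1$. Transfer matrices: index a layer state $(s_0,\dots,s_3)$ by $k=1+\sum_i2^i(1-s_i)/2$; $\theta_{k,l}=\exp(-\mathcal H^m/(k_BT))$ with layer $m$ in state $k$, layer $m+1$ in state $l$. $\tau_{i,j}=\sum_{l\in G_j}\theta_{r_i,l}$, $(r_i)=(1,2,4,6)$, $G_1=\{1,16\}$, $G_2=\{2,3,5,8,9,12,14,15\}$, $G_3=\{4,7,10,13\}$, $G_4=\{6,11\}$; $\tau'_{i,j}=\sum_{l\in G'_j}\theta_{r'_i,l}$, $(r'_i)=(1,2,6)$, $G'_1=\{1\}$, $G'_2=\{2,3,5,9\}$, $G'_3=\{6,11\}$. *)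

theory Defs
  imports "HOL-Analysis.Analysis" "Jordan_Normal_Form.Char_Poly"
begin

definition cube_energy :: "real \<Rightarrow> real \<Rightarrow> real \<Rightarrow> (nat \<Rightarrow> real) \<Rightarrow> (nat \<Rightarrow> real) \<Rightarrow> real" where
  "cube_energy J1 J2 J3 a b = - (\<Sum>r<4.
      J1 * (a r * a ((r+1) mod 4) + b r * b ((r+1) mod 4) + a r * b r)
    + J2 * (3/8 * a r * a ((r+2) mod 4) + 3/8 * b r * b ((r+2) mod 4)
            + a r * b ((r+1) mod 4) + a r * b ((r+3) mod 4))
    + J3 * (3/16 * (\<Prod>i<4. a i) + 3/16 * (\<Prod>i<4. b i)
            + a r * a ((r+1) mod 4) * b r * b ((r+1) mod 4)))"

definition configs :: "nat \<Rightarrow> (nat \<times> nat \<Rightarrow> real) set" where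
  "configs M = ({..<4} \<times> {..<M}) \<rightarrow>\<^sub>E {-1, 1}"

definition layer :: "nat \<Rightarrow> (nat \<times> nat \<Rightarrow> real) \<Rightarrow> nat \<Rightarrow> (nat \<Rightarrow> real)" where
  "layer M \<sigma> m = (\<lambda>i. \<sigma> (i mod 4, m mod M))"

definition hamiltonian :: "real \<Rightarrow> real \<Rightarrow> real \<Rightarrow> nat \<Rightarrow> (nat \<times> nat \<Rightarrow> real) \<Rightarrow> real" where
  "hamiltonian J1 J2 J3 M \<sigma> =
     (\<Sum>m<M. cube_energy J1 J2 J3 (layer M \<sigma> m) (layer M \<sigma> (m+1)))"

definition partition_fn :: "real \<Rightarrow> real \<Rightarrow> real \<Rightarrow> real \<Rightarrow> nat \<Rightarrow> real \<Rightarrow> real" where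
  "partition_fn kB J1 J2 J3 M T =
     (\<Sum>\<sigma>\<in>configs M. exp (- hamiltonian J1 J2 J3 M \<sigma> / (kB * T)))"

definition nonperc_configs :: "nat \<Rightarrow> (nat \<times> nat \<Rightarrow> real) set" where
  "nonperc_configs M = {\<sigma> \<in> configs M.
     \<not> (\<exists>m<M. \<exists>r<4. \<sigma> (r, m) = -1 \<and> \<sigma> ((r+1) mod 4, m) = -1)}"

definition partition_fn' :: "real \<Rightarrow> real \<Rightarrow> real \<Rightarrow> real \<Rightarrow> nat \<Rightarrow> real \<Rightarrow> real" where
  "partition_fn' kB J1 J2 J3 M T =
     (\<Sum>\<sigma>\<in>nonperc_configs M. exp (- hamiltonian J1 J2 J3 M \<sigma> / (kB * T)))"

(* layer state k in {1..16}: k = 1 + sum_i 2^i (1 - s_i)/2, i.e. s_i = -1 iff bit i of k-1 is set *)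
definition state_spin :: "nat \<Rightarrow> nat \<Rightarrow> real" where
  "state_spin k i = (if odd ((k - 1) div 2 ^ (i mod 4)) then -1 else 1)"

definition theta :: "real \<Rightarrow> real \<Rightarrow> real \<Rightarrow> real \<Rightarrow> real \<Rightarrow> nat \<Rightarrow> nat \<Rightarrow> real" where
  "theta kB J1 J2 J3 T k l = exp (- cube_energy J1 J2 J3 (state_spin k) (state_spin l) / (kB * T))"

definition rows_tau :: "nat list" where "rows_tau = [1, 2, 4, 6]"
definition groups_tau :: "nat set list" where
  "groups_tau = [{1,16}, {2,3,5,8,9,12,14,15}, {4,7,10,13}, {6,11}]"
definition rows_tau' :: "nat list" where "rows_tau' = [1, 2, 6]"
definition groups_tau' :: "nat set list" where
  "groups_tau' = [{1}, {2,3,5,9}, {6,11}]"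

(* tau_{i,j} (1-based in the paper) as a 4x4 matrix with 0-based indices *)
definition tau_mat :: "real \<Rightarrow> real \<Rightarrow> real \<Rightarrow> real \<Rightarrow> real \<Rightarrow> real mat" where
  "tau_mat kB J1 J2 J3 T = mat 4 4 (\<lambda>(i, j).
      \<Sum>l\<in>groups_tau ! j. theta kB J1 J2 J3 T (rows_tau ! i) l)"

definition tau'_mat :: "real \<Rightarrow> real \<Rightarrow> real \<Rightarrow> real \<Rightarrow> real \<Rightarrow> real mat" where
  "tau'_mat kB J1 J2 J3 T = mat 3 3 (\<lambda>(i, j).
      \<Sum>l\<in>groups_tau' ! j. theta kB J1 J2 J3 T (rows_tau' ! i) l)"

definition largest_real_eig :: "real mat \<Rightarrow> real" where
  "largest_real_eig A = Max {x. poly (char_poly A) x = 0}"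

definition lambda_max :: "real \<Rightarrow> real \<Rightarrow> real \<Rightarrow> real \<Rightarrow> real \<Rightarrow> real" where
  "lambda_max kB J1 J2 J3 T = largest_real_eig (tau_mat kB J1 J2 J3 T)"

definition mu_max :: "real \<Rightarrow> real \<Rightarrow> real \<Rightarrow> real \<Rightarrow> real \<Rightarrow> real" where
  "mu_max kB J1 J2 J3 T = largest_real_eig (tau'_mat kB J1 J2 J3 T)"

definition free_energy :: "real \<Rightarrow> real \<Rightarrow> real \<Rightarrow> real \<Rightarrow> real \<Rightarrow> real" where
  "free_energy kB J1 J2 J3 T =
     - kB * T * lim (\<lambda>M. ln (partition_fn kB J1 J2 J3 M T) / (4 * real M))"

definition internal_energy :: "real \<Rightarrow> real \<Rightarrow> real \<Rightarrow> real \<Rightarrow> real \<Rightarrow> real" where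
  "internal_energy kB J1 J2 J3 T = - (T ^ 2) * deriv (\<lambda>t. free_energy kB J1 J2 J3 t / t) T"

definition heat_capacity :: "real \<Rightarrow> real \<Rightarrow> real \<Rightarrow> real \<Rightarrow> real \<Rightarrow> real" where
  "heat_capacity kB J1 J2 J3 T = deriv (internal_energy kB J1 J2 J3) T"

end

theory Submission
  imports Defs
begin


lemma sum4: "(\<Sum>r<(4::nat). f r) = f 0 + f 1 + f 2 + (f 3::real)"
  by (simp add: eval_nat_numeral)
lemma prod4: "(\<Prod>r<(4::nat). f r) = f 0 * f 1 * f 2 * (f 3::real)"
  by (simp add: eval_nat_numeral)

lemma cube_energy_expand: "cube_energy J1 J2 J3 a b = - (
      J1 * (a 0 * a 1 + b 0 * b 1 + a 0 * b 0 + a 1 * a 2 + b 1 * b 2 + a 1 * b 1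
          + a 2 * a 3 + b 2 * b 3 + a 2 * b 2 + a 3 * a 0 + b 3 * b 0 + a 3 * b 3)
    + J2 * (3/4 * a 0 * a 2 + 3/4 * a 1 * a 3 + 3/4 * b 0 * b 2 + 3/4 * b 1 * b 3
          + a 0 * b 1 + a 0 * b 3 + a 1 * b 2 + a 1 * b 0 + a 2 * b 3 + a 2 * b 1 + a 3 * b 0 + a 3 * b 2)
    + J3 * (3/4 * (a 0 * a 1 * a 2 * a 3) + 3/4 * (b 0 * b 1 * b 2 * b 3)
          + a 0 * a 1 * b 0 * b 1 + a 1 * a 2 * b 1 * b 2 + a 2 * a 3 * b 2 * b 3 + a 3 * a 0 * b 3 * b 0))"
proof -
  have m: "(0+1) mod 4 = (1::nat)" "(1+1) mod 4 = (2::nat)" "(2+1) mod 4 = (3::nat)" "(3+1) mod 4 = (0::nat)"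
     "(0+2) mod 4 = (2::nat)" "(1+2) mod 4 = (3::nat)" "(2+2) mod 4 = (0::nat)" "(3+2) mod 4 = (1::nat)"
     "(0+3) mod 4 = (3::nat)" "(1+3) mod 4 = (0::nat)" "(2+3) mod 4 = (1::nat)" "(3+3) mod 4 = (2::nat)"
    by simp_all
  show ?thesis
    unfolding cube_energy_def sum4 prod4 m
    by (simp add: algebra_simps)
qed
definition thE :: "real \<Rightarrow> real \<Rightarrow> real \<Rightarrow> real \<Rightarrow> real \<Rightarrow> real \<Rightarrow> real \<Rightarrow> real \<Rightarrow> real" where
  "thE kB J1 J2 J3 T c1 c2 c3 = exp (- ((c1 * J1 + c2 * J2 + c3 * J3) / 16) / (kB * T))"

lemma thE_I: "cube_energy J1 J2 J3 a b = (c1 * J1 + c2 * J2 + c3 * J3) / 16 \<Longrightarrow>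
   exp (- cube_energy J1 J2 J3 a b / (kB * T)) = thE kB J1 J2 J3 T c1 c2 c3"
  unfolding thE_def by (simp only:)

lemma ss_1_0: "state_spin 1 0 = 1" by (simp add: state_spin_def)
lemma ss_1_1: "state_spin 1 1 = 1" by (simp add: state_spin_def)
lemma ss_1_2: "state_spin 1 2 = 1" by (simp add: state_spin_def)
lemma ss_1_3: "state_spin 1 3 = 1" by (simp add: state_spin_def)
lemma ss_2_0: "state_spin 2 0 = -1" by (simp add: state_spin_def)
lemma ss_2_1: "state_spin 2 1 = 1" by (simp add: state_spin_def)
lemma ss_2_2: "state_spin 2 2 = 1" by (simp add: state_spin_def)
lemma ss_2_3: "state_spin 2 3 = 1" by (simp add: state_spin_def)
lemma ss_3_0: "state_spin 3 0 = 1" by (simp add: state_spin_def)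
lemma ss_3_1: "state_spin 3 1 = -1" by (simp add: state_spin_def)
lemma ss_3_2: "state_spin 3 2 = 1" by (simp add: state_spin_def)
lemma ss_3_3: "state_spin 3 3 = 1" by (simp add: state_spin_def)
lemma ss_4_0: "state_spin 4 0 = -1" by (simp add: state_spin_def)
lemma ss_4_1: "state_spin 4 1 = -1" by (simp add: state_spin_def)
lemma ss_4_2: "state_spin 4 2 = 1" by (simp add: state_spin_def)
lemma ss_4_3: "state_spin 4 3 = 1" by (simp add: state_spin_def)
lemma ss_5_0: "state_spin 5 0 = 1" by (simp add: state_spin_def)
lemma ss_5_1: "state_spin 5 1 = 1" by (simp add: state_spin_def)
lemma ss_5_2: "state_spin 5 2 = -1" by (simp add: state_spin_def)
lemma ss_5_3: "state_spin 5 3 = 1" by (simp add: state_spin_def)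
lemma ss_6_0: "state_spin 6 0 = -1" by (simp add: state_spin_def)
lemma ss_6_1: "state_spin 6 1 = 1" by (simp add: state_spin_def)
lemma ss_6_2: "state_spin 6 2 = -1" by (simp add: state_spin_def)
lemma ss_6_3: "state_spin 6 3 = 1" by (simp add: state_spin_def)
lemma ss_7_0: "state_spin 7 0 = 1" by (simp add: state_spin_def)
lemma ss_7_1: "state_spin 7 1 = -1" by (simp add: state_spin_def)
lemma ss_7_2: "state_spin 7 2 = -1" by (simp add: state_spin_def)
lemma ss_7_3: "state_spin 7 3 = 1" by (simp add: state_spin_def)
lemma ss_8_0: "state_spin 8 0 = -1" by (simp add: state_spin_def)
lemma ss_8_1: "state_spin 8 1 = -1" by (simp add: state_spin_def)
lemma ss_8_2: "state_spin 8 2 = -1" by (simp add: state_spin_def)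
lemma ss_8_3: "state_spin 8 3 = 1" by (simp add: state_spin_def)
lemma ss_9_0: "state_spin 9 0 = 1" by (simp add: state_spin_def)
lemma ss_9_1: "state_spin 9 1 = 1" by (simp add: state_spin_def)
lemma ss_9_2: "state_spin 9 2 = 1" by (simp add: state_spin_def)
lemma ss_9_3: "state_spin 9 3 = -1" by (simp add: state_spin_def)
lemma ss_10_0: "state_spin 10 0 = -1" by (simp add: state_spin_def)
lemma ss_10_1: "state_spin 10 1 = 1" by (simp add: state_spin_def)
lemma ss_10_2: "state_spin 10 2 = 1" by (simp add: state_spin_def)
lemma ss_10_3: "state_spin 10 3 = -1" by (simp add: state_spin_def)
lemma ss_11_0: "state_spin 11 0 = 1" by (simp add: state_spin_def)
lemma ss_11_1: "state_spin 11 1 = -1" by (simp add: state_spin_def)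
lemma ss_11_2: "state_spin 11 2 = 1" by (simp add: state_spin_def)
lemma ss_11_3: "state_spin 11 3 = -1" by (simp add: state_spin_def)
lemma ss_12_0: "state_spin 12 0 = -1" by (simp add: state_spin_def)
lemma ss_12_1: "state_spin 12 1 = -1" by (simp add: state_spin_def)
lemma ss_12_2: "state_spin 12 2 = 1" by (simp add: state_spin_def)
lemma ss_12_3: "state_spin 12 3 = -1" by (simp add: state_spin_def)
lemma ss_13_0: "state_spin 13 0 = 1" by (simp add: state_spin_def)
lemma ss_13_1: "state_spin 13 1 = 1" by (simp add: state_spin_def)
lemma ss_13_2: "state_spin 13 2 = -1" by (simp add: state_spin_def)
lemma ss_13_3: "state_spin 13 3 = -1" by (simp add: state_spin_def)
lemma ss_14_0: "state_spin 14 0 = -1" by (simp add: state_spin_def)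
lemma ss_14_1: "state_spin 14 1 = 1" by (simp add: state_spin_def)
lemma ss_14_2: "state_spin 14 2 = -1" by (simp add: state_spin_def)
lemma ss_14_3: "state_spin 14 3 = -1" by (simp add: state_spin_def)
lemma ss_15_0: "state_spin 15 0 = 1" by (simp add: state_spin_def)
lemma ss_15_1: "state_spin 15 1 = -1" by (simp add: state_spin_def)
lemma ss_15_2: "state_spin 15 2 = -1" by (simp add: state_spin_def)
lemma ss_15_3: "state_spin 15 3 = -1" by (simp add: state_spin_def)
lemma ss_16_0: "state_spin 16 0 = -1" by (simp add: state_spin_def)
lemma ss_16_1: "state_spin 16 1 = -1" by (simp add: state_spin_def)
lemma ss_16_2: "state_spin 16 2 = -1" by (simp add: state_spin_def)
lemma ss_16_3: "state_spin 16 3 = -1" by (simp add: state_spin_def)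
lemmas ss_all = ss_1_0 ss_1_1 ss_1_2 ss_1_3 ss_2_0 ss_2_1 ss_2_2 ss_2_3 ss_3_0 ss_3_1 ss_3_2 ss_3_3 ss_4_0 ss_4_1 ss_4_2 ss_4_3 ss_5_0 ss_5_1 ss_5_2 ss_5_3 ss_6_0 ss_6_1 ss_6_2 ss_6_3 ss_7_0 ss_7_1 ss_7_2 ss_7_3 ss_8_0 ss_8_1 ss_8_2 ss_8_3 ss_9_0 ss_9_1 ss_9_2 ss_9_3 ss_10_0 ss_10_1 ss_10_2 ss_10_3 ss_11_0 ss_11_1 ss_11_2 ss_11_3 ss_12_0 ss_12_1 ss_12_2 ss_12_3 ss_13_0 ss_13_1 ss_13_2 ss_13_3 ss_14_0 ss_14_1 ss_14_2 ss_14_3 ss_15_0 ss_15_1 ss_15_2 ss_15_3 ss_16_0 ss_16_1 ss_16_2 ss_16_3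
lemma th_1_1[simp]: "theta kB J1 J2 J3 T 1 1 = thE kB J1 J2 J3 T (-192) (-176) (-88)" unfolding theta_def by (rule thE_I) (simp only: cube_energy_expand ss_all, simp add: field_simps)
lemma th_1_2[simp]: "theta kB J1 J2 J3 T 1 2 = thE kB J1 J2 J3 T (-96) (-88) (0)" unfolding theta_def by (rule thE_I) (simp only: cube_energy_expand ss_all, simp add: field_simps)
lemma th_1_3[simp]: "theta kB J1 J2 J3 T 1 3 = thE kB J1 J2 J3 T (-96) (-88) (0)" unfolding theta_def by (rule thE_I) (simp only: cube_energy_expand ss_all, simp add: field_simps)
lemma th_1_4[simp]: "theta kB J1 J2 J3 T 1 4 = thE kB J1 J2 J3 T (-64) (0) (-24)" unfolding theta_def by (rule thE_I) (simp only: cube_energy_expand ss_all, simp add: field_simps)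
lemma th_1_5[simp]: "theta kB J1 J2 J3 T 1 5 = thE kB J1 J2 J3 T (-96) (-88) (0)" unfolding theta_def by (rule thE_I) (simp only: cube_energy_expand ss_all, simp add: field_simps)
lemma th_1_6[simp]: "theta kB J1 J2 J3 T 1 6 = thE kB J1 J2 J3 T (0) (-48) (40)" unfolding theta_def by (rule thE_I) (simp only: cube_energy_expand ss_all, simp add: field_simps)
lemma th_1_7[simp]: "theta kB J1 J2 J3 T 1 7 = thE kB J1 J2 J3 T (-64) (0) (-24)" unfolding theta_def by (rule thE_I) (simp only: cube_energy_expand ss_all, simp add: field_simps)
lemma th_1_8[simp]: "theta kB J1 J2 J3 T 1 8 = thE kB J1 J2 J3 T (-32) (40) (0)" unfolding theta_def by (rule thE_I) (simp only: cube_energy_expand ss_all, simp add: field_simps)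
lemma th_1_9[simp]: "theta kB J1 J2 J3 T 1 9 = thE kB J1 J2 J3 T (-96) (-88) (0)" unfolding theta_def by (rule thE_I) (simp only: cube_energy_expand ss_all, simp add: field_simps)
lemma th_1_10[simp]: "theta kB J1 J2 J3 T 1 10 = thE kB J1 J2 J3 T (-64) (0) (-24)" unfolding theta_def by (rule thE_I) (simp only: cube_energy_expand ss_all, simp add: field_simps)
lemma th_1_11[simp]: "theta kB J1 J2 J3 T 1 11 = thE kB J1 J2 J3 T (0) (-48) (40)" unfolding theta_def by (rule thE_I) (simp only: cube_energy_expand ss_all, simp add: field_simps)
lemma th_1_12[simp]: "theta kB J1 J2 J3 T 1 12 = thE kB J1 J2 J3 T (-32) (40) (0)" unfolding theta_def by (rule thE_I) (simp only: cube_energy_expand ss_all, simp add: field_simps)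
lemma th_1_13[simp]: "theta kB J1 J2 J3 T 1 13 = thE kB J1 J2 J3 T (-64) (0) (-24)" unfolding theta_def by (rule thE_I) (simp only: cube_energy_expand ss_all, simp add: field_simps)
lemma th_1_14[simp]: "theta kB J1 J2 J3 T 1 14 = thE kB J1 J2 J3 T (-32) (40) (0)" unfolding theta_def by (rule thE_I) (simp only: cube_energy_expand ss_all, simp add: field_simps)
lemma th_1_15[simp]: "theta kB J1 J2 J3 T 1 15 = thE kB J1 J2 J3 T (-32) (40) (0)" unfolding theta_def by (rule thE_I) (simp only: cube_energy_expand ss_all, simp add: field_simps)
lemma th_1_16[simp]: "theta kB J1 J2 J3 T 1 16 = thE kB J1 J2 J3 T (-64) (80) (-88)" unfolding theta_def by (rule thE_I) (simp only: cube_energy_expand ss_all, simp add: field_simps)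
lemma th_2_1[simp]: "theta kB J1 J2 J3 T 2 1 = thE kB J1 J2 J3 T (-96) (-88) (0)" unfolding theta_def by (rule thE_I) (simp only: cube_energy_expand ss_all, simp add: field_simps)
lemma th_2_2[simp]: "theta kB J1 J2 J3 T 2 2 = thE kB J1 J2 J3 T (-64) (0) (-40)" unfolding theta_def by (rule thE_I) (simp only: cube_energy_expand ss_all, simp add: field_simps)
lemma th_2_3[simp]: "theta kB J1 J2 J3 T 2 3 = thE kB J1 J2 J3 T (0) (-64) (24)" unfolding theta_def by (rule thE_I) (simp only: cube_energy_expand ss_all, simp add: field_simps)
lemma th_2_4[simp]: "theta kB J1 J2 J3 T 2 4 = thE kB J1 J2 J3 T (-32) (24) (0)" unfolding theta_def by (rule thE_I) (simp only: cube_energy_expand ss_all, simp add: field_simps)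
lemma th_2_5[simp]: "theta kB J1 J2 J3 T 2 5 = thE kB J1 J2 J3 T (0) (0) (88)" unfolding theta_def by (rule thE_I) (simp only: cube_energy_expand ss_all, simp add: field_simps)
lemma th_2_6[simp]: "theta kB J1 J2 J3 T 2 6 = thE kB J1 J2 J3 T (32) (40) (0)" unfolding theta_def by (rule thE_I) (simp only: cube_energy_expand ss_all, simp add: field_simps)
lemma th_2_7[simp]: "theta kB J1 J2 J3 T 2 7 = thE kB J1 J2 J3 T (32) (24) (0)" unfolding theta_def by (rule thE_I) (simp only: cube_energy_expand ss_all, simp add: field_simps)
lemma th_2_8[simp]: "theta kB J1 J2 J3 T 2 8 = thE kB J1 J2 J3 T (0) (64) (24)" unfolding theta_def by (rule thE_I) (simp only: cube_energy_expand ss_all, simp add: field_simps)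
lemma th_2_9[simp]: "theta kB J1 J2 J3 T 2 9 = thE kB J1 J2 J3 T (0) (-64) (24)" unfolding theta_def by (rule thE_I) (simp only: cube_energy_expand ss_all, simp add: field_simps)
lemma th_2_10[simp]: "theta kB J1 J2 J3 T 2 10 = thE kB J1 J2 J3 T (-32) (24) (0)" unfolding theta_def by (rule thE_I) (simp only: cube_energy_expand ss_all, simp add: field_simps)
lemma th_2_11[simp]: "theta kB J1 J2 J3 T 2 11 = thE kB J1 J2 J3 T (96) (-88) (0)" unfolding theta_def by (rule thE_I) (simp only: cube_energy_expand ss_all, simp add: field_simps)
lemma th_2_12[simp]: "theta kB J1 J2 J3 T 2 12 = thE kB J1 J2 J3 T (0) (0) (88)" unfolding theta_def by (rule thE_I) (simp only: cube_energy_expand ss_all, simp add: field_simps)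
lemma th_2_13[simp]: "theta kB J1 J2 J3 T 2 13 = thE kB J1 J2 J3 T (32) (24) (0)" unfolding theta_def by (rule thE_I) (simp only: cube_energy_expand ss_all, simp add: field_simps)
lemma th_2_14[simp]: "theta kB J1 J2 J3 T 2 14 = thE kB J1 J2 J3 T (0) (64) (24)" unfolding theta_def by (rule thE_I) (simp only: cube_energy_expand ss_all, simp add: field_simps)
lemma th_2_15[simp]: "theta kB J1 J2 J3 T 2 15 = thE kB J1 J2 J3 T (64) (0) (-40)" unfolding theta_def by (rule thE_I) (simp only: cube_energy_expand ss_all, simp add: field_simps)
lemma th_2_16[simp]: "theta kB J1 J2 J3 T 2 16 = thE kB J1 J2 J3 T (-32) (40) (0)" unfolding theta_def by (rule thE_I) (simp only: cube_energy_expand ss_all, simp add: field_simps)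
lemma th_3_1[simp]: "theta kB J1 J2 J3 T 3 1 = thE kB J1 J2 J3 T (-96) (-88) (0)" unfolding theta_def by (rule thE_I) (simp only: cube_energy_expand ss_all, simp add: field_simps)
lemma th_3_2[simp]: "theta kB J1 J2 J3 T 3 2 = thE kB J1 J2 J3 T (0) (-64) (24)" unfolding theta_def by (rule thE_I) (simp only: cube_energy_expand ss_all, simp add: field_simps)
lemma th_3_3[simp]: "theta kB J1 J2 J3 T 3 3 = thE kB J1 J2 J3 T (-64) (0) (-40)" unfolding theta_def by (rule thE_I) (simp only: cube_energy_expand ss_all, simp add: field_simps)
lemma th_3_4[simp]: "theta kB J1 J2 J3 T 3 4 = thE kB J1 J2 J3 T (-32) (24) (0)" unfolding theta_def by (rule thE_I) (simp only: cube_energy_expand ss_all, simp add: field_simps)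
lemma th_3_5[simp]: "theta kB J1 J2 J3 T 3 5 = thE kB J1 J2 J3 T (0) (-64) (24)" unfolding theta_def by (rule thE_I) (simp only: cube_energy_expand ss_all, simp add: field_simps)
lemma th_3_6[simp]: "theta kB J1 J2 J3 T 3 6 = thE kB J1 J2 J3 T (96) (-88) (0)" unfolding theta_def by (rule thE_I) (simp only: cube_energy_expand ss_all, simp add: field_simps)
lemma th_3_7[simp]: "theta kB J1 J2 J3 T 3 7 = thE kB J1 J2 J3 T (-32) (24) (0)" unfolding theta_def by (rule thE_I) (simp only: cube_energy_expand ss_all, simp add: field_simps)
lemma th_3_8[simp]: "theta kB J1 J2 J3 T 3 8 = thE kB J1 J2 J3 T (0) (0) (88)" unfolding theta_def by (rule thE_I) (simp only: cube_energy_expand ss_all, simp add: field_simps)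
lemma th_3_9[simp]: "theta kB J1 J2 J3 T 3 9 = thE kB J1 J2 J3 T (0) (0) (88)" unfolding theta_def by (rule thE_I) (simp only: cube_energy_expand ss_all, simp add: field_simps)
lemma th_3_10[simp]: "theta kB J1 J2 J3 T 3 10 = thE kB J1 J2 J3 T (32) (24) (0)" unfolding theta_def by (rule thE_I) (simp only: cube_energy_expand ss_all, simp add: field_simps)
lemma th_3_11[simp]: "theta kB J1 J2 J3 T 3 11 = thE kB J1 J2 J3 T (32) (40) (0)" unfolding theta_def by (rule thE_I) (simp only: cube_energy_expand ss_all, simp add: field_simps)
lemma th_3_12[simp]: "theta kB J1 J2 J3 T 3 12 = thE kB J1 J2 J3 T (0) (64) (24)" unfolding theta_def by (rule thE_I) (simp only: cube_energy_expand ss_all, simp add: field_simps)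
lemma th_3_13[simp]: "theta kB J1 J2 J3 T 3 13 = thE kB J1 J2 J3 T (32) (24) (0)" unfolding theta_def by (rule thE_I) (simp only: cube_energy_expand ss_all, simp add: field_simps)
lemma th_3_14[simp]: "theta kB J1 J2 J3 T 3 14 = thE kB J1 J2 J3 T (64) (0) (-40)" unfolding theta_def by (rule thE_I) (simp only: cube_energy_expand ss_all, simp add: field_simps)
lemma th_3_15[simp]: "theta kB J1 J2 J3 T 3 15 = thE kB J1 J2 J3 T (0) (64) (24)" unfolding theta_def by (rule thE_I) (simp only: cube_energy_expand ss_all, simp add: field_simps)
lemma th_3_16[simp]: "theta kB J1 J2 J3 T 3 16 = thE kB J1 J2 J3 T (-32) (40) (0)" unfolding theta_def by (rule thE_I) (simp only: cube_energy_expand ss_all, simp add: field_simps)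
lemma th_4_1[simp]: "theta kB J1 J2 J3 T 4 1 = thE kB J1 J2 J3 T (-64) (0) (-24)" unfolding theta_def by (rule thE_I) (simp only: cube_energy_expand ss_all, simp add: field_simps)
lemma th_4_2[simp]: "theta kB J1 J2 J3 T 4 2 = thE kB J1 J2 J3 T (-32) (24) (0)" unfolding theta_def by (rule thE_I) (simp only: cube_energy_expand ss_all, simp add: field_simps)
lemma th_4_3[simp]: "theta kB J1 J2 J3 T 4 3 = thE kB J1 J2 J3 T (-32) (24) (0)" unfolding theta_def by (rule thE_I) (simp only: cube_energy_expand ss_all, simp add: field_simps)
lemma th_4_4[simp]: "theta kB J1 J2 J3 T 4 4 = thE kB J1 J2 J3 T (-64) (48) (-88)" unfolding theta_def by (rule thE_I) (simp only: cube_energy_expand ss_all, simp add: field_simps)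
lemma th_4_5[simp]: "theta kB J1 J2 J3 T 4 5 = thE kB J1 J2 J3 T (32) (24) (0)" unfolding theta_def by (rule thE_I) (simp only: cube_energy_expand ss_all, simp add: field_simps)
lemma th_4_6[simp]: "theta kB J1 J2 J3 T 4 6 = thE kB J1 J2 J3 T (64) (0) (-24)" unfolding theta_def by (rule thE_I) (simp only: cube_energy_expand ss_all, simp add: field_simps)
lemma th_4_7[simp]: "theta kB J1 J2 J3 T 4 7 = thE kB J1 J2 J3 T (0) (48) (40)" unfolding theta_def by (rule thE_I) (simp only: cube_energy_expand ss_all, simp add: field_simps)
lemma th_4_8[simp]: "theta kB J1 J2 J3 T 4 8 = thE kB J1 J2 J3 T (-32) (24) (0)" unfolding theta_def by (rule thE_I) (simp only: cube_energy_expand ss_all, simp add: field_simps)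
lemma th_4_9[simp]: "theta kB J1 J2 J3 T 4 9 = thE kB J1 J2 J3 T (32) (24) (0)" unfolding theta_def by (rule thE_I) (simp only: cube_energy_expand ss_all, simp add: field_simps)
lemma th_4_10[simp]: "theta kB J1 J2 J3 T 4 10 = thE kB J1 J2 J3 T (0) (48) (40)" unfolding theta_def by (rule thE_I) (simp only: cube_energy_expand ss_all, simp add: field_simps)
lemma th_4_11[simp]: "theta kB J1 J2 J3 T 4 11 = thE kB J1 J2 J3 T (64) (0) (-24)" unfolding theta_def by (rule thE_I) (simp only: cube_energy_expand ss_all, simp add: field_simps)
lemma th_4_12[simp]: "theta kB J1 J2 J3 T 4 12 = thE kB J1 J2 J3 T (-32) (24) (0)" unfolding theta_def by (rule thE_I) (simp only: cube_energy_expand ss_all, simp add: field_simps)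
lemma th_4_13[simp]: "theta kB J1 J2 J3 T 4 13 = thE kB J1 J2 J3 T (64) (48) (-88)" unfolding theta_def by (rule thE_I) (simp only: cube_energy_expand ss_all, simp add: field_simps)
lemma th_4_14[simp]: "theta kB J1 J2 J3 T 4 14 = thE kB J1 J2 J3 T (32) (24) (0)" unfolding theta_def by (rule thE_I) (simp only: cube_energy_expand ss_all, simp add: field_simps)
lemma th_4_15[simp]: "theta kB J1 J2 J3 T 4 15 = thE kB J1 J2 J3 T (32) (24) (0)" unfolding theta_def by (rule thE_I) (simp only: cube_energy_expand ss_all, simp add: field_simps)
lemma th_4_16[simp]: "theta kB J1 J2 J3 T 4 16 = thE kB J1 J2 J3 T (-64) (0) (-24)" unfolding theta_def by (rule thE_I) (simp only: cube_energy_expand ss_all, simp add: field_simps)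
lemma th_5_1[simp]: "theta kB J1 J2 J3 T 5 1 = thE kB J1 J2 J3 T (-96) (-88) (0)" unfolding theta_def by (rule thE_I) (simp only: cube_energy_expand ss_all, simp add: field_simps)
lemma th_5_2[simp]: "theta kB J1 J2 J3 T 5 2 = thE kB J1 J2 J3 T (0) (0) (88)" unfolding theta_def by (rule thE_I) (simp only: cube_energy_expand ss_all, simp add: field_simps)
lemma th_5_3[simp]: "theta kB J1 J2 J3 T 5 3 = thE kB J1 J2 J3 T (0) (-64) (24)" unfolding theta_def by (rule thE_I) (simp only: cube_energy_expand ss_all, simp add: field_simps)
lemma th_5_4[simp]: "theta kB J1 J2 J3 T 5 4 = thE kB J1 J2 J3 T (32) (24) (0)" unfolding theta_def by (rule thE_I) (simp only: cube_energy_expand ss_all, simp add: field_simps)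
lemma th_5_5[simp]: "theta kB J1 J2 J3 T 5 5 = thE kB J1 J2 J3 T (-64) (0) (-40)" unfolding theta_def by (rule thE_I) (simp only: cube_energy_expand ss_all, simp add: field_simps)
lemma th_5_6[simp]: "theta kB J1 J2 J3 T 5 6 = thE kB J1 J2 J3 T (32) (40) (0)" unfolding theta_def by (rule thE_I) (simp only: cube_energy_expand ss_all, simp add: field_simps)
lemma th_5_7[simp]: "theta kB J1 J2 J3 T 5 7 = thE kB J1 J2 J3 T (-32) (24) (0)" unfolding theta_def by (rule thE_I) (simp only: cube_energy_expand ss_all, simp add: field_simps)
lemma th_5_8[simp]: "theta kB J1 J2 J3 T 5 8 = thE kB J1 J2 J3 T (0) (64) (24)" unfolding theta_def by (rule thE_I) (simp only: cube_energy_expand ss_all, simp add: field_simps)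
lemma th_5_9[simp]: "theta kB J1 J2 J3 T 5 9 = thE kB J1 J2 J3 T (0) (-64) (24)" unfolding theta_def by (rule thE_I) (simp only: cube_energy_expand ss_all, simp add: field_simps)
lemma th_5_10[simp]: "theta kB J1 J2 J3 T 5 10 = thE kB J1 J2 J3 T (32) (24) (0)" unfolding theta_def by (rule thE_I) (simp only: cube_energy_expand ss_all, simp add: field_simps)
lemma th_5_11[simp]: "theta kB J1 J2 J3 T 5 11 = thE kB J1 J2 J3 T (96) (-88) (0)" unfolding theta_def by (rule thE_I) (simp only: cube_energy_expand ss_all, simp add: field_simps)
lemma th_5_12[simp]: "theta kB J1 J2 J3 T 5 12 = thE kB J1 J2 J3 T (64) (0) (-40)" unfolding theta_def by (rule thE_I) (simp only: cube_energy_expand ss_all, simp add: field_simps)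
lemma th_5_13[simp]: "theta kB J1 J2 J3 T 5 13 = thE kB J1 J2 J3 T (-32) (24) (0)" unfolding theta_def by (rule thE_I) (simp only: cube_energy_expand ss_all, simp add: field_simps)
lemma th_5_14[simp]: "theta kB J1 J2 J3 T 5 14 = thE kB J1 J2 J3 T (0) (64) (24)" unfolding theta_def by (rule thE_I) (simp only: cube_energy_expand ss_all, simp add: field_simps)
lemma th_5_15[simp]: "theta kB J1 J2 J3 T 5 15 = thE kB J1 J2 J3 T (0) (0) (88)" unfolding theta_def by (rule thE_I) (simp only: cube_energy_expand ss_all, simp add: field_simps)
lemma th_5_16[simp]: "theta kB J1 J2 J3 T 5 16 = thE kB J1 J2 J3 T (-32) (40) (0)" unfolding theta_def by (rule thE_I) (simp only: cube_energy_expand ss_all, simp add: field_simps)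
lemma th_6_1[simp]: "theta kB J1 J2 J3 T 6 1 = thE kB J1 J2 J3 T (0) (-48) (40)" unfolding theta_def by (rule thE_I) (simp only: cube_energy_expand ss_all, simp add: field_simps)
lemma th_6_2[simp]: "theta kB J1 J2 J3 T 6 2 = thE kB J1 J2 J3 T (32) (40) (0)" unfolding theta_def by (rule thE_I) (simp only: cube_energy_expand ss_all, simp add: field_simps)
lemma th_6_3[simp]: "theta kB J1 J2 J3 T 6 3 = thE kB J1 J2 J3 T (96) (-88) (0)" unfolding theta_def by (rule thE_I) (simp only: cube_energy_expand ss_all, simp add: field_simps)
lemma th_6_4[simp]: "theta kB J1 J2 J3 T 6 4 = thE kB J1 J2 J3 T (64) (0) (-24)" unfolding theta_def by (rule thE_I) (simp only: cube_energy_expand ss_all, simp add: field_simps)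
lemma th_6_5[simp]: "theta kB J1 J2 J3 T 6 5 = thE kB J1 J2 J3 T (32) (40) (0)" unfolding theta_def by (rule thE_I) (simp only: cube_energy_expand ss_all, simp add: field_simps)
lemma th_6_6[simp]: "theta kB J1 J2 J3 T 6 6 = thE kB J1 J2 J3 T (64) (80) (-88)" unfolding theta_def by (rule thE_I) (simp only: cube_energy_expand ss_all, simp add: field_simps)
lemma th_6_7[simp]: "theta kB J1 J2 J3 T 6 7 = thE kB J1 J2 J3 T (64) (0) (-24)" unfolding theta_def by (rule thE_I) (simp only: cube_energy_expand ss_all, simp add: field_simps)
lemma th_6_8[simp]: "theta kB J1 J2 J3 T 6 8 = thE kB J1 J2 J3 T (32) (40) (0)" unfolding theta_def by (rule thE_I) (simp only: cube_energy_expand ss_all, simp add: field_simps)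
lemma th_6_9[simp]: "theta kB J1 J2 J3 T 6 9 = thE kB J1 J2 J3 T (96) (-88) (0)" unfolding theta_def by (rule thE_I) (simp only: cube_energy_expand ss_all, simp add: field_simps)
lemma th_6_10[simp]: "theta kB J1 J2 J3 T 6 10 = thE kB J1 J2 J3 T (64) (0) (-24)" unfolding theta_def by (rule thE_I) (simp only: cube_energy_expand ss_all, simp add: field_simps)
lemma th_6_11[simp]: "theta kB J1 J2 J3 T 6 11 = thE kB J1 J2 J3 T (192) (-176) (-88)" unfolding theta_def by (rule thE_I) (simp only: cube_energy_expand ss_all, simp add: field_simps)
lemma th_6_12[simp]: "theta kB J1 J2 J3 T 6 12 = thE kB J1 J2 J3 T (96) (-88) (0)" unfolding theta_def by (rule thE_I) (simp only: cube_energy_expand ss_all, simp add: field_simps)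
lemma th_6_13[simp]: "theta kB J1 J2 J3 T 6 13 = thE kB J1 J2 J3 T (64) (0) (-24)" unfolding theta_def by (rule thE_I) (simp only: cube_energy_expand ss_all, simp add: field_simps)
lemma th_6_14[simp]: "theta kB J1 J2 J3 T 6 14 = thE kB J1 J2 J3 T (32) (40) (0)" unfolding theta_def by (rule thE_I) (simp only: cube_energy_expand ss_all, simp add: field_simps)
lemma th_6_15[simp]: "theta kB J1 J2 J3 T 6 15 = thE kB J1 J2 J3 T (96) (-88) (0)" unfolding theta_def by (rule thE_I) (simp only: cube_energy_expand ss_all, simp add: field_simps)
lemma th_6_16[simp]: "theta kB J1 J2 J3 T 6 16 = thE kB J1 J2 J3 T (0) (-48) (40)" unfolding theta_def by (rule thE_I) (simp only: cube_energy_expand ss_all, simp add: field_simps)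
lemma th_7_1[simp]: "theta kB J1 J2 J3 T 7 1 = thE kB J1 J2 J3 T (-64) (0) (-24)" unfolding theta_def by (rule thE_I) (simp only: cube_energy_expand ss_all, simp add: field_simps)
lemma th_7_2[simp]: "theta kB J1 J2 J3 T 7 2 = thE kB J1 J2 J3 T (32) (24) (0)" unfolding theta_def by (rule thE_I) (simp only: cube_energy_expand ss_all, simp add: field_simps)
lemma th_7_3[simp]: "theta kB J1 J2 J3 T 7 3 = thE kB J1 J2 J3 T (-32) (24) (0)" unfolding theta_def by (rule thE_I) (simp only: cube_energy_expand ss_all, simp add: field_simps)
lemma th_7_4[simp]: "theta kB J1 J2 J3 T 7 4 = thE kB J1 J2 J3 T (0) (48) (40)" unfolding theta_def by (rule thE_I) (simp only: cube_energy_expand ss_all, simp add: field_simps)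
lemma th_7_5[simp]: "theta kB J1 J2 J3 T 7 5 = thE kB J1 J2 J3 T (-32) (24) (0)" unfolding theta_def by (rule thE_I) (simp only: cube_energy_expand ss_all, simp add: field_simps)
lemma th_7_6[simp]: "theta kB J1 J2 J3 T 7 6 = thE kB J1 J2 J3 T (64) (0) (-24)" unfolding theta_def by (rule thE_I) (simp only: cube_energy_expand ss_all, simp add: field_simps)
lemma th_7_7[simp]: "theta kB J1 J2 J3 T 7 7 = thE kB J1 J2 J3 T (-64) (48) (-88)" unfolding theta_def by (rule thE_I) (simp only: cube_energy_expand ss_all, simp add: field_simps)
lemma th_7_8[simp]: "theta kB J1 J2 J3 T 7 8 = thE kB J1 J2 J3 T (-32) (24) (0)" unfolding theta_def by (rule thE_I) (simp only: cube_energy_expand ss_all, simp add: field_simps)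
lemma th_7_9[simp]: "theta kB J1 J2 J3 T 7 9 = thE kB J1 J2 J3 T (32) (24) (0)" unfolding theta_def by (rule thE_I) (simp only: cube_energy_expand ss_all, simp add: field_simps)
lemma th_7_10[simp]: "theta kB J1 J2 J3 T 7 10 = thE kB J1 J2 J3 T (64) (48) (-88)" unfolding theta_def by (rule thE_I) (simp only: cube_energy_expand ss_all, simp add: field_simps)
lemma th_7_11[simp]: "theta kB J1 J2 J3 T 7 11 = thE kB J1 J2 J3 T (64) (0) (-24)" unfolding theta_def by (rule thE_I) (simp only: cube_energy_expand ss_all, simp add: field_simps)
lemma th_7_12[simp]: "theta kB J1 J2 J3 T 7 12 = thE kB J1 J2 J3 T (32) (24) (0)" unfolding theta_def by (rule thE_I) (simp only: cube_energy_expand ss_all, simp add: field_simps)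
lemma th_7_13[simp]: "theta kB J1 J2 J3 T 7 13 = thE kB J1 J2 J3 T (0) (48) (40)" unfolding theta_def by (rule thE_I) (simp only: cube_energy_expand ss_all, simp add: field_simps)
lemma th_7_14[simp]: "theta kB J1 J2 J3 T 7 14 = thE kB J1 J2 J3 T (32) (24) (0)" unfolding theta_def by (rule thE_I) (simp only: cube_energy_expand ss_all, simp add: field_simps)
lemma th_7_15[simp]: "theta kB J1 J2 J3 T 7 15 = thE kB J1 J2 J3 T (-32) (24) (0)" unfolding theta_def by (rule thE_I) (simp only: cube_energy_expand ss_all, simp add: field_simps)
lemma th_7_16[simp]: "theta kB J1 J2 J3 T 7 16 = thE kB J1 J2 J3 T (-64) (0) (-24)" unfolding theta_def by (rule thE_I) (simp only: cube_energy_expand ss_all, simp add: field_simps)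
lemma th_8_1[simp]: "theta kB J1 J2 J3 T 8 1 = thE kB J1 J2 J3 T (-32) (40) (0)" unfolding theta_def by (rule thE_I) (simp only: cube_energy_expand ss_all, simp add: field_simps)
lemma th_8_2[simp]: "theta kB J1 J2 J3 T 8 2 = thE kB J1 J2 J3 T (0) (64) (24)" unfolding theta_def by (rule thE_I) (simp only: cube_energy_expand ss_all, simp add: field_simps)
lemma th_8_3[simp]: "theta kB J1 J2 J3 T 8 3 = thE kB J1 J2 J3 T (0) (0) (88)" unfolding theta_def by (rule thE_I) (simp only: cube_energy_expand ss_all, simp add: field_simps)
lemma th_8_4[simp]: "theta kB J1 J2 J3 T 8 4 = thE kB J1 J2 J3 T (-32) (24) (0)" unfolding theta_def by (rule thE_I) (simp only: cube_energy_expand ss_all, simp add: field_simps)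
lemma th_8_5[simp]: "theta kB J1 J2 J3 T 8 5 = thE kB J1 J2 J3 T (0) (64) (24)" unfolding theta_def by (rule thE_I) (simp only: cube_energy_expand ss_all, simp add: field_simps)
lemma th_8_6[simp]: "theta kB J1 J2 J3 T 8 6 = thE kB J1 J2 J3 T (32) (40) (0)" unfolding theta_def by (rule thE_I) (simp only: cube_energy_expand ss_all, simp add: field_simps)
lemma th_8_7[simp]: "theta kB J1 J2 J3 T 8 7 = thE kB J1 J2 J3 T (-32) (24) (0)" unfolding theta_def by (rule thE_I) (simp only: cube_energy_expand ss_all, simp add: field_simps)
lemma th_8_8[simp]: "theta kB J1 J2 J3 T 8 8 = thE kB J1 J2 J3 T (-64) (0) (-40)" unfolding theta_def by (rule thE_I) (simp only: cube_energy_expand ss_all, simp add: field_simps)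
lemma th_8_9[simp]: "theta kB J1 J2 J3 T 8 9 = thE kB J1 J2 J3 T (64) (0) (-40)" unfolding theta_def by (rule thE_I) (simp only: cube_energy_expand ss_all, simp add: field_simps)
lemma th_8_10[simp]: "theta kB J1 J2 J3 T 8 10 = thE kB J1 J2 J3 T (32) (24) (0)" unfolding theta_def by (rule thE_I) (simp only: cube_energy_expand ss_all, simp add: field_simps)
lemma th_8_11[simp]: "theta kB J1 J2 J3 T 8 11 = thE kB J1 J2 J3 T (96) (-88) (0)" unfolding theta_def by (rule thE_I) (simp only: cube_energy_expand ss_all, simp add: field_simps)
lemma th_8_12[simp]: "theta kB J1 J2 J3 T 8 12 = thE kB J1 J2 J3 T (0) (-64) (24)" unfolding theta_def by (rule thE_I) (simp only: cube_energy_expand ss_all, simp add: field_simps)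
lemma th_8_13[simp]: "theta kB J1 J2 J3 T 8 13 = thE kB J1 J2 J3 T (32) (24) (0)" unfolding theta_def by (rule thE_I) (simp only: cube_energy_expand ss_all, simp add: field_simps)
lemma th_8_14[simp]: "theta kB J1 J2 J3 T 8 14 = thE kB J1 J2 J3 T (0) (0) (88)" unfolding theta_def by (rule thE_I) (simp only: cube_energy_expand ss_all, simp add: field_simps)
lemma th_8_15[simp]: "theta kB J1 J2 J3 T 8 15 = thE kB J1 J2 J3 T (0) (-64) (24)" unfolding theta_def by (rule thE_I) (simp only: cube_energy_expand ss_all, simp add: field_simps)
lemma th_8_16[simp]: "theta kB J1 J2 J3 T 8 16 = thE kB J1 J2 J3 T (-96) (-88) (0)" unfolding theta_def by (rule thE_I) (simp only: cube_energy_expand ss_all, simp add: field_simps)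
lemma th_9_1[simp]: "theta kB J1 J2 J3 T 9 1 = thE kB J1 J2 J3 T (-96) (-88) (0)" unfolding theta_def by (rule thE_I) (simp only: cube_energy_expand ss_all, simp add: field_simps)
lemma th_9_2[simp]: "theta kB J1 J2 J3 T 9 2 = thE kB J1 J2 J3 T (0) (-64) (24)" unfolding theta_def by (rule thE_I) (simp only: cube_energy_expand ss_all, simp add: field_simps)
lemma th_9_3[simp]: "theta kB J1 J2 J3 T 9 3 = thE kB J1 J2 J3 T (0) (0) (88)" unfolding theta_def by (rule thE_I) (simp only: cube_energy_expand ss_all, simp add: field_simps)
lemma th_9_4[simp]: "theta kB J1 J2 J3 T 9 4 = thE kB J1 J2 J3 T (32) (24) (0)" unfolding theta_def by (rule thE_I) (simp only: cube_energy_expand ss_all, simp add: field_simps)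
lemma th_9_5[simp]: "theta kB J1 J2 J3 T 9 5 = thE kB J1 J2 J3 T (0) (-64) (24)" unfolding theta_def by (rule thE_I) (simp only: cube_energy_expand ss_all, simp add: field_simps)
lemma th_9_6[simp]: "theta kB J1 J2 J3 T 9 6 = thE kB J1 J2 J3 T (96) (-88) (0)" unfolding theta_def by (rule thE_I) (simp only: cube_energy_expand ss_all, simp add: field_simps)
lemma th_9_7[simp]: "theta kB J1 J2 J3 T 9 7 = thE kB J1 J2 J3 T (32) (24) (0)" unfolding theta_def by (rule thE_I) (simp only: cube_energy_expand ss_all, simp add: field_simps)
lemma th_9_8[simp]: "theta kB J1 J2 J3 T 9 8 = thE kB J1 J2 J3 T (64) (0) (-40)" unfolding theta_def by (rule thE_I) (simp only: cube_energy_expand ss_all, simp add: field_simps)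
lemma th_9_9[simp]: "theta kB J1 J2 J3 T 9 9 = thE kB J1 J2 J3 T (-64) (0) (-40)" unfolding theta_def by (rule thE_I) (simp only: cube_energy_expand ss_all, simp add: field_simps)
lemma th_9_10[simp]: "theta kB J1 J2 J3 T 9 10 = thE kB J1 J2 J3 T (-32) (24) (0)" unfolding theta_def by (rule thE_I) (simp only: cube_energy_expand ss_all, simp add: field_simps)
lemma th_9_11[simp]: "theta kB J1 J2 J3 T 9 11 = thE kB J1 J2 J3 T (32) (40) (0)" unfolding theta_def by (rule thE_I) (simp only: cube_energy_expand ss_all, simp add: field_simps)
lemma th_9_12[simp]: "theta kB J1 J2 J3 T 9 12 = thE kB J1 J2 J3 T (0) (64) (24)" unfolding theta_def by (rule thE_I) (simp only: cube_energy_expand ss_all, simp add: field_simps)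
lemma th_9_13[simp]: "theta kB J1 J2 J3 T 9 13 = thE kB J1 J2 J3 T (-32) (24) (0)" unfolding theta_def by (rule thE_I) (simp only: cube_energy_expand ss_all, simp add: field_simps)
lemma th_9_14[simp]: "theta kB J1 J2 J3 T 9 14 = thE kB J1 J2 J3 T (0) (0) (88)" unfolding theta_def by (rule thE_I) (simp only: cube_energy_expand ss_all, simp add: field_simps)
lemma th_9_15[simp]: "theta kB J1 J2 J3 T 9 15 = thE kB J1 J2 J3 T (0) (64) (24)" unfolding theta_def by (rule thE_I) (simp only: cube_energy_expand ss_all, simp add: field_simps)
lemma th_9_16[simp]: "theta kB J1 J2 J3 T 9 16 = thE kB J1 J2 J3 T (-32) (40) (0)" unfolding theta_def by (rule thE_I) (simp only: cube_energy_expand ss_all, simp add: field_simps)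
lemma th_10_1[simp]: "theta kB J1 J2 J3 T 10 1 = thE kB J1 J2 J3 T (-64) (0) (-24)" unfolding theta_def by (rule thE_I) (simp only: cube_energy_expand ss_all, simp add: field_simps)
lemma th_10_2[simp]: "theta kB J1 J2 J3 T 10 2 = thE kB J1 J2 J3 T (-32) (24) (0)" unfolding theta_def by (rule thE_I) (simp only: cube_energy_expand ss_all, simp add: field_simps)
lemma th_10_3[simp]: "theta kB J1 J2 J3 T 10 3 = thE kB J1 J2 J3 T (32) (24) (0)" unfolding theta_def by (rule thE_I) (simp only: cube_energy_expand ss_all, simp add: field_simps)
lemma th_10_4[simp]: "theta kB J1 J2 J3 T 10 4 = thE kB J1 J2 J3 T (0) (48) (40)" unfolding theta_def by (rule thE_I) (simp only: cube_energy_expand ss_all, simp add: field_simps)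
lemma th_10_5[simp]: "theta kB J1 J2 J3 T 10 5 = thE kB J1 J2 J3 T (32) (24) (0)" unfolding theta_def by (rule thE_I) (simp only: cube_energy_expand ss_all, simp add: field_simps)
lemma th_10_6[simp]: "theta kB J1 J2 J3 T 10 6 = thE kB J1 J2 J3 T (64) (0) (-24)" unfolding theta_def by (rule thE_I) (simp only: cube_energy_expand ss_all, simp add: field_simps)
lemma th_10_7[simp]: "theta kB J1 J2 J3 T 10 7 = thE kB J1 J2 J3 T (64) (48) (-88)" unfolding theta_def by (rule thE_I) (simp only: cube_energy_expand ss_all, simp add: field_simps)
lemma th_10_8[simp]: "theta kB J1 J2 J3 T 10 8 = thE kB J1 J2 J3 T (32) (24) (0)" unfolding theta_def by (rule thE_I) (simp only: cube_energy_expand ss_all, simp add: field_simps)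
lemma th_10_9[simp]: "theta kB J1 J2 J3 T 10 9 = thE kB J1 J2 J3 T (-32) (24) (0)" unfolding theta_def by (rule thE_I) (simp only: cube_energy_expand ss_all, simp add: field_simps)
lemma th_10_10[simp]: "theta kB J1 J2 J3 T 10 10 = thE kB J1 J2 J3 T (-64) (48) (-88)" unfolding theta_def by (rule thE_I) (simp only: cube_energy_expand ss_all, simp add: field_simps)
lemma th_10_11[simp]: "theta kB J1 J2 J3 T 10 11 = thE kB J1 J2 J3 T (64) (0) (-24)" unfolding theta_def by (rule thE_I) (simp only: cube_energy_expand ss_all, simp add: field_simps)
lemma th_10_12[simp]: "theta kB J1 J2 J3 T 10 12 = thE kB J1 J2 J3 T (-32) (24) (0)" unfolding theta_def by (rule thE_I) (simp only: cube_energy_expand ss_all, simp add: field_simps)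
lemma th_10_13[simp]: "theta kB J1 J2 J3 T 10 13 = thE kB J1 J2 J3 T (0) (48) (40)" unfolding theta_def by (rule thE_I) (simp only: cube_energy_expand ss_all, simp add: field_simps)
lemma th_10_14[simp]: "theta kB J1 J2 J3 T 10 14 = thE kB J1 J2 J3 T (-32) (24) (0)" unfolding theta_def by (rule thE_I) (simp only: cube_energy_expand ss_all, simp add: field_simps)
lemma th_10_15[simp]: "theta kB J1 J2 J3 T 10 15 = thE kB J1 J2 J3 T (32) (24) (0)" unfolding theta_def by (rule thE_I) (simp only: cube_energy_expand ss_all, simp add: field_simps)
lemma th_10_16[simp]: "theta kB J1 J2 J3 T 10 16 = thE kB J1 J2 J3 T (-64) (0) (-24)" unfolding theta_def by (rule thE_I) (simp only: cube_energy_expand ss_all, simp add: field_simps)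
lemma th_11_1[simp]: "theta kB J1 J2 J3 T 11 1 = thE kB J1 J2 J3 T (0) (-48) (40)" unfolding theta_def by (rule thE_I) (simp only: cube_energy_expand ss_all, simp add: field_simps)
lemma th_11_2[simp]: "theta kB J1 J2 J3 T 11 2 = thE kB J1 J2 J3 T (96) (-88) (0)" unfolding theta_def by (rule thE_I) (simp only: cube_energy_expand ss_all, simp add: field_simps)
lemma th_11_3[simp]: "theta kB J1 J2 J3 T 11 3 = thE kB J1 J2 J3 T (32) (40) (0)" unfolding theta_def by (rule thE_I) (simp only: cube_energy_expand ss_all, simp add: field_simps)
lemma th_11_4[simp]: "theta kB J1 J2 J3 T 11 4 = thE kB J1 J2 J3 T (64) (0) (-24)" unfolding theta_def by (rule thE_I) (simp only: cube_energy_expand ss_all, simp add: field_simps)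
lemma th_11_5[simp]: "theta kB J1 J2 J3 T 11 5 = thE kB J1 J2 J3 T (96) (-88) (0)" unfolding theta_def by (rule thE_I) (simp only: cube_energy_expand ss_all, simp add: field_simps)
lemma th_11_6[simp]: "theta kB J1 J2 J3 T 11 6 = thE kB J1 J2 J3 T (192) (-176) (-88)" unfolding theta_def by (rule thE_I) (simp only: cube_energy_expand ss_all, simp add: field_simps)
lemma th_11_7[simp]: "theta kB J1 J2 J3 T 11 7 = thE kB J1 J2 J3 T (64) (0) (-24)" unfolding theta_def by (rule thE_I) (simp only: cube_energy_expand ss_all, simp add: field_simps)
lemma th_11_8[simp]: "theta kB J1 J2 J3 T 11 8 = thE kB J1 J2 J3 T (96) (-88) (0)" unfolding theta_def by (rule thE_I) (simp only: cube_energy_expand ss_all, simp add: field_simps)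
lemma th_11_9[simp]: "theta kB J1 J2 J3 T 11 9 = thE kB J1 J2 J3 T (32) (40) (0)" unfolding theta_def by (rule thE_I) (simp only: cube_energy_expand ss_all, simp add: field_simps)
lemma th_11_10[simp]: "theta kB J1 J2 J3 T 11 10 = thE kB J1 J2 J3 T (64) (0) (-24)" unfolding theta_def by (rule thE_I) (simp only: cube_energy_expand ss_all, simp add: field_simps)
lemma th_11_11[simp]: "theta kB J1 J2 J3 T 11 11 = thE kB J1 J2 J3 T (64) (80) (-88)" unfolding theta_def by (rule thE_I) (simp only: cube_energy_expand ss_all, simp add: field_simps)
lemma th_11_12[simp]: "theta kB J1 J2 J3 T 11 12 = thE kB J1 J2 J3 T (32) (40) (0)" unfolding theta_def by (rule thE_I) (simp only: cube_energy_expand ss_all, simp add: field_simps)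
lemma th_11_13[simp]: "theta kB J1 J2 J3 T 11 13 = thE kB J1 J2 J3 T (64) (0) (-24)" unfolding theta_def by (rule thE_I) (simp only: cube_energy_expand ss_all, simp add: field_simps)
lemma th_11_14[simp]: "theta kB J1 J2 J3 T 11 14 = thE kB J1 J2 J3 T (96) (-88) (0)" unfolding theta_def by (rule thE_I) (simp only: cube_energy_expand ss_all, simp add: field_simps)
lemma th_11_15[simp]: "theta kB J1 J2 J3 T 11 15 = thE kB J1 J2 J3 T (32) (40) (0)" unfolding theta_def by (rule thE_I) (simp only: cube_energy_expand ss_all, simp add: field_simps)
lemma th_11_16[simp]: "theta kB J1 J2 J3 T 11 16 = thE kB J1 J2 J3 T (0) (-48) (40)" unfolding theta_def by (rule thE_I) (simp only: cube_energy_expand ss_all, simp add: field_simps)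
lemma th_12_1[simp]: "theta kB J1 J2 J3 T 12 1 = thE kB J1 J2 J3 T (-32) (40) (0)" unfolding theta_def by (rule thE_I) (simp only: cube_energy_expand ss_all, simp add: field_simps)
lemma th_12_2[simp]: "theta kB J1 J2 J3 T 12 2 = thE kB J1 J2 J3 T (0) (0) (88)" unfolding theta_def by (rule thE_I) (simp only: cube_energy_expand ss_all, simp add: field_simps)
lemma th_12_3[simp]: "theta kB J1 J2 J3 T 12 3 = thE kB J1 J2 J3 T (0) (64) (24)" unfolding theta_def by (rule thE_I) (simp only: cube_energy_expand ss_all, simp add: field_simps)
lemma th_12_4[simp]: "theta kB J1 J2 J3 T 12 4 = thE kB J1 J2 J3 T (-32) (24) (0)" unfolding theta_def by (rule thE_I) (simp only: cube_energy_expand ss_all, simp add: field_simps)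
lemma th_12_5[simp]: "theta kB J1 J2 J3 T 12 5 = thE kB J1 J2 J3 T (64) (0) (-40)" unfolding theta_def by (rule thE_I) (simp only: cube_energy_expand ss_all, simp add: field_simps)
lemma th_12_6[simp]: "theta kB J1 J2 J3 T 12 6 = thE kB J1 J2 J3 T (96) (-88) (0)" unfolding theta_def by (rule thE_I) (simp only: cube_energy_expand ss_all, simp add: field_simps)
lemma th_12_7[simp]: "theta kB J1 J2 J3 T 12 7 = thE kB J1 J2 J3 T (32) (24) (0)" unfolding theta_def by (rule thE_I) (simp only: cube_energy_expand ss_all, simp add: field_simps)
lemma th_12_8[simp]: "theta kB J1 J2 J3 T 12 8 = thE kB J1 J2 J3 T (0) (-64) (24)" unfolding theta_def by (rule thE_I) (simp only: cube_energy_expand ss_all, simp add: field_simps)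
lemma th_12_9[simp]: "theta kB J1 J2 J3 T 12 9 = thE kB J1 J2 J3 T (0) (64) (24)" unfolding theta_def by (rule thE_I) (simp only: cube_energy_expand ss_all, simp add: field_simps)
lemma th_12_10[simp]: "theta kB J1 J2 J3 T 12 10 = thE kB J1 J2 J3 T (-32) (24) (0)" unfolding theta_def by (rule thE_I) (simp only: cube_energy_expand ss_all, simp add: field_simps)
lemma th_12_11[simp]: "theta kB J1 J2 J3 T 12 11 = thE kB J1 J2 J3 T (32) (40) (0)" unfolding theta_def by (rule thE_I) (simp only: cube_energy_expand ss_all, simp add: field_simps)
lemma th_12_12[simp]: "theta kB J1 J2 J3 T 12 12 = thE kB J1 J2 J3 T (-64) (0) (-40)" unfolding theta_def by (rule thE_I) (simp only: cube_energy_expand ss_all, simp add: field_simps)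
lemma th_12_13[simp]: "theta kB J1 J2 J3 T 12 13 = thE kB J1 J2 J3 T (32) (24) (0)" unfolding theta_def by (rule thE_I) (simp only: cube_energy_expand ss_all, simp add: field_simps)
lemma th_12_14[simp]: "theta kB J1 J2 J3 T 12 14 = thE kB J1 J2 J3 T (0) (-64) (24)" unfolding theta_def by (rule thE_I) (simp only: cube_energy_expand ss_all, simp add: field_simps)
lemma th_12_15[simp]: "theta kB J1 J2 J3 T 12 15 = thE kB J1 J2 J3 T (0) (0) (88)" unfolding theta_def by (rule thE_I) (simp only: cube_energy_expand ss_all, simp add: field_simps)
lemma th_12_16[simp]: "theta kB J1 J2 J3 T 12 16 = thE kB J1 J2 J3 T (-96) (-88) (0)" unfolding theta_def by (rule thE_I) (simp only: cube_energy_expand ss_all, simp add: field_simps)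
lemma th_13_1[simp]: "theta kB J1 J2 J3 T 13 1 = thE kB J1 J2 J3 T (-64) (0) (-24)" unfolding theta_def by (rule thE_I) (simp only: cube_energy_expand ss_all, simp add: field_simps)
lemma th_13_2[simp]: "theta kB J1 J2 J3 T 13 2 = thE kB J1 J2 J3 T (32) (24) (0)" unfolding theta_def by (rule thE_I) (simp only: cube_energy_expand ss_all, simp add: field_simps)
lemma th_13_3[simp]: "theta kB J1 J2 J3 T 13 3 = thE kB J1 J2 J3 T (32) (24) (0)" unfolding theta_def by (rule thE_I) (simp only: cube_energy_expand ss_all, simp add: field_simps)
lemma th_13_4[simp]: "theta kB J1 J2 J3 T 13 4 = thE kB J1 J2 J3 T (64) (48) (-88)" unfolding theta_def by (rule thE_I) (simp only: cube_energy_expand ss_all, simp add: field_simps)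
lemma th_13_5[simp]: "theta kB J1 J2 J3 T 13 5 = thE kB J1 J2 J3 T (-32) (24) (0)" unfolding theta_def by (rule thE_I) (simp only: cube_energy_expand ss_all, simp add: field_simps)
lemma th_13_6[simp]: "theta kB J1 J2 J3 T 13 6 = thE kB J1 J2 J3 T (64) (0) (-24)" unfolding theta_def by (rule thE_I) (simp only: cube_energy_expand ss_all, simp add: field_simps)
lemma th_13_7[simp]: "theta kB J1 J2 J3 T 13 7 = thE kB J1 J2 J3 T (0) (48) (40)" unfolding theta_def by (rule thE_I) (simp only: cube_energy_expand ss_all, simp add: field_simps)
lemma th_13_8[simp]: "theta kB J1 J2 J3 T 13 8 = thE kB J1 J2 J3 T (32) (24) (0)" unfolding theta_def by (rule thE_I) (simp only: cube_energy_expand ss_all, simp add: field_simps)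
lemma th_13_9[simp]: "theta kB J1 J2 J3 T 13 9 = thE kB J1 J2 J3 T (-32) (24) (0)" unfolding theta_def by (rule thE_I) (simp only: cube_energy_expand ss_all, simp add: field_simps)
lemma th_13_10[simp]: "theta kB J1 J2 J3 T 13 10 = thE kB J1 J2 J3 T (0) (48) (40)" unfolding theta_def by (rule thE_I) (simp only: cube_energy_expand ss_all, simp add: field_simps)
lemma th_13_11[simp]: "theta kB J1 J2 J3 T 13 11 = thE kB J1 J2 J3 T (64) (0) (-24)" unfolding theta_def by (rule thE_I) (simp only: cube_energy_expand ss_all, simp add: field_simps)
lemma th_13_12[simp]: "theta kB J1 J2 J3 T 13 12 = thE kB J1 J2 J3 T (32) (24) (0)" unfolding theta_def by (rule thE_I) (simp only: cube_energy_expand ss_all, simp add: field_simps)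
lemma th_13_13[simp]: "theta kB J1 J2 J3 T 13 13 = thE kB J1 J2 J3 T (-64) (48) (-88)" unfolding theta_def by (rule thE_I) (simp only: cube_energy_expand ss_all, simp add: field_simps)
lemma th_13_14[simp]: "theta kB J1 J2 J3 T 13 14 = thE kB J1 J2 J3 T (-32) (24) (0)" unfolding theta_def by (rule thE_I) (simp only: cube_energy_expand ss_all, simp add: field_simps)
lemma th_13_15[simp]: "theta kB J1 J2 J3 T 13 15 = thE kB J1 J2 J3 T (-32) (24) (0)" unfolding theta_def by (rule thE_I) (simp only: cube_energy_expand ss_all, simp add: field_simps)
lemma th_13_16[simp]: "theta kB J1 J2 J3 T 13 16 = thE kB J1 J2 J3 T (-64) (0) (-24)" unfolding theta_def by (rule thE_I) (simp only: cube_energy_expand ss_all, simp add: field_simps)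
lemma th_14_1[simp]: "theta kB J1 J2 J3 T 14 1 = thE kB J1 J2 J3 T (-32) (40) (0)" unfolding theta_def by (rule thE_I) (simp only: cube_energy_expand ss_all, simp add: field_simps)
lemma th_14_2[simp]: "theta kB J1 J2 J3 T 14 2 = thE kB J1 J2 J3 T (0) (64) (24)" unfolding theta_def by (rule thE_I) (simp only: cube_energy_expand ss_all, simp add: field_simps)
lemma th_14_3[simp]: "theta kB J1 J2 J3 T 14 3 = thE kB J1 J2 J3 T (64) (0) (-40)" unfolding theta_def by (rule thE_I) (simp only: cube_energy_expand ss_all, simp add: field_simps)
lemma th_14_4[simp]: "theta kB J1 J2 J3 T 14 4 = thE kB J1 J2 J3 T (32) (24) (0)" unfolding theta_def by (rule thE_I) (simp only: cube_energy_expand ss_all, simp add: field_simps)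
lemma th_14_5[simp]: "theta kB J1 J2 J3 T 14 5 = thE kB J1 J2 J3 T (0) (64) (24)" unfolding theta_def by (rule thE_I) (simp only: cube_energy_expand ss_all, simp add: field_simps)
lemma th_14_6[simp]: "theta kB J1 J2 J3 T 14 6 = thE kB J1 J2 J3 T (32) (40) (0)" unfolding theta_def by (rule thE_I) (simp only: cube_energy_expand ss_all, simp add: field_simps)
lemma th_14_7[simp]: "theta kB J1 J2 J3 T 14 7 = thE kB J1 J2 J3 T (32) (24) (0)" unfolding theta_def by (rule thE_I) (simp only: cube_energy_expand ss_all, simp add: field_simps)
lemma th_14_8[simp]: "theta kB J1 J2 J3 T 14 8 = thE kB J1 J2 J3 T (0) (0) (88)" unfolding theta_def by (rule thE_I) (simp only: cube_energy_expand ss_all, simp add: field_simps)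
lemma th_14_9[simp]: "theta kB J1 J2 J3 T 14 9 = thE kB J1 J2 J3 T (0) (0) (88)" unfolding theta_def by (rule thE_I) (simp only: cube_energy_expand ss_all, simp add: field_simps)
lemma th_14_10[simp]: "theta kB J1 J2 J3 T 14 10 = thE kB J1 J2 J3 T (-32) (24) (0)" unfolding theta_def by (rule thE_I) (simp only: cube_energy_expand ss_all, simp add: field_simps)
lemma th_14_11[simp]: "theta kB J1 J2 J3 T 14 11 = thE kB J1 J2 J3 T (96) (-88) (0)" unfolding theta_def by (rule thE_I) (simp only: cube_energy_expand ss_all, simp add: field_simps)
lemma th_14_12[simp]: "theta kB J1 J2 J3 T 14 12 = thE kB J1 J2 J3 T (0) (-64) (24)" unfolding theta_def by (rule thE_I) (simp only: cube_energy_expand ss_all, simp add: field_simps)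
lemma th_14_13[simp]: "theta kB J1 J2 J3 T 14 13 = thE kB J1 J2 J3 T (-32) (24) (0)" unfolding theta_def by (rule thE_I) (simp only: cube_energy_expand ss_all, simp add: field_simps)
lemma th_14_14[simp]: "theta kB J1 J2 J3 T 14 14 = thE kB J1 J2 J3 T (-64) (0) (-40)" unfolding theta_def by (rule thE_I) (simp only: cube_energy_expand ss_all, simp add: field_simps)
lemma th_14_15[simp]: "theta kB J1 J2 J3 T 14 15 = thE kB J1 J2 J3 T (0) (-64) (24)" unfolding theta_def by (rule thE_I) (simp only: cube_energy_expand ss_all, simp add: field_simps)
lemma th_14_16[simp]: "theta kB J1 J2 J3 T 14 16 = thE kB J1 J2 J3 T (-96) (-88) (0)" unfolding theta_def by (rule thE_I) (simp only: cube_energy_expand ss_all, simp add: field_simps)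
lemma th_15_1[simp]: "theta kB J1 J2 J3 T 15 1 = thE kB J1 J2 J3 T (-32) (40) (0)" unfolding theta_def by (rule thE_I) (simp only: cube_energy_expand ss_all, simp add: field_simps)
lemma th_15_2[simp]: "theta kB J1 J2 J3 T 15 2 = thE kB J1 J2 J3 T (64) (0) (-40)" unfolding theta_def by (rule thE_I) (simp only: cube_energy_expand ss_all, simp add: field_simps)
lemma th_15_3[simp]: "theta kB J1 J2 J3 T 15 3 = thE kB J1 J2 J3 T (0) (64) (24)" unfolding theta_def by (rule thE_I) (simp only: cube_energy_expand ss_all, simp add: field_simps)
lemma th_15_4[simp]: "theta kB J1 J2 J3 T 15 4 = thE kB J1 J2 J3 T (32) (24) (0)" unfolding theta_def by (rule thE_I) (simp only: cube_energy_expand ss_all, simp add: field_simps)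
lemma th_15_5[simp]: "theta kB J1 J2 J3 T 15 5 = thE kB J1 J2 J3 T (0) (0) (88)" unfolding theta_def by (rule thE_I) (simp only: cube_energy_expand ss_all, simp add: field_simps)
lemma th_15_6[simp]: "theta kB J1 J2 J3 T 15 6 = thE kB J1 J2 J3 T (96) (-88) (0)" unfolding theta_def by (rule thE_I) (simp only: cube_energy_expand ss_all, simp add: field_simps)
lemma th_15_7[simp]: "theta kB J1 J2 J3 T 15 7 = thE kB J1 J2 J3 T (-32) (24) (0)" unfolding theta_def by (rule thE_I) (simp only: cube_energy_expand ss_all, simp add: field_simps)
lemma th_15_8[simp]: "theta kB J1 J2 J3 T 15 8 = thE kB J1 J2 J3 T (0) (-64) (24)" unfolding theta_def by (rule thE_I) (simp only: cube_energy_expand ss_all, simp add: field_simps)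
lemma th_15_9[simp]: "theta kB J1 J2 J3 T 15 9 = thE kB J1 J2 J3 T (0) (64) (24)" unfolding theta_def by (rule thE_I) (simp only: cube_energy_expand ss_all, simp add: field_simps)
lemma th_15_10[simp]: "theta kB J1 J2 J3 T 15 10 = thE kB J1 J2 J3 T (32) (24) (0)" unfolding theta_def by (rule thE_I) (simp only: cube_energy_expand ss_all, simp add: field_simps)
lemma th_15_11[simp]: "theta kB J1 J2 J3 T 15 11 = thE kB J1 J2 J3 T (32) (40) (0)" unfolding theta_def by (rule thE_I) (simp only: cube_energy_expand ss_all, simp add: field_simps)
lemma th_15_12[simp]: "theta kB J1 J2 J3 T 15 12 = thE kB J1 J2 J3 T (0) (0) (88)" unfolding theta_def by (rule thE_I) (simp only: cube_energy_expand ss_all, simp add: field_simps)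
lemma th_15_13[simp]: "theta kB J1 J2 J3 T 15 13 = thE kB J1 J2 J3 T (-32) (24) (0)" unfolding theta_def by (rule thE_I) (simp only: cube_energy_expand ss_all, simp add: field_simps)
lemma th_15_14[simp]: "theta kB J1 J2 J3 T 15 14 = thE kB J1 J2 J3 T (0) (-64) (24)" unfolding theta_def by (rule thE_I) (simp only: cube_energy_expand ss_all, simp add: field_simps)
lemma th_15_15[simp]: "theta kB J1 J2 J3 T 15 15 = thE kB J1 J2 J3 T (-64) (0) (-40)" unfolding theta_def by (rule thE_I) (simp only: cube_energy_expand ss_all, simp add: field_simps)
lemma th_15_16[simp]: "theta kB J1 J2 J3 T 15 16 = thE kB J1 J2 J3 T (-96) (-88) (0)" unfolding theta_def by (rule thE_I) (simp only: cube_energy_expand ss_all, simp add: field_simps)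
lemma th_16_1[simp]: "theta kB J1 J2 J3 T 16 1 = thE kB J1 J2 J3 T (-64) (80) (-88)" unfolding theta_def by (rule thE_I) (simp only: cube_energy_expand ss_all, simp add: field_simps)
lemma th_16_2[simp]: "theta kB J1 J2 J3 T 16 2 = thE kB J1 J2 J3 T (-32) (40) (0)" unfolding theta_def by (rule thE_I) (simp only: cube_energy_expand ss_all, simp add: field_simps)
lemma th_16_3[simp]: "theta kB J1 J2 J3 T 16 3 = thE kB J1 J2 J3 T (-32) (40) (0)" unfolding theta_def by (rule thE_I) (simp only: cube_energy_expand ss_all, simp add: field_simps)
lemma th_16_4[simp]: "theta kB J1 J2 J3 T 16 4 = thE kB J1 J2 J3 T (-64) (0) (-24)" unfolding theta_def by (rule thE_I) (simp only: cube_energy_expand ss_all, simp add: field_simps)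
lemma th_16_5[simp]: "theta kB J1 J2 J3 T 16 5 = thE kB J1 J2 J3 T (-32) (40) (0)" unfolding theta_def by (rule thE_I) (simp only: cube_energy_expand ss_all, simp add: field_simps)
lemma th_16_6[simp]: "theta kB J1 J2 J3 T 16 6 = thE kB J1 J2 J3 T (0) (-48) (40)" unfolding theta_def by (rule thE_I) (simp only: cube_energy_expand ss_all, simp add: field_simps)
lemma th_16_7[simp]: "theta kB J1 J2 J3 T 16 7 = thE kB J1 J2 J3 T (-64) (0) (-24)" unfolding theta_def by (rule thE_I) (simp only: cube_energy_expand ss_all, simp add: field_simps)
lemma th_16_8[simp]: "theta kB J1 J2 J3 T 16 8 = thE kB J1 J2 J3 T (-96) (-88) (0)" unfolding theta_def by (rule thE_I) (simp only: cube_energy_expand ss_all, simp add: field_simps)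
lemma th_16_9[simp]: "theta kB J1 J2 J3 T 16 9 = thE kB J1 J2 J3 T (-32) (40) (0)" unfolding theta_def by (rule thE_I) (simp only: cube_energy_expand ss_all, simp add: field_simps)
lemma th_16_10[simp]: "theta kB J1 J2 J3 T 16 10 = thE kB J1 J2 J3 T (-64) (0) (-24)" unfolding theta_def by (rule thE_I) (simp only: cube_energy_expand ss_all, simp add: field_simps)
lemma th_16_11[simp]: "theta kB J1 J2 J3 T 16 11 = thE kB J1 J2 J3 T (0) (-48) (40)" unfolding theta_def by (rule thE_I) (simp only: cube_energy_expand ss_all, simp add: field_simps)
lemma th_16_12[simp]: "theta kB J1 J2 J3 T 16 12 = thE kB J1 J2 J3 T (-96) (-88) (0)" unfolding theta_def by (rule thE_I) (simp only: cube_energy_expand ss_all, simp add: field_simps)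
lemma th_16_13[simp]: "theta kB J1 J2 J3 T 16 13 = thE kB J1 J2 J3 T (-64) (0) (-24)" unfolding theta_def by (rule thE_I) (simp only: cube_energy_expand ss_all, simp add: field_simps)
lemma th_16_14[simp]: "theta kB J1 J2 J3 T 16 14 = thE kB J1 J2 J3 T (-96) (-88) (0)" unfolding theta_def by (rule thE_I) (simp only: cube_energy_expand ss_all, simp add: field_simps)
lemma th_16_15[simp]: "theta kB J1 J2 J3 T 16 15 = thE kB J1 J2 J3 T (-96) (-88) (0)" unfolding theta_def by (rule thE_I) (simp only: cube_energy_expand ss_all, simp add: field_simps)
lemma th_16_16[simp]: "theta kB J1 J2 J3 T 16 16 = thE kB J1 J2 J3 T (-192) (-176) (-88)" unfolding theta_def by (rule thE_I) (simp only: cube_energy_expand ss_all, simp add: field_simps)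




lemma perron_vec:
  fixes a :: "'n::finite \<Rightarrow> 'n \<Rightarrow> real"
  assumes pos: "\<And>i j. a i j > 0"
  shows "\<exists>x r. r > 0 \<and> (\<forall>i. x i > 0) \<and> (\<forall>i. (\<Sum>j\<in>UNIV. a i j * x j) = r * x i)"
proof -
  define S where "S = {x::real^'n. (\<forall>i. 0 \<le> x$i) \<and> (\<Sum>i\<in>UNIV. x$i) = 1}"
  define N where "N x = (\<Sum>i\<in>UNIV. \<Sum>j\<in>UNIV. a i j * x$j)" for x :: "real^'n"
  define f where "f x = (\<chi> i. (\<Sum>j\<in>UNIV. a i j * x$j) / N x)" for x
  have rowpos: "(\<Sum>j\<in>UNIV. a i j * x$j) > 0" if "x \<in> S" for x i
  proof -
    from that have nn: "\<forall>j. 0 \<le> x$j" and s1: "(\<Sum>i\<in>UNIV. x$i) = 1" by (auto simp: S_def)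
    obtain j0 where j0: "x$j0 > 0"
    proof (rule ccontr)
      assume "\<not> thesis"
      with that have "\<forall>j. x$j \<le> 0" by (meson not_le)
      hence "(\<Sum>i\<in>UNIV. x$i) \<le> 0" by (simp add: sum_nonpos)
      with s1 show False by simp
    qed
    have "a i j0 * x$j0 \<le> (\<Sum>j\<in>UNIV. a i j * x$j)"
      by (rule member_le_sum) (auto intro!: mult_nonneg_nonneg less_imp_le[OF pos] simp: nn)
    moreover have "a i j0 * x$j0 > 0" using pos j0 by simp
    ultimately show ?thesis by linarith
  qed
  have Npos: "N x > 0" if "x \<in> S" for x
    unfolding N_def by (rule sum_pos) (auto intro: rowpos[OF that])
  have bS: "bounded S"
    unfolding bounded_iff
  proof (intro exI ballI)
    fix x assume x: "x \<in> S"
    have "norm x \<le> (\<Sum>i\<in>UNIV. \<bar>x$i\<bar>)" by (rule norm_le_l1_cart)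
    also have "\<dots> = (\<Sum>i\<in>UNIV. x$i)" using x by (auto simp: S_def)
    also have "\<dots> = 1" using x by (auto simp: S_def)
    finally show "norm x \<le> 1" .
  qed
  have cS: "closed S"
    unfolding S_def
    by (intro closed_Collect_conj closed_Collect_all closed_Collect_le closed_Collect_eq continuous_intros)
  have compS: "compact S" using bS cS by (simp add: compact_eq_bounded_closed)
  have convS: "convex S"
    unfolding convex_def
  proof (intro ballI allI impI)
    fix x y :: "real^'n" and u v :: real
    assume x: "x \<in> S" and y: "y \<in> S" and uv: "0 \<le> u" "0 \<le> v" "u + v = 1"
    have "(\<Sum>i\<in>UNIV. (u *\<^sub>R x + v *\<^sub>R y)$i) = u * (\<Sum>i\<in>UNIV. x$i) + v * (\<Sum>i\<in>UNIV. y$i)"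
      by (simp add: sum.distrib sum_distrib_left)
    also have "\<dots> = 1" using x y uv by (simp add: S_def)
    finally show "u *\<^sub>R x + v *\<^sub>R y \<in> S" using x y uv by (simp add: S_def)
  qed
  have neS: "S \<noteq> {}"
  proof -
    have "(\<chi> i. 1 / real CARD('n)) \<in> S" by (simp add: S_def)
    thus ?thesis by blast
  qed
  have contf: "continuous_on S f"
    unfolding f_def N_def
    by (intro continuous_intros; use Npos[unfolded N_def] in fastforce)
  have fS: "f \<in> S \<rightarrow> S"
  proof
    fix x assume x: "x \<in> S"
    have "(\<Sum>i\<in>UNIV. f x $ i) = (\<Sum>i\<in>UNIV. \<Sum>j\<in>UNIV. a i j * x$j) / N x"
      by (simp add: f_def sum_divide_distrib)
    also have "\<dots> = 1" using Npos[OF x] by (simp add: N_def)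
    finally show "f x \<in> S" using Npos[OF x] rowpos[OF x]
      by (auto simp: S_def f_def less_imp_le)
  qed
  obtain x where x: "x \<in> S" and fx: "f x = x" using brouwer[OF compS convS neS contf fS] by blast
  have eq: "(\<Sum>j\<in>UNIV. a i j * x$j) = N x * x$i" for i
  proof -
    have "x$i = (\<Sum>j\<in>UNIV. a i j * x$j) / N x" using fx by (metis f_def vec_lambda_beta)
    thus ?thesis using Npos[OF x] by (simp add: field_simps)
  qed
  have xpos: "x$i > 0" for i
  proof -
    have "N x * x$i > 0" using eq rowpos[OF x] by metis
    thus ?thesis using Npos[OF x] by (simp add: zero_less_mult_iff)
  qed
  show ?thesis using Npos[OF x] xpos eq by blast
qed




no_notation vec_nth (infixl \<open>$\<close> 90)

lemma perron_nat:
  fixes a :: "nat \<Rightarrow> nat \<Rightarrow> real"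
  assumes card: "CARD('n::finite) = n" and pos: "\<And>i j. i < n \<Longrightarrow> j < n \<Longrightarrow> a i j > 0"
  shows "\<exists>v r. r > 0 \<and> (\<forall>i<n. v i > 0) \<and> (\<forall>i<n. (\<Sum>j<n. a i j * v j) = r * v i)"
proof -
  obtain h where h: "bij_betw h (UNIV::'n set) {0..<n}"
    using ex_bij_betw_finite_nat[of "UNIV::'n set"] card by auto
  have hlt: "h i < n" for i using h by (auto simp: bij_betw_def)
  obtain x r where r: "r>0" and x: "\<forall>i. x i > 0"
    and eq: "\<forall>i. (\<Sum>j\<in>UNIV. a (h i) (h j) * x j) = r * x i"
    using perron_vec[of "\<lambda>i j. a (h i) (h j)"] pos hlt by blast
  define g where "g = the_inv_into UNIV h"
  have hg: "h (g k) = k" if "k < n" for k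
    unfolding g_def using h that by (simp add: f_the_inv_into_f_bij_betw)
  have gh: "g (h i) = i" for i
    unfolding g_def using h by (simp add: bij_betw_def the_inv_into_f_f)
  define v where "v k = x (g k)" for k
  have sumr: "(\<Sum>j<n. F j) = (\<Sum>j\<in>UNIV. F (h j))" for F :: "nat \<Rightarrow> real"
    using sum.reindex_bij_betw[OF h, of F] by (simp add: atLeast0LessThan)
  show ?thesis
  proof (intro exI conjI allI impI)
    show "r>0" by (rule r)
    fix i assume i: "i<n"
    show "v i > 0" using x by (simp add: v_def)
    have "(\<Sum>j<n. a i j * v j) = (\<Sum>j\<in>UNIV. a i (h j) * x j)" by (simp add: sumr v_def gh)
    also have "\<dots> = (\<Sum>j\<in>UNIV. a (h (g i)) (h j) * x j)" using hg[OF i] by simp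
    also have "\<dots> = r * x (g i)" using eq by simp
    finally show "(\<Sum>j<n. a i j * v j) = r * v i" by (simp add: v_def)
  qed
qed

lemma perron_full:
  fixes a :: "nat \<Rightarrow> nat \<Rightarrow> real"
  assumes card: "CARD('n::finite) = n" and pos: "\<And>i j. i < n \<Longrightarrow> j < n \<Longrightarrow> a i j > 0"
  shows "\<exists>r v u. r > 0 \<and> (\<forall>i<n. v i > 0) \<and> (\<forall>i<n. u i > 0)
    \<and> (\<forall>i<n. (\<Sum>j<n. a i j * v j) = r * v i) \<and> (\<forall>j<n. (\<Sum>i<n. u i * a i j) = r * u j)"
proof -
  obtain v r1 where r1: "r1 > 0" and v: "\<forall>i<n. v i > 0" and ev: "\<forall>i<n. (\<Sum>j<n. a i j * v j) = r1 * v i"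
    using perron_nat[OF card, of a, OF pos] by blast
  obtain u r2 where r2: "r2 > 0" and u: "\<forall>i<n. u i > 0" and eu: "\<forall>i<n. (\<Sum>j<n. a j i * u j) = r2 * u i"
    using perron_nat[OF card, of "\<lambda>i j. a j i"] pos by blast
  have n: "n > 0"
  proof -
    have "0 < CARD('n)" by (rule zero_less_card_finite)
    thus ?thesis using card by simp
  qed
  have uv: "(\<Sum>i<n. u i * v i) > 0" using u v n by (intro sum_pos) auto
  have "(\<Sum>i<n. u i * (\<Sum>j<n. a i j * v j)) = r1 * (\<Sum>i<n. u i * v i)"
    using ev by (simp add: sum_distrib_left mult_ac)
  moreover have "(\<Sum>i<n. u i * (\<Sum>j<n. a i j * v j)) = (\<Sum>j<n. v j * (\<Sum>i<n. a i j * u i))"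
    by (simp add: sum_distrib_left mult_ac) (rule sum.swap)
  moreover have "(\<Sum>j<n. v j * (\<Sum>i<n. a i j * u i)) = r2 * (\<Sum>i<n. u i * v i)"
    using eu by (simp add: sum_distrib_left mult_ac)
  ultimately have "r1 = r2" using uv by simp
  thus ?thesis using r1 v u ev eu by (intro exI[of _ r1] exI[of _ v] exI[of _ u]) (auto simp: mult.commute)
qed

lemma perron_bound:
  fixes a :: "nat \<Rightarrow> nat \<Rightarrow> real"
  assumes u: "\<forall>i<n. u i > 0" "\<forall>j<n. (\<Sum>i<n. u i * a i j) = r * u j"
    and z: "\<forall>i<n. z i \<ge> 0" "\<exists>i<n. z i > 0"
    and ineq: "\<forall>i<n. x * z i \<le> (\<Sum>j<n. a i j * z j)"
  shows "x \<le> r"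
proof -
  have pz: "(\<Sum>i<n. u i * z i) > 0"
  proof -
    obtain k where k: "k<n" "z k > 0" using z by blast
    have "u k * z k \<le> (\<Sum>i<n. u i * z i)"
      by (rule member_le_sum) (use k u z in \<open>auto intro: mult_nonneg_nonneg less_imp_le\<close>)
    moreover have "u k * z k > 0" using k u by simp
    ultimately show ?thesis by linarith
  qed
  have "x * (\<Sum>i<n. u i * z i) = (\<Sum>i<n. u i * (x * z i))" by (simp add: sum_distrib_left mult_ac)
  also have "\<dots> \<le> (\<Sum>i<n. u i * (\<Sum>j<n. a i j * z j))"
    by (rule sum_mono) (use u ineq in \<open>auto intro: mult_left_mono less_imp_le\<close>)
  also have "\<dots> = (\<Sum>j<n. z j * (\<Sum>i<n. u i * a i j))"
    by (simp add: sum_distrib_left mult_ac) (rule sum.swap)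
  also have "\<dots> = r * (\<Sum>i<n. u i * z i)" using u by (simp add: sum_distrib_left mult_ac)
  finally show ?thesis using pz by simp
qed

lemma perron_bound_strict:
  fixes a :: "nat \<Rightarrow> nat \<Rightarrow> real"
  assumes u: "\<forall>i<n. u i > 0" "\<forall>j<n. (\<Sum>i<n. u i * a i j) = r * u j"
    and z: "\<forall>i<n. z i \<ge> 0" "\<exists>i<n. z i > 0"
    and ineq: "\<forall>i<n. x * z i \<le> (\<Sum>j<n. a i j * z j)"
    and k: "k < n" "x * z k < (\<Sum>j<n. a k j * z j)"
  shows "x < r"
proof -
  have pz: "(\<Sum>i<n. u i * z i) > 0"
  proof -
    obtain k where k: "k<n" "z k > 0" using z by blast
    have "u k * z k \<le> (\<Sum>i<n. u i * z i)"
      by (rule member_le_sum) (use k u z in \<open>auto intro: mult_nonneg_nonneg less_imp_le\<close>)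
    moreover have "u k * z k > 0" using k u by simp
    ultimately show ?thesis by linarith
  qed
  have "x * (\<Sum>i<n. u i * z i) = (\<Sum>i<n. u i * (x * z i))" by (simp add: sum_distrib_left mult_ac)
  also have "\<dots> < (\<Sum>i<n. u i * (\<Sum>j<n. a i j * z j))"
    by (rule sum_strict_mono_ex1) (use u ineq k in \<open>auto intro: mult_left_mono less_imp_le\<close>)
  also have "\<dots> = (\<Sum>j<n. z j * (\<Sum>i<n. u i * a i j))"
    by (simp add: sum_distrib_left mult_ac) (rule sum.swap)
  also have "\<dots> = r * (\<Sum>i<n. u i * z i)" using u by (simp add: sum_distrib_left mult_ac)
  finally show ?thesis using pz by simp
qed

lemma mat_vec_nth:
  assumes "A \<in> carrier_mat n n" "y \<in> carrier_vec n" "i < n"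
  shows "(A *\<^sub>v y) $ i = (\<Sum>j<n. A $$ (i,j) * y $ j)"
  using assms by (simp add: scalar_prod_def atLeast0LessThan)

lemma eigvec_nonzero:
  assumes "y \<in> carrier_vec n" "y \<noteq> 0\<^sub>v n"
  shows "\<exists>i<n. y $ i \<noteq> 0"
proof (rule ccontr)
  assume "\<not> ?thesis"
  hence "y = 0\<^sub>v n" using assms by (intro eq_vecI) auto
  with assms show False by simp
qed

lemma real_eig_le:
  fixes a :: "nat \<Rightarrow> nat \<Rightarrow> real"
  assumes pos: "\<And>i j. i < n \<Longrightarrow> j < n \<Longrightarrow> a i j > 0"
    and u: "\<forall>i<n. u i > 0" "\<forall>j<n. (\<Sum>i<n. u i * a i j) = r * u j"
    and root: "poly (char_poly (mat n n (\<lambda>(i,j). a i j))) \<mu> = 0"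
  shows "\<bar>\<mu>\<bar> \<le> r"
proof -
  let ?A = "mat n n (\<lambda>(i,j). a i j)"
  have A: "?A \<in> carrier_mat n n" by simp
  have "eigenvalue ?A \<mu>" using root eigenvalue_root_char_poly[OF A] by simp
  then obtain y where y: "eigenvector ?A y \<mu>" unfolding eigenvalue_def by blast
  hence yc: "y \<in> carrier_vec n" and y0: "y \<noteq> 0\<^sub>v n" and ey: "?A *\<^sub>v y = \<mu> \<cdot>\<^sub>v y"
    unfolding eigenvector_def by auto
  have comp: "(\<Sum>j<n. a i j * y $ j) = \<mu> * y $ i" if "i<n" for i
  proof -
    have "(?A *\<^sub>v y) $ i = (\<mu> \<cdot>\<^sub>v y) $ i" using ey by simp
    thus ?thesis using that yc by (simp add: mat_vec_nth[OF A yc that])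
  qed
  show ?thesis
  proof (rule perron_bound[OF u, of "\<lambda>i. \<bar>y $ i\<bar>"])
    show "\<forall>i<n. \<bar>y $ i\<bar> \<ge> 0" by simp
    show "\<exists>i<n. \<bar>y $ i\<bar> > 0" using eigvec_nonzero[OF yc y0] by auto
    show "\<forall>i<n. \<bar>\<mu>\<bar> * \<bar>y $ i\<bar> \<le> (\<Sum>j<n. a i j * \<bar>y $ j\<bar>)"
    proof (intro allI impI)
      fix i assume i: "i<n"
      have "\<bar>\<mu>\<bar> * \<bar>y $ i\<bar> = \<bar>\<Sum>j<n. a i j * y $ j\<bar>" using comp[OF i] by (simp add: abs_mult)
      also have "\<dots> \<le> (\<Sum>j<n. \<bar>a i j * y $ j\<bar>)" by (rule sum_abs)
      also have "\<dots> = (\<Sum>j<n. a i j * \<bar>y $ j\<bar>)"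
        using pos i by (intro sum.cong refl) (simp add: abs_mult abs_of_pos)
      finally show "\<bar>\<mu>\<bar> * \<bar>y $ i\<bar> \<le> (\<Sum>j<n. a i j * \<bar>y $ j\<bar>)" .
    qed
  qed
qed

lemma char_poly_nonzero: "A \<in> carrier_mat n n \<Longrightarrow> char_poly A \<noteq> (0 :: real poly)"
  using degree_monic_char_poly[of A n] by auto

lemma perron_root:
  fixes a :: "nat \<Rightarrow> nat \<Rightarrow> real"
  assumes n: "n > 0"
    and v: "\<forall>i<n. v i > 0" "\<forall>i<n. (\<Sum>j<n. a i j * v j) = r * v i"
  shows "poly (char_poly (mat n n (\<lambda>(i,j). a i j))) r = 0"
proof -
  let ?A = "mat n n (\<lambda>(i,j). a i j)"
  have A: "?A \<in> carrier_mat n n" by simp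
  have "eigenvector ?A (vec n v) r"
    unfolding eigenvector_def
  proof (intro conjI)
    show "vec n v \<in> carrier_vec (dim_row ?A)" by simp
    show "vec n v \<noteq> 0\<^sub>v (dim_row ?A)"
    proof
      assume "vec n v = 0\<^sub>v (dim_row ?A)"
      hence "vec n v $ 0 = 0\<^sub>v n $ 0" by simp
      moreover have "v 0 > 0" using n v by blast
      ultimately show False using n by simp
    qed
    show "?A *\<^sub>v vec n v = r \<cdot>\<^sub>v vec n v"
    proof (rule eq_vecI)
      fix i assume "i < dim_vec (r \<cdot>\<^sub>v vec n v)"
      hence i: "i < n" by simp
      have "(?A *\<^sub>v vec n v) $ i = (\<Sum>j<n. a i j * v j)"
        using i by (auto simp: scalar_prod_def atLeast0LessThan intro!: sum.cong)
      thus "(?A *\<^sub>v vec n v) $ i = (r \<cdot>\<^sub>v vec n v) $ i" using v i by simp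
    qed simp
  qed
  hence "eigenvalue ?A r" unfolding eigenvalue_def by blast
  thus ?thesis using eigenvalue_root_char_poly[OF A] by simp
qed

lemma perron_largest:
  fixes a :: "nat \<Rightarrow> nat \<Rightarrow> real"
  assumes n: "n > 0" and pos: "\<And>i j. i < n \<Longrightarrow> j < n \<Longrightarrow> a i j > 0"
    and v: "\<forall>i<n. v i > 0" "\<forall>i<n. (\<Sum>j<n. a i j * v j) = r * v i"
    and u: "\<forall>i<n. u i > 0" "\<forall>j<n. (\<Sum>i<n. u i * a i j) = r * u j"
  shows "largest_real_eig (mat n n (\<lambda>(i,j). a i j)) = r"
  unfolding largest_real_eig_def
proof (rule Max_eqI)
  show "finite {x. poly (char_poly (mat n n (\<lambda>(i,j). a i j))) x = 0}"
    by (rule poly_roots_finite, rule char_poly_nonzero[of _ n]) simp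
  show "r \<in> {x. poly (char_poly (mat n n (\<lambda>(i,j). a i j))) x = 0}"
    using perron_root[OF n v] by simp
  fix y assume "y \<in> {x. poly (char_poly (mat n n (\<lambda>(i,j). a i j))) x = 0}"
  hence "\<bar>y\<bar> \<le> r" using real_eig_le[OF pos u] by simp
  thus "y \<le> r" by simp
qed




lemma erase_no_root:
  fixes a :: "nat \<Rightarrow> nat \<Rightarrow> real"
  assumes pos: "\<And>i j. i < n \<Longrightarrow> j < n \<Longrightarrow> a i j > 0"
    and u: "\<forall>i<n. u i > 0" "\<forall>j<n. (\<Sum>i<n. u i * a i j) = r * u j"
    and k: "k < n" and x: "x \<ge> r" and r: "r > 0"
  shows "poly (char_poly (mat_erase (mat n n (\<lambda>(i,j). a i j)) k k)) x \<noteq> 0"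
proof
  let ?B = "mat_erase (mat n n (\<lambda>(i,j). a i j)) k k"
  have B: "?B \<in> carrier_mat n n" by simp
  have Bij: "?B $$ (i,j) = (if i = k \<or> j = k then 0 else a i j)" if "i<n" "j<n" for i j
    using that by (simp add: mat_erase_def)
  assume "poly (char_poly ?B) x = 0"
  hence "eigenvalue ?B x" using eigenvalue_root_char_poly[OF B] by simp
  then obtain y where y: "eigenvector ?B y x" unfolding eigenvalue_def by blast
  have dB: "dim_row ?B = n" by (simp add: mat_erase_def)
  have yc: "y \<in> carrier_vec n" and y0: "y \<noteq> 0\<^sub>v n" and ey: "?B *\<^sub>v y = x \<cdot>\<^sub>v y"
    using y unfolding eigenvector_def dB by auto
  have comp: "(\<Sum>j<n. ?B $$ (i,j) * y $ j) = x * y $ i" if "i<n" for i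
  proof -
    have "(?B *\<^sub>v y) $ i = (x \<cdot>\<^sub>v y) $ i" using ey by simp
    thus ?thesis using that yc by (simp add: mat_vec_nth[OF B yc that])
  qed
  have "(\<Sum>j<n. ?B $$ (k,j) * y $ j) = 0" using k by (simp add: Bij)
  hence yk: "y $ k = 0" using comp[OF k] x r by simp
  have "\<bar>x\<bar> < r"
  proof (rule perron_bound_strict[OF u, of "\<lambda>i. \<bar>y $ i\<bar>"])
    show z0: "\<forall>i<n. \<bar>y $ i\<bar> \<ge> 0" by simp
    show zp: "\<exists>i<n. \<bar>y $ i\<bar> > 0" using eigvec_nonzero[OF yc y0] by auto
    show "k < n" by (rule k)
    show "\<bar>x\<bar> * \<bar>y $ k\<bar> < (\<Sum>j<n. a k j * \<bar>y $ j\<bar>)"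
    proof -
      obtain j0 where j0: "j0 < n" "\<bar>y $ j0\<bar> > 0" using zp by blast
      have "a k j0 * \<bar>y $ j0\<bar> \<le> (\<Sum>j<n. a k j * \<bar>y $ j\<bar>)"
        by (rule member_le_sum) (use j0 k in \<open>auto intro!: mult_nonneg_nonneg simp: less_imp_le[OF pos]\<close>)
      moreover have "a k j0 * \<bar>y $ j0\<bar> > 0" using j0 pos k by simp
      ultimately show ?thesis using yk by simp
    qed
    show "\<forall>i<n. \<bar>x\<bar> * \<bar>y $ i\<bar> \<le> (\<Sum>j<n. a i j * \<bar>y $ j\<bar>)"
    proof (intro allI impI)
      fix i assume i: "i<n"
      have "\<bar>x\<bar> * \<bar>y $ i\<bar> = \<bar>\<Sum>j<n. ?B $$ (i,j) * y $ j\<bar>" using comp[OF i] by (simp add: abs_mult)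
      also have "\<dots> \<le> (\<Sum>j<n. \<bar>?B $$ (i,j) * y $ j\<bar>)" by (rule sum_abs)
      also have "\<dots> \<le> (\<Sum>j<n. a i j * \<bar>y $ j\<bar>)"
      proof (rule sum_mono)
        fix j assume "j \<in> {..<n}"
        hence j: "j < n" by simp
        show "\<bar>?B $$ (i,j) * y $ j\<bar> \<le> a i j * \<bar>y $ j\<bar>"
          using pos[OF i j] by (simp add: Bij[OF i j] abs_mult)
      qed
      finally show "\<bar>x\<bar> * \<bar>y $ i\<bar> \<le> (\<Sum>j<n. a i j * \<bar>y $ j\<bar>)" .
    qed
  qed
  with x show False by simp
qed

lemma erase_pos:
  fixes a :: "nat \<Rightarrow> nat \<Rightarrow> real"
  assumes pos: "\<And>i j. i < n \<Longrightarrow> j < n \<Longrightarrow> a i j > 0"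
    and u: "\<forall>i<n. u i > 0" "\<forall>j<n. (\<Sum>i<n. u i * a i j) = r * u j"
    and k: "k < n" and r: "r > 0"
  shows "poly (char_poly (mat_erase (mat n n (\<lambda>(i,j). a i j)) k k)) r > 0"
proof (rule ccontr)
  let ?q = "char_poly (mat_erase (mat n n (\<lambda>(i,j). a i j)) k k)"
  assume "\<not> ?thesis"
  hence qr: "poly ?q r \<le> 0" by simp
  have B: "mat_erase (mat n n (\<lambda>(i,j). a i j)) k k \<in> carrier_mat n n" by simp
  have "lead_coeff ?q = 1" using degree_monic_char_poly[OF B] by simp
  then obtain N where N: "\<forall>x\<ge>N. poly ?q x \<ge> 1" using poly_pinfty_gt_lc[of ?q] by auto
  define X where "X = max N r"
  have "poly ?q X \<ge> 1" using N by (simp add: X_def)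
  hence "\<exists>x. r \<le> x \<and> x \<le> X \<and> poly ?q x = 0"
    using qr by (intro IVT') (auto simp: X_def intro!: continuous_intros)
  then obtain x where "r \<le> x" "poly ?q x = 0" by blast
  with erase_no_root[OF pos u k _ r] show False by blast
qed

lemma pderiv_pos:
  fixes a :: "nat \<Rightarrow> nat \<Rightarrow> real"
  assumes n: "n > 0" and pos: "\<And>i j. i < n \<Longrightarrow> j < n \<Longrightarrow> a i j > 0"
    and u: "\<forall>i<n. u i > 0" "\<forall>j<n. (\<Sum>i<n. u i * a i j) = r * u j"
    and r: "r > 0"
  shows "poly (pderiv (char_poly (mat n n (\<lambda>(i,j). a i j)))) r > 0"
proof -
  let ?A = "mat n n (\<lambda>(i,j). a i j)"
  have A: "?A \<in> carrier_mat n n" by simp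
  have "poly (monom 1 1 * pderiv (char_poly ?A)) r = poly (\<Sum>i<n. char_poly (mat_erase ?A i i)) r"
    by (simp only: pderiv_char_poly_mat_erase[OF A])
  hence eq: "r * poly (pderiv (char_poly ?A)) r = (\<Sum>i<n. poly (char_poly (mat_erase ?A i i)) r)"
    by (simp add: poly_monom poly_sum)
  have "(\<Sum>i<n. poly (char_poly (mat_erase ?A i i)) r) > 0"
    using n erase_pos[OF pos u _ r] by (intro sum_pos) auto
  with eq r show ?thesis by (metis zero_less_mult_pos)
qed




definition ee :: "(nat \<Rightarrow> nat \<Rightarrow> real \<Rightarrow> real) \<Rightarrow> real \<Rightarrow> real \<Rightarrow> nat \<Rightarrow> nat \<Rightarrow> real" where
  "ee a s x i j = of_bool (i = j) * x - a i j s"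

definition DD :: "nat \<Rightarrow> (nat \<Rightarrow> nat \<Rightarrow> real \<Rightarrow> real) \<Rightarrow> real \<Rightarrow> real \<Rightarrow> real" where
  "DD n a s x = (\<Sum>p\<in>{p. p permutes {0..<n}}. signof p * (\<Prod>i\<in>{0..<n}. ee a s x i (p i)))"

definition QQ :: "nat \<Rightarrow> (nat \<Rightarrow> nat \<Rightarrow> real \<Rightarrow> real) \<Rightarrow> real \<Rightarrow> real \<Rightarrow> real \<Rightarrow> real" where
  "QQ n a s x y = (\<Sum>p\<in>{p. p permutes {0..<n}}. signof p *
      (\<Sum>k<n. (\<Prod>i<k. ee a s y i (p i)) * of_bool (k = p k) * (\<Prod>i\<in>{Suc k..<n}. ee a s x i (p i))))"

definition DDs :: "nat \<Rightarrow> (nat \<Rightarrow> nat \<Rightarrow> real \<Rightarrow> real) \<Rightarrow> (nat \<Rightarrow> nat \<Rightarrow> real \<Rightarrow> real) \<Rightarrow> real \<Rightarrow> real \<Rightarrow> real" where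
  "DDs n a a' s x = (\<Sum>p\<in>{p. p permutes {0..<n}}. signof p *
      (\<Sum>k\<in>{0..<n}. (- a' k (p k) s) * (\<Prod>i\<in>{0..<n}-{k}. ee a s x i (p i))))"

lemma DD_poly: "poly (char_poly (mat n n (\<lambda>(i,j). a i j s))) x = DD n a s x"
proof -
  let ?A = "mat n n (\<lambda>(i,j). a i j s)"
  have A: "?A \<in> carrier_mat n n" by simp
  have C: "- char_matrix ?A x \<in> carrier_mat n n" using A by simp
  show ?thesis
    unfolding char_poly_matrix[OF A] det_def'[OF C] DD_def
  proof (rule sum.cong[OF refl])
    fix p assume "p \<in> {p. p permutes {0..<n}}"
    hence p: "p permutes {0..<n}" by simp
    have "(\<Prod>i = 0..<n. (- char_matrix ?A x) $$ (i, p i)) = (\<Prod>i\<in>{0..<n}. ee a s x i (p i))"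
    proof (rule prod.cong[OF refl])
      fix i assume i: "i \<in> {0..<n}"
      hence pi: "p i < n" using permutes_in_image[OF p] by simp
      show "(- char_matrix ?A x) $$ (i, p i) = ee a s x i (p i)"
        using i pi by (simp add: char_matrix_def ee_def)
    qed
    thus "signof p * (\<Prod>i = 0..<n. (- char_matrix ?A x) $$ (i, p i)) =
          signof p * (\<Prod>i\<in>{0..<n}. ee a s x i (p i))" by simp
  qed
qed

lemma prod_diff_telescope:
  fixes f g :: "nat \<Rightarrow> real"
  shows "(\<Prod>i<n. f i) - (\<Prod>i<n. g i) = (\<Sum>k<n. (\<Prod>i<k. g i) * (f k - g k) * (\<Prod>i\<in>{Suc k..<n}. f i))"
proof (induction n)
  case 0
  then show ?case by simp
next
  case (Suc n)
  have "(\<Prod>i<Suc n. f i) - (\<Prod>i<Suc n. g i) = ((\<Prod>i<n. f i) - (\<Prod>i<n. g i)) * f n + (\<Prod>i<n. g i) * (f n - g n)"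
    by (simp add: algebra_simps)
  also have "\<dots> = (\<Sum>k<n. (\<Prod>i<k. g i) * (f k - g k) * (\<Prod>i\<in>{Suc k..<n}. f i) * f n) + (\<Prod>i<n. g i) * (f n - g n)"
    by (simp add: Suc.IH sum_distrib_right)
  also have "(\<Sum>k<n. (\<Prod>i<k. g i) * (f k - g k) * (\<Prod>i\<in>{Suc k..<n}. f i) * f n)
      = (\<Sum>k<n. (\<Prod>i<k. g i) * (f k - g k) * (\<Prod>i\<in>{Suc k..<Suc n}. f i))"
  proof (rule sum.cong[OF refl])
    fix k assume "k \<in> {..<n}"
    hence "Suc k \<le> n" by simp
    hence "(\<Prod>i\<in>{Suc k..<Suc n}. f i) = (\<Prod>i\<in>{Suc k..<n}. f i) * f n"
      by (simp add: prod.atLeastLessThan_Suc)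
    thus "(\<Prod>i<k. g i) * (f k - g k) * (\<Prod>i\<in>{Suc k..<n}. f i) * f n
       = (\<Prod>i<k. g i) * (f k - g k) * (\<Prod>i\<in>{Suc k..<Suc n}. f i)" by simp
  qed
  finally show ?case by simp
qed

lemma DD_diff: "DD n a s x - DD n a s y = (x - y) * QQ n a s x y"
proof -
  have "DD n a s x - DD n a s y = (\<Sum>p\<in>{p. p permutes {0..<n}}. signof p *
      ((\<Prod>i<n. ee a s x i (p i)) - (\<Prod>i<n. ee a s y i (p i))))"
    unfolding DD_def by (simp add: sum_subtractf right_diff_distrib atLeast0LessThan)
  also have "\<dots> = (\<Sum>p\<in>{p. p permutes {0..<n}}. signof p *
      (\<Sum>k<n. (\<Prod>i<k. ee a s y i (p i)) * ((x - y) * of_bool (k = p k)) * (\<Prod>i\<in>{Suc k..<n}. ee a s x i (p i))))"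
  proof (rule sum.cong[OF refl])
    fix p
    have e: "ee a s x k (p k) - ee a s y k (p k) = (x - y) * of_bool (k = p k)" for k
      by (simp add: ee_def algebra_simps)
    show "signof p * ((\<Prod>i<n. ee a s x i (p i)) - (\<Prod>i<n. ee a s y i (p i))) =
      signof p * (\<Sum>k<n. (\<Prod>i<k. ee a s y i (p i)) * ((x - y) * of_bool (k = p k)) * (\<Prod>i\<in>{Suc k..<n}. ee a s x i (p i)))"
      by (simp only: prod_diff_telescope e)
  qed
  also have "\<dots> = (x - y) * QQ n a s x y"
    unfolding QQ_def sum_distrib_left
    by (rule sum.cong[OF refl], rule sum.cong[OF refl]) (simp only: mult_ac)
  finally show ?thesis .
qed

lemma DD_deriv_s:
  assumes "\<And>i j. (a i j has_real_derivative a' i j s) (at s)"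
  shows "((\<lambda>s. DD n a s x) has_real_derivative DDs n a a' s x) (at s)"
  unfolding DD_def DDs_def
proof (intro DERIV_sum DERIV_cmult)
  fix p
  show "((\<lambda>s. \<Prod>i\<in>{0..<n}. ee a s x i (p i)) has_real_derivative
     (\<Sum>k\<in>{0..<n}. (- a' k (p k) s) * (\<Prod>i\<in>{0..<n}-{k}. ee a s x i (p i)))) (at s)"
    unfolding ee_def
    by (rule has_field_derivative_prod) (auto intro!: derivative_eq_intros assms)
qed

lemma QQ_cont:
  assumes "\<And>i j. isCont (a i j) t" "isCont X t" "isCont Y t"
  shows "isCont (\<lambda>s. QQ n a s (X s) (Y s)) t"
  unfolding QQ_def ee_def by (intro continuous_intros assms)

lemma DD_deriv_x: "((\<lambda>x. DD n a s x) has_real_derivative QQ n a s x x) (at x)"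
proof -
  have "isCont (\<lambda>z. QQ n a s z x) x"
    unfolding QQ_def ee_def by (intro continuous_intros)
  thus ?thesis unfolding CARAT_DERIV
    by (intro exI[of _ "\<lambda>z. QQ n a s z x"]) (simp add: DD_diff mult.commute)
qed

lemma QQ_pderiv: "QQ n a s x x = poly (pderiv (char_poly (mat n n (\<lambda>(i,j). a i j s)))) x"
proof -
  have "((\<lambda>x. DD n a s x) has_real_derivative poly (pderiv (char_poly (mat n n (\<lambda>(i,j). a i j s)))) x) (at x)"
    using poly_DERIV[of "char_poly (mat n n (\<lambda>(i,j). a i j s))" x] by (simp add: DD_poly)
  thus ?thesis using DD_deriv_x DERIV_unique by blast
qed




lemma rho_deriv:
  fixes a a' :: "nat \<Rightarrow> nat \<Rightarrow> real \<Rightarrow> real" and \<rho> :: "real \<Rightarrow> real"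
  assumes t: "t > 0"
    and root: "\<And>s. s > 0 \<Longrightarrow> DD n a s (\<rho> s) = 0"
    and cont: "isCont \<rho> t"
    and ader: "\<And>i j. (a i j has_real_derivative a' i j t) (at t)"
    and Qnz: "QQ n a t (\<rho> t) (\<rho> t) \<noteq> 0"
  shows "(\<rho> has_real_derivative (- DDs n a a' t (\<rho> t) / QQ n a t (\<rho> t) (\<rho> t))) (at t)"
proof -
  define y where "y = \<rho> t"
  have "((\<lambda>s. DD n a s y) has_real_derivative DDs n a a' t y) (at t)"
    by (rule DD_deriv_s) (rule ader)
  then obtain H where H: "\<forall>z. DD n a z y - DD n a t y = H z * (z - t)" "isCont H t" "H t = DDs n a a' t y"
    unfolding CARAT_DERIV by blast
  define G where "G s = QQ n a s (\<rho> s) y" for s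
  have acont: "isCont (a i j) t" for i j using ader by (rule DERIV_isCont)
  have Gc: "isCont G t" unfolding G_def by (rule QQ_cont[OF acont cont continuous_const])
  have Gt: "G t \<noteq> 0" using Qnz by (simp add: G_def y_def)
  have ev: "eventually (\<lambda>s. G s \<noteq> 0 \<and> s > 0 \<and> s \<noteq> t) (at t)"
  proof -
    have "eventually (\<lambda>s. G s \<noteq> 0) (at t)"
      using Gc Gt by (intro tendsto_imp_eventually_ne) (auto simp: isCont_def)
    moreover have "eventually (\<lambda>s. s > 0) (at t)"
      using t by (rule order_tendstoD(1)[OF tendsto_ident_at])
    moreover have "eventually (\<lambda>s. s \<noteq> t) (at t)" by (rule eventually_neq_at_within)
    ultimately show ?thesis by eventually_elim auto
  qed
  have key: "- H s / G s = (\<rho> s - \<rho> t) / (s - t)" if "G s \<noteq> 0 \<and> s > 0 \<and> s \<noteq> t" for s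
  proof -
    have "0 = DD n a s (\<rho> s) - DD n a t y" using root that root[OF t] by (simp add: y_def)
    also have "\<dots> = (DD n a s (\<rho> s) - DD n a s y) + (DD n a s y - DD n a t y)" by simp
    also have "\<dots> = (\<rho> s - y) * G s + H s * (s - t)" using H(1) by (simp add: DD_diff G_def)
    finally have "(\<rho> s - y) * G s = - H s * (s - t)" by linarith
    thus ?thesis using that by (simp add: y_def field_simps)
  qed
  have lim: "((\<lambda>s. - H s / G s) \<longlongrightarrow> - H t / G t) (at t)"
    using H(2) Gc Gt by (intro tendsto_intros) (auto simp: isCont_def)
  have "((\<lambda>s. (\<rho> s - \<rho> t) / (s - t)) \<longlongrightarrow> - H t / G t) (at t)"
    by (rule Lim_transform_eventually[OF lim]) (use ev key in \<open>rule eventually_mono\<close>)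
  thus ?thesis using H(3) by (simp add: has_field_derivative_iff G_def y_def)
qed

lemma field_differentiable_prod:
  fixes f :: "'i \<Rightarrow> real \<Rightarrow> real"
  shows "(\<And>i. i \<in> I \<Longrightarrow> f i field_differentiable (at t)) \<Longrightarrow> (\<lambda>s. \<Prod>i\<in>I. f i s) field_differentiable (at t)"
proof (induction I rule: infinite_finite_induct)
  case (infinite A)
  then show ?case by simp
next
  case empty
  then show ?case by simp
next
  case (insert x A)
  then show ?case by (simp add: field_differentiable_mult)
qed

lemma L1_diff:
  fixes a a' :: "nat \<Rightarrow> nat \<Rightarrow> real \<Rightarrow> real" and \<rho> :: "real \<Rightarrow> real"
  assumes "\<rho> field_differentiable (at t)" "\<And>i j. a i j field_differentiable (at t)"
    "\<And>i j. a' i j field_differentiable (at t)" "QQ n a t (\<rho> t) (\<rho> t) \<noteq> 0"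
  shows "(\<lambda>s. - DDs n a a' s (\<rho> s) / QQ n a s (\<rho> s) (\<rho> s)) field_differentiable (at t)"
  using assms(4) unfolding DDs_def QQ_def ee_def
  by (intro derivative_intros field_differentiable_prod assms(1-3))




theorem perron_smooth:
  fixes a a' :: "nat \<Rightarrow> nat \<Rightarrow> real \<Rightarrow> real"
  assumes card: "CARD('n::finite) = n"
    and pos: "\<And>s i j. s > 0 \<Longrightarrow> i < n \<Longrightarrow> j < n \<Longrightarrow> a i j s > 0"
    and ader: "\<And>s i j. s > 0 \<Longrightarrow> (a i j has_real_derivative a' i j s) (at s)"
    and a'd: "\<And>s i j. s > 0 \<Longrightarrow> a' i j field_differentiable (at s)"
  shows "\<exists>L1. \<forall>s>0. largest_real_eig (mat n n (\<lambda>(i,j). a i j s)) > 0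
     \<and> ((\<lambda>s. largest_real_eig (mat n n (\<lambda>(i,j). a i j s))) has_real_derivative L1 s) (at s)
     \<and> L1 field_differentiable (at s)"
proof -
  define \<rho> where "\<rho> s = largest_real_eig (mat n n (\<lambda>(i,j). a i j s))" for s
  have n: "n > 0"
  proof -
    have "0 < CARD('n)" by (rule zero_less_card_finite)
    thus ?thesis using card by simp
  qed
  define P where "P s v u \<longleftrightarrow> \<rho> s > 0 \<and> (\<forall>i<n. v i > 0) \<and> (\<forall>i<n. u i > 0)
    \<and> (\<forall>i<n. (\<Sum>j<n. a i j s * v j) = \<rho> s * v i) \<and> (\<forall>j<n. (\<Sum>i<n. u i * a i j s) = \<rho> s * u j)"
    for s and v u :: "nat \<Rightarrow> real"
  have "\<forall>s. \<exists>vu. s > 0 \<longrightarrow> P s (fst vu) (snd vu)"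
  proof
    fix s
    show "\<exists>vu. s > 0 \<longrightarrow> P s (fst vu) (snd vu)"
    proof (cases "s > 0")
      case True
      obtain r v u where r: "r > 0" and v: "\<forall>i<n. v i > 0" and u: "\<forall>i<n. u i > 0"
        and ev: "\<forall>i<n. (\<Sum>j<n. a i j s * v j) = r * v i" and eu: "\<forall>j<n. (\<Sum>i<n. u i * a i j s) = r * u j"
        using perron_full[OF card, of "\<lambda>i j. a i j s", OF pos[OF True]] by blast
      have "\<rho> s = r" unfolding \<rho>_def
        by (rule perron_largest[OF n, of "\<lambda>i j. a i j s", OF pos[OF True] v ev u eu])
      thus ?thesis using r v u ev eu by (intro exI[of _ "(v,u)"]) (simp add: P_def)
    qed simp
  qed
  from choice[OF this] obtain f where f: "\<And>s. s > 0 \<Longrightarrow> P s (fst (f s)) (snd (f s))" by blast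
  define V where "V s = fst (f s)" for s
  define U where "U s = snd (f s)" for s
  have PVU: "P s (V s) (U s)" if "s > 0" for s using f[OF that] by (simp add: V_def U_def)
  have rpos: "\<rho> s > 0" if "s > 0" for s using PVU[OF that] by (simp add: P_def)
  have Vpos: "\<forall>i<n. V s i > 0" if "s > 0" for s using PVU[OF that] by (simp add: P_def)
  have Upos: "\<forall>i<n. U s i > 0" if "s > 0" for s using PVU[OF that] by (simp add: P_def)
  have eV: "\<forall>i<n. (\<Sum>j<n. a i j s * V s j) = \<rho> s * V s i" if "s > 0" for s using PVU[OF that] by (simp add: P_def)
  have eU: "\<forall>j<n. (\<Sum>i<n. U s i * a i j s) = \<rho> s * U s j" if "s > 0" for s using PVU[OF that] by (simp add: P_def)
  have root: "DD n a s (\<rho> s) = 0" if "s > 0" for s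
    using perron_root[OF n Vpos[OF that] eV[OF that]] by (simp add: DD_poly \<rho>_def)
  have Qpos: "QQ n a s (\<rho> s) (\<rho> s) > 0" if "s > 0" for s
    using pderiv_pos[OF n, of "\<lambda>i j. a i j s", OF pos[OF that] Upos[OF that] eU[OF that] rpos[OF that]]
    by (simp add: QQ_pderiv \<rho>_def)
  have cont: "isCont \<rho> t" if t: "t > 0" for t
  proof -
    define w where "w s k = (\<Sum>j<n. (a k j s - a k j t) * V t j)" for s k
    define W where "W s = (\<Sum>k<n. \<bar>w s k\<bar> / V t k)" for s
    have acont: "isCont (a i j) t" for i j using ader[OF t] by (rule DERIV_isCont)
    have Wc: "isCont W t" unfolding W_def w_def
      by (intro continuous_intros acont) (use Vpos[OF t] in \<open>auto simp: less_imp_neq[symmetric]\<close>)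
    have Wt: "W t = 0" by (simp add: W_def w_def)
    have bound: "\<bar>\<rho> s - \<rho> t\<bar> \<le> W s" if s: "s > 0" for s
    proof -
      let ?u = "U s" and ?v = "V t"
      have S: "(\<Sum>i<n. ?u i * ?v i) > 0" using n Upos[OF s] Vpos[OF t] by (intro sum_pos) auto
      have eq1: "(\<Sum>i<n. ?u i * (\<Sum>j<n. a i j s * ?v j)) = \<rho> s * (\<Sum>i<n. ?u i * ?v i)"
      proof -
        have "(\<Sum>i<n. ?u i * (\<Sum>j<n. a i j s * ?v j)) = (\<Sum>j<n. ?v j * (\<Sum>i<n. ?u i * a i j s))"
          by (simp add: sum_distrib_left mult_ac) (rule sum.swap)
        also have "\<dots> = \<rho> s * (\<Sum>i<n. ?u i * ?v i)"
          using eU[OF s] by (simp add: sum_distrib_left mult_ac)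
        finally show ?thesis .
      qed
      have eq2: "(\<Sum>i<n. ?u i * (\<Sum>j<n. a i j t * ?v j)) = \<rho> t * (\<Sum>i<n. ?u i * ?v i)"
        using eV[OF t] by (simp add: sum_distrib_left mult_ac)
      have "(\<rho> s - \<rho> t) * (\<Sum>i<n. ?u i * ?v i) = (\<Sum>i<n. ?u i * w s i)"
        unfolding left_diff_distrib eq1[symmetric] eq2[symmetric] sum_subtractf[symmetric]
          right_diff_distrib[symmetric] w_def
        by (simp add: left_diff_distrib sum_subtractf)
      hence "\<bar>\<rho> s - \<rho> t\<bar> * (\<Sum>i<n. ?u i * ?v i) = \<bar>\<Sum>i<n. ?u i * w s i\<bar>"
        using S by (metis abs_mult abs_of_pos)
      also have "\<dots> \<le> (\<Sum>i<n. \<bar>?u i * w s i\<bar>)" by (rule sum_abs)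
      also have "\<dots> \<le> (\<Sum>i<n. ?u i * ?v i * W s)"
      proof (rule sum_mono)
        fix i assume "i \<in> {..<n}"
        hence i: "i < n" by simp
        have vi: "?v i > 0" using Vpos[OF t] i by simp
        have ui: "?u i > 0" using Upos[OF s] i by simp
        have "\<bar>w s i\<bar> / ?v i \<le> W s"
          unfolding W_def by (rule member_le_sum) (use i Vpos[OF t] in auto)
        hence "\<bar>w s i\<bar> \<le> ?v i * W s" using vi by (simp add: field_simps)
        thus "\<bar>?u i * w s i\<bar> \<le> ?u i * ?v i * W s"
          using ui by (simp add: abs_mult mult.assoc mult_left_mono)
      qed
      also have "\<dots> = (\<Sum>i<n. ?u i * ?v i) * W s" by (simp add: sum_distrib_right)
      finally show ?thesis using S by (simp add: mult.commute)
    qed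
    have "((\<lambda>s. \<rho> s - \<rho> t) \<longlongrightarrow> 0) (at t)"
    proof (rule Lim_null_comparison)
      show "eventually (\<lambda>s. norm (\<rho> s - \<rho> t) \<le> W s) (at t)"
        using order_tendstoD(1)[OF tendsto_ident_at t] by eventually_elim (use bound in auto)
      show "(W \<longlongrightarrow> 0) (at t)" using Wc Wt by (simp add: isCont_def)
    qed
    thus ?thesis unfolding isCont_def by (rule LIM_zero_cancel)
  qed
  define L1 where "L1 s = - DDs n a a' s (\<rho> s) / QQ n a s (\<rho> s) (\<rho> s)" for s
  have der: "(\<rho> has_real_derivative L1 s) (at s)" if s: "s > 0" for s
    unfolding L1_def
    by (rule rho_deriv[where n=n and a=a and a'=a' and \<rho>=\<rho>, OF s root cont[OF s] ader[OF s]])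
       (use Qpos[OF s] in auto)
  have dif: "L1 field_differentiable (at s)" if s: "s > 0" for s
  proof -
    have "\<rho> field_differentiable (at s)" using der[OF s] field_differentiable_def by blast
    moreover have "a i j field_differentiable (at s)" for i j
      using ader[OF s] field_differentiable_def by blast
    ultimately show ?thesis unfolding L1_def
      by (rule L1_diff) (use a'd[OF s] Qpos[OF s] in auto)
  qed
  show ?thesis using rpos der dif unfolding \<rho>_def by blast
qed

theorem perron_vector:
  fixes a :: "nat \<Rightarrow> nat \<Rightarrow> real"
  assumes card: "CARD('n::finite) = n"
    and pos: "\<And>i j. i < n \<Longrightarrow> j < n \<Longrightarrow> a i j > 0"
  shows "\<exists>v. largest_real_eig (mat n n (\<lambda>(i,j). a i j)) > 0 \<and> (\<forall>i<n. v i > 0) \<and>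
    (\<forall>i<n. (\<Sum>j<n. a i j * v j) = largest_real_eig (mat n n (\<lambda>(i,j). a i j)) * v i)"
proof -
  have n: "n > 0"
  proof -
    have "0 < CARD('n)" by (rule zero_less_card_finite)
    thus ?thesis using card by simp
  qed
  obtain r v u where r: "r > 0" and v: "\<forall>i<n. v i > 0" and u: "\<forall>i<n. u i > 0"
    and ev: "\<forall>i<n. (\<Sum>j<n. a i j * v j) = r * v i" and eu: "\<forall>j<n. (\<Sum>i<n. u i * a i j) = r * u j"
    using perron_full[OF card, of a, OF pos] by blast
  have "largest_real_eig (mat n n (\<lambda>(i,j). a i j)) = r"
    by (rule perron_largest[OF n pos v ev u eu])
  thus ?thesis using r v ev by auto
qed




primrec PP :: "nat set \<Rightarrow> (nat \<Rightarrow> nat \<Rightarrow> real) \<Rightarrow> nat \<Rightarrow> nat \<Rightarrow> nat \<Rightarrow> real" where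
  "PP K w 0 a b = of_bool (a = b)"
| "PP K w (Suc n) a b = (\<Sum>d\<in>K. PP K w n a d * w d b)"

lemma PiE_Suc_split0:
  "(\<Sum>c\<in>{..<Suc (Suc n)} \<rightarrow>\<^sub>E K. F c) = (\<Sum>(y,g)\<in>K \<times> ({..<Suc n} \<rightarrow>\<^sub>E K). F (g(Suc n := y)))"
proof (rule sum.reindex_bij_witness[of _ "\<lambda>(y,g). g(Suc n := y)" "\<lambda>g. (g (Suc n), g(Suc n := undefined))"])
  fix c assume c: "c \<in> {..<Suc (Suc n)} \<rightarrow>\<^sub>E K"
  show "(\<lambda>(y,g). g(Suc n := y)) ((\<lambda>g. (g (Suc n), g(Suc n := undefined))) c) = c" by simp
  show "(\<lambda>g. (g (Suc n), g(Suc n := undefined))) c \<in> K \<times> ({..<Suc n} \<rightarrow>\<^sub>E K)"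
  proof -
    have "c (Suc n) \<in> K" using c by (simp add: PiE_iff)
    moreover have "c(Suc n := undefined) \<in> {..<Suc n} \<rightarrow>\<^sub>E K"
    proof (rule PiE_I)
      fix x assume "x \<in> {..<Suc n}"
      thus "(c(Suc n := undefined)) x \<in> K" using c by (simp add: PiE_iff)
    next
      fix x assume x: "x \<notin> {..<Suc n}"
      show "(c(Suc n := undefined)) x = undefined"
      proof (cases "x = Suc n")
        case False
        hence "x \<notin> {..<Suc (Suc n)}" using x by simp
        thus ?thesis using False PiE_arb[OF c] by simp
      qed simp
    qed
    ultimately show ?thesis by simp
  qed
  show "(\<lambda>(y,g). F (g(Suc n := y))) ((\<lambda>g. (g (Suc n), g(Suc n := undefined))) c) = F c" by simp
next
  fix b assume b: "b \<in> K \<times> ({..<Suc n} \<rightarrow>\<^sub>E K)"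
  obtain y g where b': "b = (y,g)" "y \<in> K" "g \<in> {..<Suc n} \<rightarrow>\<^sub>E K" using b by auto
  have gu: "g (Suc n) = undefined" using PiE_arb[OF b'(3)] by simp
  show "(\<lambda>g. (g (Suc n), g(Suc n := undefined))) ((\<lambda>(y,g). g(Suc n := y)) b) = b"
    using gu b'(1) by (simp add: fun_upd_idem_iff)
  show "(\<lambda>(y,g). g(Suc n := y)) b \<in> {..<Suc (Suc n)} \<rightarrow>\<^sub>E K"
  proof -
    have "g(Suc n := y) \<in> {..<Suc (Suc n)} \<rightarrow>\<^sub>E K"
    proof (rule PiE_I)
      fix x assume "x \<in> {..<Suc (Suc n)}"
      thus "(g(Suc n := y)) x \<in> K" using b' by (auto simp: PiE_iff less_Suc_eq)
    next
      fix x assume "x \<notin> {..<Suc (Suc n)}"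
      thus "(g(Suc n := y)) x = undefined" using PiE_arb[OF b'(3)] by simp
    qed
    thus ?thesis using b'(1) by simp
  qed
qed
lemma PiE_Suc_split:
  "(\<Sum>c\<in>{..<Suc (Suc n)} \<rightarrow>\<^sub>E K. F c) = (\<Sum>g\<in>{..<Suc n} \<rightarrow>\<^sub>E K. \<Sum>y\<in>K. F (g(Suc n := y)))"
proof -
  have "(\<Sum>c\<in>{..<Suc (Suc n)} \<rightarrow>\<^sub>E K. F c) = (\<Sum>(y,g)\<in>K \<times> ({..<Suc n} \<rightarrow>\<^sub>E K). F (g(Suc n := y)))"
    by (rule PiE_Suc_split0)
  also have "\<dots> = (\<Sum>y\<in>K. \<Sum>g\<in>{..<Suc n} \<rightarrow>\<^sub>E K. F (g(Suc n := y)))"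
    by (simp add: sum.cartesian_product)
  also have "\<dots> = (\<Sum>g\<in>{..<Suc n} \<rightarrow>\<^sub>E K. \<Sum>y\<in>K. F (g(Suc n := y)))"
    by (rule sum.swap)
  finally show ?thesis .
qed

lemma PiE_one:
  "(\<Sum>c\<in>{..<Suc 0} \<rightarrow>\<^sub>E K. F c) = (\<Sum>y\<in>K. F ((\<lambda>_. undefined)(0 := y)))"
proof (rule sum.reindex_bij_witness[of _ "\<lambda>y. (\<lambda>_. undefined)(0 := y)" "\<lambda>g. g 0"])
  fix c assume c: "c \<in> {..<Suc 0} \<rightarrow>\<^sub>E K"
  show "(\<lambda>y. (\<lambda>_. undefined)(0 := y)) ((\<lambda>g. g 0) c) = c"
  proof
    fix x show "((\<lambda>_. undefined)(0 := c 0)) x = c x"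
      using PiE_arb[OF c, of x] by (cases "x = 0") auto
  qed
  thus "F ((\<lambda>y. (\<lambda>_. undefined)(0 := y)) ((\<lambda>g. g 0) c)) = F c" by simp
  show "(\<lambda>g. g 0) c \<in> K" using c by (simp add: PiE_iff)
next
  fix y assume y: "y \<in> K"
  show "(\<lambda>g. g 0) ((\<lambda>y. (\<lambda>_. undefined)(0 := y)) y) = y" by simp
  show "(\<lambda>y. (\<lambda>_. undefined)(0 := y)) y \<in> {..<Suc 0} \<rightarrow>\<^sub>E K"
    by (rule PiE_I) (use y in auto)
qed

lemma path_sum:
  assumes K: "finite K"
  shows "(\<Sum>c\<in>{..<Suc n} \<rightarrow>\<^sub>E K. (\<Prod>m<n. w (c m) (c (Suc m))) * f (c 0) (c n))
         = (\<Sum>a\<in>K. \<Sum>b\<in>K. f a b * PP K w n a b)"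
proof (induction n arbitrary: f)
  case 0
  show ?case using K by (simp add: PiE_one of_bool_def if_distrib sum.If_cases)
next
  case (Suc n)
  define f' where "f' a b = (\<Sum>y\<in>K. f a y * w b y)" for a b
  have "(\<Sum>c\<in>{..<Suc (Suc n)} \<rightarrow>\<^sub>E K. (\<Prod>m<Suc n. w (c m) (c (Suc m))) * f (c 0) (c (Suc n)))
      = (\<Sum>g\<in>{..<Suc n} \<rightarrow>\<^sub>E K. \<Sum>y\<in>K. (\<Prod>m<Suc n. w ((g(Suc n := y)) m) ((g(Suc n := y)) (Suc m)))
            * f ((g(Suc n := y)) 0) y)"
    by (simp only: PiE_Suc_split) simp
  also have "\<dots> = (\<Sum>g\<in>{..<Suc n} \<rightarrow>\<^sub>E K. (\<Prod>m<n. w (g m) (g (Suc m))) * f' (g 0) (g n))"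
  proof (rule sum.cong[OF refl])
    fix g
    have p: "(\<Prod>m<Suc n. w ((g(Suc n := y)) m) ((g(Suc n := y)) (Suc m))) = (\<Prod>m<n. w (g m) (g (Suc m))) * w (g n) y" for y
    proof -
      have "(\<Prod>m<n. w ((g(Suc n := y)) m) ((g(Suc n := y)) (Suc m))) = (\<Prod>m<n. w (g m) (g (Suc m)))"
        by (rule prod.cong) auto
      thus ?thesis by simp
    qed
    show "(\<Sum>y\<in>K. (\<Prod>m<Suc n. w ((g(Suc n := y)) m) ((g(Suc n := y)) (Suc m))) * f ((g(Suc n := y)) 0) y)
        = (\<Prod>m<n. w (g m) (g (Suc m))) * f' (g 0) (g n)"
      by (simp add: p f'_def sum_distrib_left mult_ac)
  qed
  also have "\<dots> = (\<Sum>a\<in>K. \<Sum>b\<in>K. f' a b * PP K w n a b)" by (rule Suc.IH)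
  also have "\<dots> = (\<Sum>a\<in>K. \<Sum>y\<in>K. f a y * PP K w (Suc n) a y)"
  proof (rule sum.cong[OF refl])
    fix a
    show "(\<Sum>b\<in>K. f' a b * PP K w n a b) = (\<Sum>y\<in>K. f a y * PP K w (Suc n) a y)"
      unfolding f'_def by (simp add: sum_distrib_left sum_distrib_right mult_ac) (rule sum.swap)
  qed
  finally show ?case .
qed

lemma cyclic_sum:
  assumes K: "finite K"
  shows "(\<Sum>c\<in>{..<Suc n} \<rightarrow>\<^sub>E K. \<Prod>m<Suc n. w (c m) (c (Suc m mod Suc n)))
         = (\<Sum>a\<in>K. PP K w (Suc n) a a)"
proof -
  have "(\<Sum>c\<in>{..<Suc n} \<rightarrow>\<^sub>E K. \<Prod>m<Suc n. w (c m) (c (Suc m mod Suc n)))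
      = (\<Sum>c\<in>{..<Suc n} \<rightarrow>\<^sub>E K. (\<Prod>m<n. w (c m) (c (Suc m))) * (\<lambda>a b. w b a) (c 0) (c n))"
  proof (rule sum.cong[OF refl])
    fix c
    have "(\<Prod>m<n. w (c m) (c (Suc m mod Suc n))) = (\<Prod>m<n. w (c m) (c (Suc m)))"
      by (rule prod.cong) auto
    thus "(\<Prod>m<Suc n. w (c m) (c (Suc m mod Suc n))) = (\<Prod>m<n. w (c m) (c (Suc m))) * (\<lambda>a b. w b a) (c 0) (c n)"
      by simp
  qed
  also have "\<dots> = (\<Sum>a\<in>K. \<Sum>b\<in>K. w b a * PP K w n a b)" by (rule path_sum[OF K])
  also have "\<dots> = (\<Sum>a\<in>K. PP K w (Suc n) a a)" by (simp add: mult.commute)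
  finally show ?thesis .
qed

context
  fixes K :: "nat set" and w :: "nat \<Rightarrow> nat \<Rightarrow> real" and v :: "nat \<Rightarrow> real" and lam :: real
  assumes K: "finite K" "K \<noteq> {}"
    and wpos: "\<And>a b. a \<in> K \<Longrightarrow> b \<in> K \<Longrightarrow> w a b > 0"
    and vpos: "\<And>a. a \<in> K \<Longrightarrow> v a > 0"
    and eig: "\<And>a. a \<in> K \<Longrightarrow> (\<Sum>b\<in>K. w a b * v b) = lam * v a"
begin

lemma PP_nonneg: "a \<in> K \<Longrightarrow> b \<in> K \<Longrightarrow> PP K w n a b \<ge> 0"
proof (induction n arbitrary: b)
  case 0 thus ?case by simp
next
  case (Suc n)
  have "\<forall>d\<in>K. PP K w n a d * w d b \<ge> 0"
  proof
    fix d assume d: "d \<in> K"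
    have "PP K w n a d \<ge> 0" using Suc.IH[OF Suc.prems(1) d] .
    moreover have "w d b \<ge> 0" using wpos[OF d Suc.prems(2)] by simp
    ultimately show "PP K w n a d * w d b \<ge> 0" by simp
  qed
  thus ?case by (simp add: sum_nonneg)
qed

lemma PP_eig: "a \<in> K \<Longrightarrow> (\<Sum>b\<in>K. PP K w n a b * v b) = lam ^ n * v a"
proof (induction n)
  case 0
  have "(\<Sum>b\<in>K. PP K w 0 a b * v b) = (\<Sum>b\<in>K. if b = a then v a else 0)"
    by (rule sum.cong) auto
  also have "\<dots> = v a" using K 0 by simp
  finally show ?case by simp
next
  case (Suc n)
  have "(\<Sum>b\<in>K. PP K w (Suc n) a b * v b) = (\<Sum>d\<in>K. PP K w n a d * (\<Sum>b\<in>K. w d b * v b))"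
    by (simp add: sum_distrib_left sum_distrib_right mult_ac) (rule sum.swap)
  also have "\<dots> = (\<Sum>d\<in>K. PP K w n a d * (lam * v d))" using eig by simp
  also have "\<dots> = lam * (\<Sum>d\<in>K. PP K w n a d * v d)" by (simp add: sum_distrib_left mult_ac)
  also have "\<dots> = lam ^ Suc n * v a" using Suc by simp
  finally show ?case .
qed

lemma lam_pos: "lam > 0"
proof -
  obtain a where a: "a \<in> K" using K by blast
  have "(\<Sum>b\<in>K. w a b * v b) > 0" using K a wpos vpos by (intro sum_pos) auto
  hence "lam * v a > 0" using eig[OF a] by simp
  thus ?thesis using vpos[OF a] by (simp add: zero_less_mult_iff)
qed

lemma PP_upper: "a \<in> K \<Longrightarrow> PP K w n a a \<le> lam ^ n"
proof -
  assume a: "a \<in> K"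
  have "PP K w n a a * v a \<le> (\<Sum>b\<in>K. PP K w n a b * v b)"
    by (rule member_le_sum) (use a K PP_nonneg[OF a] vpos in \<open>auto intro!: mult_nonneg_nonneg simp: less_imp_le\<close>)
  also have "\<dots> = lam ^ n * v a" using PP_eig[OF a] .
  finally show ?thesis using vpos[OF a] by simp
qed

lemma PP_lower: "\<exists>c>0. \<forall>a\<in>K. \<forall>n. PP K w (Suc n) a a \<ge> c * lam ^ n"
proof -
  define wm where "wm = Min ((\<lambda>(a,b). w a b) ` (K \<times> K))"
  define vM where "vM = Max (v ` K)"
  define vm where "vm = Min (v ` K)"
  have fW: "finite ((\<lambda>(a,b). w a b) ` (K \<times> K))" "(\<lambda>(a,b). w a b) ` (K \<times> K) \<noteq> {}"
    using K by auto
  have fV: "finite (v ` K)" "v ` K \<noteq> {}" using K by auto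
  have wm: "wm > 0" "\<And>a b. a \<in> K \<Longrightarrow> b \<in> K \<Longrightarrow> wm \<le> w a b"
  proof -
    show "wm > 0" unfolding wm_def Min_gr_iff[OF fW] using wpos by auto
    fix a b assume "a \<in> K" "b \<in> K"
    hence "w a b \<in> (\<lambda>(a,b). w a b) ` (K \<times> K)" by force
    thus "wm \<le> w a b" unfolding wm_def by (rule Min_le[OF fW(1)])
  qed
  have vM: "vM > 0" "\<And>a. a \<in> K \<Longrightarrow> v a \<le> vM"
  proof -
    fix a assume "a \<in> K"
    thus "v a \<le> vM" unfolding vM_def by (intro Max_ge[OF fV(1)]) simp
  next
    obtain a where a: "a \<in> K" using K by blast
    have "v a \<le> vM" unfolding vM_def by (intro Max_ge[OF fV(1)]) (simp add: a)
    thus "vM > 0" using vpos[OF a] by linarith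
  qed
  have vm: "vm > 0" "\<And>a. a \<in> K \<Longrightarrow> vm \<le> v a"
  proof -
    show "vm > 0" unfolding vm_def Min_gr_iff[OF fV] using vpos by auto
    fix a assume "a \<in> K"
    thus "vm \<le> v a" unfolding vm_def by (intro Min_le[OF fV(1)]) simp
  qed
  show ?thesis
  proof (intro exI[of _ "wm * vm / vM"] conjI ballI allI)
    show "wm * vm / vM > 0" using wm vm vM by simp
    fix a n assume a: "a \<in> K"
    have "wm * vm / vM * lam ^ n \<le> wm / vM * (lam ^ n * v a)"
      using vm(2)[OF a] wm(1) vM(1) lam_pos by (simp add: field_simps)
    also have "\<dots> = wm / vM * (\<Sum>d\<in>K. PP K w n a d * v d)" using PP_eig[OF a] by simp
    also have "\<dots> \<le> (\<Sum>d\<in>K. PP K w n a d * wm)"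
      unfolding sum_distrib_left
    proof (rule sum_mono)
      fix d assume d: "d \<in> K"
      have "PP K w n a d * v d \<le> PP K w n a d * vM"
        using PP_nonneg[OF a d] vM(2)[OF d] by (simp add: mult_left_mono)
      thus "wm / vM * (PP K w n a d * v d) \<le> PP K w n a d * wm"
        using wm(1) vM(1) by (simp add: field_simps)
    qed
    also have "\<dots> \<le> (\<Sum>d\<in>K. PP K w n a d * w d a)"
      by (rule sum_mono) (use PP_nonneg[OF a] wm(2)[OF _ a] in \<open>auto intro: mult_left_mono\<close>)
    also have "\<dots> = PP K w (Suc n) a a" by simp
    finally show "wm * vm / vM * lam ^ n \<le> PP K w (Suc n) a a" .
  qed
qed

lemma Z_bounds:
  "\<exists>c C. c > 0 \<and> C > 0 \<and> (\<forall>n. c * lam ^ n \<le> (\<Sum>a\<in>K. PP K w (Suc n) a a)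
      \<and> (\<Sum>a\<in>K. PP K w (Suc n) a a) \<le> C * lam ^ n)"
proof -
  obtain c where c: "c > 0" "\<forall>a\<in>K. \<forall>n. PP K w (Suc n) a a \<ge> c * lam ^ n" using PP_lower by blast
  obtain a0 where a0: "a0 \<in> K" using K by blast
  have C: "real (card K) * lam > 0" using K lam_pos by (simp add: card_gt_0_iff)
  have lo: "c * lam ^ n \<le> (\<Sum>a\<in>K. PP K w (Suc n) a a)" for n
  proof -
    have "c * lam ^ n \<le> PP K w (Suc n) a0 a0" using c a0 by blast
    also have "\<dots> \<le> (\<Sum>a\<in>K. PP K w (Suc n) a a)"
      by (rule member_le_sum) (auto simp del: PP.simps intro!: PP_nonneg simp: a0 K)
    finally show ?thesis .
  qed
  have up: "(\<Sum>a\<in>K. PP K w (Suc n) a a) \<le> real (card K) * lam * lam ^ n" for n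
  proof -
    have "(\<Sum>a\<in>K. PP K w (Suc n) a a) \<le> (\<Sum>a\<in>K. lam ^ Suc n)"
      by (rule sum_mono) (rule PP_upper)
    also have "\<dots> = real (card K) * lam * lam ^ n" by simp
    finally show ?thesis .
  qed
  show ?thesis using c(1) C lo up by blast
qed

end

lemma log_limit:
  fixes Z :: "nat \<Rightarrow> real"
  assumes c: "c > 0" and C: "C > 0" and lam: "lam > 0"
    and b: "\<And>n. c * lam ^ n \<le> Z (Suc n) \<and> Z (Suc n) \<le> C * lam ^ n"
  shows "(\<lambda>M. ln (Z M) / real M) \<longlonglongrightarrow> ln lam"
proof (rule tendsto_sandwich)
  show "eventually (\<lambda>M. ln lam + (ln c - ln lam) / real M \<le> ln (Z M) / real M) sequentially"
  proof (rule eventually_sequentiallyI[of 1])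
    fix M :: nat assume M: "1 \<le> M"
    then obtain n where n: "M = Suc n" by (cases M) auto
    have l: "c * lam ^ n \<le> Z M" using b[of n] n by simp
    have p: "c * lam ^ n > 0" using c lam by simp
    have "ln (c * lam ^ n) \<le> ln (Z M)" using l p by simp
    hence "ln c + n * ln lam \<le> ln (Z M)" using c lam by (simp add: ln_mult ln_realpow)
    hence "(ln c + n * ln lam) / real M \<le> ln (Z M) / real M" by (simp add: divide_right_mono)
    moreover have "ln lam + (ln c - ln lam) / real M = (ln c + n * ln lam) / real M"
      using n by (simp add: field_simps)
    ultimately show "ln lam + (ln c - ln lam) / real M \<le> ln (Z M) / real M" by simp
  qed
  show "eventually (\<lambda>M. ln (Z M) / real M \<le> ln lam + (ln C - ln lam) / real M) sequentially"
  proof (rule eventually_sequentiallyI[of 1])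
    fix M :: nat assume M: "1 \<le> M"
    then obtain n where n: "M = Suc n" by (cases M) auto
    have l: "c * lam ^ n \<le> Z M" "Z M \<le> C * lam ^ n" using b[of n] n by simp_all
    have p: "c * lam ^ n > 0" using c lam by simp
    have "ln (Z M) \<le> ln (C * lam ^ n)" using l p by simp
    hence "ln (Z M) \<le> ln C + n * ln lam" using C lam by (simp add: ln_mult ln_realpow)
    hence "ln (Z M) / real M \<le> (ln C + n * ln lam) / real M" by (simp add: divide_right_mono)
    moreover have "ln lam + (ln C - ln lam) / real M = (ln C + n * ln lam) / real M"
      using n by (simp add: field_simps)
    ultimately show "ln (Z M) / real M \<le> ln lam + (ln C - ln lam) / real M" by simp
  qed
  show "(\<lambda>M. ln lam + (ln c - ln lam) / real M) \<longlonglongrightarrow> ln lam"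
    using tendsto_add[OF tendsto_const lim_const_over_n[of "ln c - ln lam"]] by simp
  show "(\<lambda>M. ln lam + (ln C - ln lam) / real M) \<longlonglongrightarrow> ln lam"
    using tendsto_add[OF tendsto_const lim_const_over_n[of "ln C - ln lam"]] by simp
qed




definition K16 :: "nat set" where "K16 = {1,2,3,4,5,6,7,8,9,10,11,12,13,14,15,16}"
definition K7 :: "nat set" where "K7 = {1,2,3,5,6,9,11}"

definition code :: "(nat \<Rightarrow> real) \<Rightarrow> nat" where
  "code a = 1 + (if a 0 = -1 then 1 else 0) + (if a 1 = -1 then 2 else 0)
     + (if a 2 = -1 then 4 else 0) + (if a 3 = -1 then 8 else 0)"

lemma lt4: "(i::nat) < 4 \<longleftrightarrow> i = 0 \<or> i = 1 \<or> i = 2 \<or> i = 3" by presburger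

lemma ex4: "(\<exists>r<(4::nat). P r) \<longleftrightarrow> P 0 \<or> P 1 \<or> P 2 \<or> P 3"
  unfolding lt4 by blast

lemma pm1: "x \<in> {-1, 1::real} \<longleftrightarrow> x = -1 \<or> x = 1" by auto

lemma code_spin:
  assumes a: "\<forall>i<4. a i \<in> {-1, 1}"
  shows "code a \<in> K16" "\<forall>i<4. state_spin (code a) i = a i"
proof -
  have a0: "a 0 = -1 \<or> a 0 = 1" and a1: "a 1 = -1 \<or> a 1 = 1"
    and a2: "a 2 = -1 \<or> a 2 = 1" and a3: "a 3 = -1 \<or> a 3 = 1" using a by auto
  show "code a \<in> K16"
    using a0 a1 a2 a3 by (elim disjE) (simp_all add: code_def K16_def)
  show "\<forall>i<4. state_spin (code a) i = a i"
    unfolding lt4 using a0 a1 a2 a3 by (elim disjE) (simp_all add: code_def state_spin_def)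
qed

lemma code_cong: "(\<forall>i<4. a i = b i) \<Longrightarrow> code a = code b"
  unfolding lt4 by (simp add: code_def)

lemma spin_code: "k \<in> K16 \<Longrightarrow> code (state_spin k) = k"
  unfolding K16_def by (elim insertE emptyE) (simp_all add: code_def state_spin_def)

lemma spin_pm: "state_spin k i \<in> {-1, 1}"
  by (simp add: state_spin_def)

lemma nonperc_code:
  assumes a: "\<forall>i<4. a i \<in> {-1, 1}"
  shows "(\<not> (\<exists>r<4. a r = -1 \<and> a ((r+1) mod 4) = -1)) \<longleftrightarrow> code a \<in> K7"
proof -
  have a0: "a 0 = -1 \<or> a 0 = 1" and a1: "a 1 = -1 \<or> a 1 = 1"
    and a2: "a 2 = -1 \<or> a 2 = 1" and a3: "a 3 = -1 \<or> a 3 = 1" using a by auto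
  have e: "(\<exists>r<4. a r = -1 \<and> a ((r+1) mod 4) = -1) \<longleftrightarrow>
     (a 0 = -1 \<and> a 1 = -1) \<or> (a 1 = -1 \<and> a 2 = -1) \<or> (a 2 = -1 \<and> a 3 = -1) \<or> (a 3 = -1 \<and> a 0 = -1)"
  proof -
    have m: "(0+1) mod 4 = (1::nat)" "(1+1) mod 4 = (2::nat)" "(2+1) mod 4 = (3::nat)" "(3+1) mod 4 = (0::nat)"
      by simp_all
    show ?thesis unfolding ex4 m by blast
  qed
  show ?thesis unfolding e
    using a0 a1 a2 a3 by (elim disjE) (simp_all add: code_def K7_def)
qed

definition Psi :: "nat \<Rightarrow> (nat \<Rightarrow> nat) \<Rightarrow> (nat \<times> nat \<Rightarrow> real)" where
  "Psi M c = (\<lambda>p. if p \<in> {..<4} \<times> {..<M} then state_spin (c (snd p)) (fst p) else undefined)"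

definition Phi :: "nat \<Rightarrow> (nat \<times> nat \<Rightarrow> real) \<Rightarrow> (nat \<Rightarrow> nat)" where
  "Phi M \<sigma> = (\<lambda>m. if m < M then code (\<lambda>i. \<sigma> (i, m)) else undefined)"

lemma configs_reindex:
  assumes K: "K \<subseteq> K16"
  shows "(\<Sum>\<sigma>\<in>{\<sigma>\<in>configs M. \<forall>m<M. code (\<lambda>i. \<sigma> (i,m)) \<in> K}. F \<sigma>) = (\<Sum>c\<in>{..<M} \<rightarrow>\<^sub>E K. F (Psi M c))"
proof (rule sum.reindex_bij_witness[of _ "Psi M" "Phi M"])
  fix \<sigma> assume s: "\<sigma> \<in> {\<sigma>\<in>configs M. \<forall>m<M. code (\<lambda>i. \<sigma> (i,m)) \<in> K}"
  hence sc: "\<sigma> \<in> ({..<4} \<times> {..<M}) \<rightarrow>\<^sub>E {-1, 1}" and sK: "\<forall>m<M. code (\<lambda>i. \<sigma> (i,m)) \<in> K"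
    by (auto simp: configs_def)
  show ps: "Psi M (Phi M \<sigma>) = \<sigma>"
  proof
    fix p :: "nat \<times> nat"
    obtain i m where p: "p = (i,m)" by (cases p)
    show "Psi M (Phi M \<sigma>) p = \<sigma> p"
    proof (cases "i < 4 \<and> m < M")
      case True
      have "\<forall>i<4. \<sigma> (i, m) \<in> {-1, 1}" using sc True by (auto simp: PiE_iff)
      hence "state_spin (code (\<lambda>i. \<sigma> (i, m))) i = \<sigma> (i, m)"
        using code_spin(2)[of "\<lambda>i. \<sigma> (i, m)"] True by simp
      thus ?thesis using True by (simp add: Psi_def Phi_def p)
    next
      case False
      hence "p \<notin> {..<4} \<times> {..<M}" by (auto simp: p)
      thus ?thesis using PiE_arb[OF sc] by (simp add: Psi_def)
    qed
  qed
  show "Phi M \<sigma> \<in> {..<M} \<rightarrow>\<^sub>E K"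
    by (rule PiE_I) (use sK in \<open>auto simp: Phi_def\<close>)
  show "F (Psi M (Phi M \<sigma>)) = F \<sigma>" using ps by simp
next
  fix c assume c: "c \<in> {..<M} \<rightarrow>\<^sub>E K"
  have cK: "c m \<in> K16" if "m < M" for m using c K that by (auto simp: PiE_iff)
  have codePsi: "code (\<lambda>i. Psi M c (i, m)) = c m" if m: "m < M" for m
  proof -
    have "code (\<lambda>i. Psi M c (i, m)) = code (state_spin (c m))"
      by (rule code_cong) (simp add: Psi_def m)
    also have "\<dots> = c m" by (rule spin_code[OF cK[OF m]])
    finally show ?thesis .
  qed
  show "Phi M (Psi M c) = c"
  proof
    fix m show "Phi M (Psi M c) m = c m"
      using codePsi PiE_arb[OF c, of m] by (cases "m < M") (auto simp: Phi_def)
  qed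
  have "Psi M c \<in> configs M"
    unfolding configs_def by (rule PiE_I) (auto simp: Psi_def state_spin_def)
  moreover have "\<forall>m<M. code (\<lambda>i. Psi M c (i,m)) \<in> K"
    using codePsi c by (auto simp: PiE_iff)
  ultimately show "Psi M c \<in> {\<sigma>\<in>configs M. \<forall>m<M. code (\<lambda>i. \<sigma> (i,m)) \<in> K}" by simp
qed

lemma configs_all: "configs M = {\<sigma>\<in>configs M. \<forall>m<M. code (\<lambda>i. \<sigma> (i,m)) \<in> K16}"
proof -
  have "code (\<lambda>i. \<sigma> (i,m)) \<in> K16" if "\<sigma> \<in> configs M" "m < M" for \<sigma> m
    using that by (intro code_spin(1)) (auto simp: configs_def PiE_iff)
  thus ?thesis by auto
qed

lemma nonperc_all: "nonperc_configs M = {\<sigma>\<in>configs M. \<forall>m<M. code (\<lambda>i. \<sigma> (i,m)) \<in> K7}"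
proof -
  have "(\<not> (\<exists>r<4. \<sigma> (r,m) = -1 \<and> \<sigma> ((r+1) mod 4, m) = -1)) \<longleftrightarrow> code (\<lambda>i. \<sigma> (i,m)) \<in> K7"
    if "\<sigma> \<in> configs M" "m < M" for \<sigma> m
  proof -
    have "\<forall>i<4. \<sigma> (i,m) \<in> {-1,1}" using that by (auto simp: configs_def PiE_iff)
    from nonperc_code[OF this] show ?thesis by simp
  qed
  thus ?thesis unfolding nonperc_configs_def by blast
qed

lemma layer_Psi: "M > 0 \<Longrightarrow> layer M (Psi M c) m = state_spin (c (m mod M))"
  by (rule ext) (simp add: layer_def Psi_def state_spin_def)

lemma weight_Psi:
  assumes M: "M > 0"
  shows "exp (- hamiltonian J1 J2 J3 M (Psi M c) / (kB * T))
       = (\<Prod>m<M. theta kB J1 J2 J3 T (c m) (c (Suc m mod M)))"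
proof -
  have "hamiltonian J1 J2 J3 M (Psi M c)
      = (\<Sum>m<M. cube_energy J1 J2 J3 (state_spin (c m)) (state_spin (c (Suc m mod M))))"
    unfolding hamiltonian_def layer_Psi[OF M] by (intro sum.cong) auto
  hence "- hamiltonian J1 J2 J3 M (Psi M c) / (kB * T)
      = (\<Sum>m<M. - cube_energy J1 J2 J3 (state_spin (c m)) (state_spin (c (Suc m mod M))) / (kB * T))"
    by (simp add: sum_divide_distrib sum_negf)
  thus ?thesis by (simp add: exp_sum theta_def)
qed




declare One_nat_def[simp del]

definition orb :: "nat \<Rightarrow> nat" where
  "orb l = (if l = 1 \<or> l = 16 then 0 else if l \<in> {2,3,5,8,9,12,14,15} then 1 else if l \<in> {4,7,10,13} then 2 else 3)"

definition orb' :: "nat \<Rightarrow> nat" where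
  "orb' l = (if l = 1 then 0 else if l \<in> {2,3,5,9} then 1 else 2)"

definition tauE :: "real \<Rightarrow> real \<Rightarrow> real \<Rightarrow> real \<Rightarrow> real \<Rightarrow> nat \<Rightarrow> nat \<Rightarrow> real" where
  "tauE kB J1 J2 J3 T i j = (\<Sum>l\<in>groups_tau ! j. theta kB J1 J2 J3 T (rows_tau ! i) l)"

definition tau'E :: "real \<Rightarrow> real \<Rightarrow> real \<Rightarrow> real \<Rightarrow> real \<Rightarrow> nat \<Rightarrow> nat \<Rightarrow> real" where
  "tau'E kB J1 J2 J3 T i j = (\<Sum>l\<in>groups_tau' ! j. theta kB J1 J2 J3 T (rows_tau' ! i) l)"

lemma sumK16: "(\<Sum>l\<in>K16. f l) = f 1 + f 2 + f 3 + f 4 + f 5 + f 6 + f 7 + f 8 + f 9 + f 10 + f 11 + f 12 + f 13 + f 14 + f 15 + (f 16 :: real)"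
  unfolding K16_def by simp

lemma sumK7: "(\<Sum>l\<in>K7. f l) = f 1 + f 2 + f 3 + f 5 + f 6 + f 9 + (f 11 :: real)"
  unfolding K7_def by simp

lemma sum_lt4: "(\<Sum>j<(4::nat). f j) = f 0 + f 1 + f 2 + (f 3 :: real)"
  by (simp add: eval_nat_numeral One_nat_def)

lemma sum_lt3: "(\<Sum>j<(3::nat). f j) = f 0 + f 1 + (f 2 :: real)"
  by (simp add: eval_nat_numeral One_nat_def)

lemma group16: "(\<Sum>l\<in>K16. f l * x (orb l)) = (f 1 + f 16) * x 0
   + (f 2 + f 3 + f 5 + f 8 + f 9 + f 12 + f 14 + f 15) * x 1
   + (f 4 + f 7 + f 10 + f 13) * x 2 + (f 6 + f 11) * (x 3 :: real)"
  unfolding sumK16 by (simp add: orb_def algebra_simps)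

lemma group7: "(\<Sum>l\<in>K7. f l * x (orb' l)) = f 1 * x 0 + (f 2 + f 3 + f 5 + f 9) * x 1 + (f 6 + f 11) * (x 2 :: real)"
  unfolding sumK7 by (simp add: orb'_def algebra_simps)

lemma tauE_vals:
  "tauE kB J1 J2 J3 T i 0 = theta kB J1 J2 J3 T (rows_tau ! i) 1 + theta kB J1 J2 J3 T (rows_tau ! i) 16"
  "tauE kB J1 J2 J3 T i 1 = theta kB J1 J2 J3 T (rows_tau ! i) 2 + theta kB J1 J2 J3 T (rows_tau ! i) 3
     + theta kB J1 J2 J3 T (rows_tau ! i) 5 + theta kB J1 J2 J3 T (rows_tau ! i) 8
     + theta kB J1 J2 J3 T (rows_tau ! i) 9 + theta kB J1 J2 J3 T (rows_tau ! i) 12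
     + theta kB J1 J2 J3 T (rows_tau ! i) 14 + theta kB J1 J2 J3 T (rows_tau ! i) 15"
  "tauE kB J1 J2 J3 T i 2 = theta kB J1 J2 J3 T (rows_tau ! i) 4 + theta kB J1 J2 J3 T (rows_tau ! i) 7
     + theta kB J1 J2 J3 T (rows_tau ! i) 10 + theta kB J1 J2 J3 T (rows_tau ! i) 13"
  "tauE kB J1 J2 J3 T i 3 = theta kB J1 J2 J3 T (rows_tau ! i) 6 + theta kB J1 J2 J3 T (rows_tau ! i) 11"
  by (simp_all add: tauE_def groups_tau_def add.assoc)

lemma tau'E_vals:
  "tau'E kB J1 J2 J3 T i 0 = theta kB J1 J2 J3 T (rows_tau' ! i) 1"
  "tau'E kB J1 J2 J3 T i 1 = theta kB J1 J2 J3 T (rows_tau' ! i) 2 + theta kB J1 J2 J3 T (rows_tau' ! i) 3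
     + theta kB J1 J2 J3 T (rows_tau' ! i) 5 + theta kB J1 J2 J3 T (rows_tau' ! i) 9"
  "tau'E kB J1 J2 J3 T i 2 = theta kB J1 J2 J3 T (rows_tau' ! i) 6 + theta kB J1 J2 J3 T (rows_tau' ! i) 11"
  by (simp_all add: tau'E_def groups_tau'_def add.assoc)

lemma rows_vals: "rows_tau ! 0 = 1" "rows_tau ! 1 = 2" "rows_tau ! 2 = 4" "rows_tau ! 3 = 6"
  by (simp_all add: rows_tau_def)

lemma rows'_vals: "rows_tau' ! 0 = 1" "rows_tau' ! 1 = 2" "rows_tau' ! 2 = 6"
  by (simp_all add: rows_tau'_def)

lemma lift_tau_1: "(\<Sum>l\<in>K16. theta kB J1 J2 J3 T 1 l * x (orb l)) = (\<Sum>j<4. tauE kB J1 J2 J3 T (orb 1) j * x j)"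
proof -
  have o: "orb 1 = 0" by (simp add: orb_def)

  show ?thesis unfolding group16 sum_lt4 o tauE_vals rows_vals  ..
qed

lemma lift_tau_2: "(\<Sum>l\<in>K16. theta kB J1 J2 J3 T 2 l * x (orb l)) = (\<Sum>j<4. tauE kB J1 J2 J3 T (orb 2) j * x j)"
proof -
  have o: "orb 2 = 1" by (simp add: orb_def)

  show ?thesis unfolding group16 sum_lt4 o tauE_vals rows_vals  ..
qed

lemma lift_tau_3: "(\<Sum>l\<in>K16. theta kB J1 J2 J3 T 3 l * x (orb l)) = (\<Sum>j<4. tauE kB J1 J2 J3 T (orb 3) j * x j)"
proof -
  have o: "orb 3 = 1" by (simp add: orb_def)
    have s0: "theta kB J1 J2 J3 T 3 1 + theta kB J1 J2 J3 T 3 16 = theta kB J1 J2 J3 T 2 1 + theta kB J1 J2 J3 T 2 16" by (simp add: add_ac)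
    have s1: "theta kB J1 J2 J3 T 3 2 + theta kB J1 J2 J3 T 3 3 + theta kB J1 J2 J3 T 3 5 + theta kB J1 J2 J3 T 3 8 + theta kB J1 J2 J3 T 3 9 + theta kB J1 J2 J3 T 3 12 + theta kB J1 J2 J3 T 3 14 + theta kB J1 J2 J3 T 3 15 = theta kB J1 J2 J3 T 2 2 + theta kB J1 J2 J3 T 2 3 + theta kB J1 J2 J3 T 2 5 + theta kB J1 J2 J3 T 2 8 + theta kB J1 J2 J3 T 2 9 + theta kB J1 J2 J3 T 2 12 + theta kB J1 J2 J3 T 2 14 + theta kB J1 J2 J3 T 2 15" by (simp add: add_ac)
    have s2: "theta kB J1 J2 J3 T 3 4 + theta kB J1 J2 J3 T 3 7 + theta kB J1 J2 J3 T 3 10 + theta kB J1 J2 J3 T 3 13 = theta kB J1 J2 J3 T 2 4 + theta kB J1 J2 J3 T 2 7 + theta kB J1 J2 J3 T 2 10 + theta kB J1 J2 J3 T 2 13" by (simp add: add_ac)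
    have s3: "theta kB J1 J2 J3 T 3 6 + theta kB J1 J2 J3 T 3 11 = theta kB J1 J2 J3 T 2 6 + theta kB J1 J2 J3 T 2 11" by (simp add: add_ac)
  show ?thesis unfolding group16 sum_lt4 o tauE_vals rows_vals s0 s1 s2 s3 ..
qed

lemma lift_tau_4: "(\<Sum>l\<in>K16. theta kB J1 J2 J3 T 4 l * x (orb l)) = (\<Sum>j<4. tauE kB J1 J2 J3 T (orb 4) j * x j)"
proof -
  have o: "orb 4 = 2" by (simp add: orb_def)

  show ?thesis unfolding group16 sum_lt4 o tauE_vals rows_vals  ..
qed

lemma lift_tau_5: "(\<Sum>l\<in>K16. theta kB J1 J2 J3 T 5 l * x (orb l)) = (\<Sum>j<4. tauE kB J1 J2 J3 T (orb 5) j * x j)"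
proof -
  have o: "orb 5 = 1" by (simp add: orb_def)
    have s0: "theta kB J1 J2 J3 T 5 1 + theta kB J1 J2 J3 T 5 16 = theta kB J1 J2 J3 T 2 1 + theta kB J1 J2 J3 T 2 16" by (simp add: add_ac)
    have s1: "theta kB J1 J2 J3 T 5 2 + theta kB J1 J2 J3 T 5 3 + theta kB J1 J2 J3 T 5 5 + theta kB J1 J2 J3 T 5 8 + theta kB J1 J2 J3 T 5 9 + theta kB J1 J2 J3 T 5 12 + theta kB J1 J2 J3 T 5 14 + theta kB J1 J2 J3 T 5 15 = theta kB J1 J2 J3 T 2 2 + theta kB J1 J2 J3 T 2 3 + theta kB J1 J2 J3 T 2 5 + theta kB J1 J2 J3 T 2 8 + theta kB J1 J2 J3 T 2 9 + theta kB J1 J2 J3 T 2 12 + theta kB J1 J2 J3 T 2 14 + theta kB J1 J2 J3 T 2 15" by (simp add: add_ac)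
    have s2: "theta kB J1 J2 J3 T 5 4 + theta kB J1 J2 J3 T 5 7 + theta kB J1 J2 J3 T 5 10 + theta kB J1 J2 J3 T 5 13 = theta kB J1 J2 J3 T 2 4 + theta kB J1 J2 J3 T 2 7 + theta kB J1 J2 J3 T 2 10 + theta kB J1 J2 J3 T 2 13" by (simp add: add_ac)
    have s3: "theta kB J1 J2 J3 T 5 6 + theta kB J1 J2 J3 T 5 11 = theta kB J1 J2 J3 T 2 6 + theta kB J1 J2 J3 T 2 11" by (simp add: add_ac)
  show ?thesis unfolding group16 sum_lt4 o tauE_vals rows_vals s0 s1 s2 s3 ..
qed

lemma lift_tau_6: "(\<Sum>l\<in>K16. theta kB J1 J2 J3 T 6 l * x (orb l)) = (\<Sum>j<4. tauE kB J1 J2 J3 T (orb 6) j * x j)"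
proof -
  have o: "orb 6 = 3" by (simp add: orb_def)

  show ?thesis unfolding group16 sum_lt4 o tauE_vals rows_vals  ..
qed

lemma lift_tau_7: "(\<Sum>l\<in>K16. theta kB J1 J2 J3 T 7 l * x (orb l)) = (\<Sum>j<4. tauE kB J1 J2 J3 T (orb 7) j * x j)"
proof -
  have o: "orb 7 = 2" by (simp add: orb_def)
    have s0: "theta kB J1 J2 J3 T 7 1 + theta kB J1 J2 J3 T 7 16 = theta kB J1 J2 J3 T 4 1 + theta kB J1 J2 J3 T 4 16" by (simp add: add_ac)
    have s1: "theta kB J1 J2 J3 T 7 2 + theta kB J1 J2 J3 T 7 3 + theta kB J1 J2 J3 T 7 5 + theta kB J1 J2 J3 T 7 8 + theta kB J1 J2 J3 T 7 9 + theta kB J1 J2 J3 T 7 12 + theta kB J1 J2 J3 T 7 14 + theta kB J1 J2 J3 T 7 15 = theta kB J1 J2 J3 T 4 2 + theta kB J1 J2 J3 T 4 3 + theta kB J1 J2 J3 T 4 5 + theta kB J1 J2 J3 T 4 8 + theta kB J1 J2 J3 T 4 9 + theta kB J1 J2 J3 T 4 12 + theta kB J1 J2 J3 T 4 14 + theta kB J1 J2 J3 T 4 15" by (simp add: add_ac)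
    have s2: "theta kB J1 J2 J3 T 7 4 + theta kB J1 J2 J3 T 7 7 + theta kB J1 J2 J3 T 7 10 + theta kB J1 J2 J3 T 7 13 = theta kB J1 J2 J3 T 4 4 + theta kB J1 J2 J3 T 4 7 + theta kB J1 J2 J3 T 4 10 + theta kB J1 J2 J3 T 4 13" by (simp add: add_ac)
    have s3: "theta kB J1 J2 J3 T 7 6 + theta kB J1 J2 J3 T 7 11 = theta kB J1 J2 J3 T 4 6 + theta kB J1 J2 J3 T 4 11" by (simp add: add_ac)
  show ?thesis unfolding group16 sum_lt4 o tauE_vals rows_vals s0 s1 s2 s3 ..
qed

lemma lift_tau_8: "(\<Sum>l\<in>K16. theta kB J1 J2 J3 T 8 l * x (orb l)) = (\<Sum>j<4. tauE kB J1 J2 J3 T (orb 8) j * x j)"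
proof -
  have o: "orb 8 = 1" by (simp add: orb_def)
    have s0: "theta kB J1 J2 J3 T 8 1 + theta kB J1 J2 J3 T 8 16 = theta kB J1 J2 J3 T 2 1 + theta kB J1 J2 J3 T 2 16" by (simp add: add_ac)
    have s1: "theta kB J1 J2 J3 T 8 2 + theta kB J1 J2 J3 T 8 3 + theta kB J1 J2 J3 T 8 5 + theta kB J1 J2 J3 T 8 8 + theta kB J1 J2 J3 T 8 9 + theta kB J1 J2 J3 T 8 12 + theta kB J1 J2 J3 T 8 14 + theta kB J1 J2 J3 T 8 15 = theta kB J1 J2 J3 T 2 2 + theta kB J1 J2 J3 T 2 3 + theta kB J1 J2 J3 T 2 5 + theta kB J1 J2 J3 T 2 8 + theta kB J1 J2 J3 T 2 9 + theta kB J1 J2 J3 T 2 12 + theta kB J1 J2 J3 T 2 14 + theta kB J1 J2 J3 T 2 15" by (simp add: add_ac)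
    have s2: "theta kB J1 J2 J3 T 8 4 + theta kB J1 J2 J3 T 8 7 + theta kB J1 J2 J3 T 8 10 + theta kB J1 J2 J3 T 8 13 = theta kB J1 J2 J3 T 2 4 + theta kB J1 J2 J3 T 2 7 + theta kB J1 J2 J3 T 2 10 + theta kB J1 J2 J3 T 2 13" by (simp add: add_ac)
    have s3: "theta kB J1 J2 J3 T 8 6 + theta kB J1 J2 J3 T 8 11 = theta kB J1 J2 J3 T 2 6 + theta kB J1 J2 J3 T 2 11" by (simp add: add_ac)
  show ?thesis unfolding group16 sum_lt4 o tauE_vals rows_vals s0 s1 s2 s3 ..
qed

lemma lift_tau_9: "(\<Sum>l\<in>K16. theta kB J1 J2 J3 T 9 l * x (orb l)) = (\<Sum>j<4. tauE kB J1 J2 J3 T (orb 9) j * x j)"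
proof -
  have o: "orb 9 = 1" by (simp add: orb_def)
    have s0: "theta kB J1 J2 J3 T 9 1 + theta kB J1 J2 J3 T 9 16 = theta kB J1 J2 J3 T 2 1 + theta kB J1 J2 J3 T 2 16" by (simp add: add_ac)
    have s1: "theta kB J1 J2 J3 T 9 2 + theta kB J1 J2 J3 T 9 3 + theta kB J1 J2 J3 T 9 5 + theta kB J1 J2 J3 T 9 8 + theta kB J1 J2 J3 T 9 9 + theta kB J1 J2 J3 T 9 12 + theta kB J1 J2 J3 T 9 14 + theta kB J1 J2 J3 T 9 15 = theta kB J1 J2 J3 T 2 2 + theta kB J1 J2 J3 T 2 3 + theta kB J1 J2 J3 T 2 5 + theta kB J1 J2 J3 T 2 8 + theta kB J1 J2 J3 T 2 9 + theta kB J1 J2 J3 T 2 12 + theta kB J1 J2 J3 T 2 14 + theta kB J1 J2 J3 T 2 15" by (simp add: add_ac)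
    have s2: "theta kB J1 J2 J3 T 9 4 + theta kB J1 J2 J3 T 9 7 + theta kB J1 J2 J3 T 9 10 + theta kB J1 J2 J3 T 9 13 = theta kB J1 J2 J3 T 2 4 + theta kB J1 J2 J3 T 2 7 + theta kB J1 J2 J3 T 2 10 + theta kB J1 J2 J3 T 2 13" by (simp add: add_ac)
    have s3: "theta kB J1 J2 J3 T 9 6 + theta kB J1 J2 J3 T 9 11 = theta kB J1 J2 J3 T 2 6 + theta kB J1 J2 J3 T 2 11" by (simp add: add_ac)
  show ?thesis unfolding group16 sum_lt4 o tauE_vals rows_vals s0 s1 s2 s3 ..
qed

lemma lift_tau_10: "(\<Sum>l\<in>K16. theta kB J1 J2 J3 T 10 l * x (orb l)) = (\<Sum>j<4. tauE kB J1 J2 J3 T (orb 10) j * x j)"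
proof -
  have o: "orb 10 = 2" by (simp add: orb_def)
    have s0: "theta kB J1 J2 J3 T 10 1 + theta kB J1 J2 J3 T 10 16 = theta kB J1 J2 J3 T 4 1 + theta kB J1 J2 J3 T 4 16" by (simp add: add_ac)
    have s1: "theta kB J1 J2 J3 T 10 2 + theta kB J1 J2 J3 T 10 3 + theta kB J1 J2 J3 T 10 5 + theta kB J1 J2 J3 T 10 8 + theta kB J1 J2 J3 T 10 9 + theta kB J1 J2 J3 T 10 12 + theta kB J1 J2 J3 T 10 14 + theta kB J1 J2 J3 T 10 15 = theta kB J1 J2 J3 T 4 2 + theta kB J1 J2 J3 T 4 3 + theta kB J1 J2 J3 T 4 5 + theta kB J1 J2 J3 T 4 8 + theta kB J1 J2 J3 T 4 9 + theta kB J1 J2 J3 T 4 12 + theta kB J1 J2 J3 T 4 14 + theta kB J1 J2 J3 T 4 15" by (simp add: add_ac)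
    have s2: "theta kB J1 J2 J3 T 10 4 + theta kB J1 J2 J3 T 10 7 + theta kB J1 J2 J3 T 10 10 + theta kB J1 J2 J3 T 10 13 = theta kB J1 J2 J3 T 4 4 + theta kB J1 J2 J3 T 4 7 + theta kB J1 J2 J3 T 4 10 + theta kB J1 J2 J3 T 4 13" by (simp add: add_ac)
    have s3: "theta kB J1 J2 J3 T 10 6 + theta kB J1 J2 J3 T 10 11 = theta kB J1 J2 J3 T 4 6 + theta kB J1 J2 J3 T 4 11" by (simp add: add_ac)
  show ?thesis unfolding group16 sum_lt4 o tauE_vals rows_vals s0 s1 s2 s3 ..
qed

lemma lift_tau_11: "(\<Sum>l\<in>K16. theta kB J1 J2 J3 T 11 l * x (orb l)) = (\<Sum>j<4. tauE kB J1 J2 J3 T (orb 11) j * x j)"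
proof -
  have o: "orb 11 = 3" by (simp add: orb_def)
    have s0: "theta kB J1 J2 J3 T 11 1 + theta kB J1 J2 J3 T 11 16 = theta kB J1 J2 J3 T 6 1 + theta kB J1 J2 J3 T 6 16" by (simp add: add_ac)
    have s1: "theta kB J1 J2 J3 T 11 2 + theta kB J1 J2 J3 T 11 3 + theta kB J1 J2 J3 T 11 5 + theta kB J1 J2 J3 T 11 8 + theta kB J1 J2 J3 T 11 9 + theta kB J1 J2 J3 T 11 12 + theta kB J1 J2 J3 T 11 14 + theta kB J1 J2 J3 T 11 15 = theta kB J1 J2 J3 T 6 2 + theta kB J1 J2 J3 T 6 3 + theta kB J1 J2 J3 T 6 5 + theta kB J1 J2 J3 T 6 8 + theta kB J1 J2 J3 T 6 9 + theta kB J1 J2 J3 T 6 12 + theta kB J1 J2 J3 T 6 14 + theta kB J1 J2 J3 T 6 15" by (simp add: add_ac)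
    have s2: "theta kB J1 J2 J3 T 11 4 + theta kB J1 J2 J3 T 11 7 + theta kB J1 J2 J3 T 11 10 + theta kB J1 J2 J3 T 11 13 = theta kB J1 J2 J3 T 6 4 + theta kB J1 J2 J3 T 6 7 + theta kB J1 J2 J3 T 6 10 + theta kB J1 J2 J3 T 6 13" by (simp add: add_ac)
    have s3: "theta kB J1 J2 J3 T 11 6 + theta kB J1 J2 J3 T 11 11 = theta kB J1 J2 J3 T 6 6 + theta kB J1 J2 J3 T 6 11" by (simp add: add_ac)
  show ?thesis unfolding group16 sum_lt4 o tauE_vals rows_vals s0 s1 s2 s3 ..
qed

lemma lift_tau_12: "(\<Sum>l\<in>K16. theta kB J1 J2 J3 T 12 l * x (orb l)) = (\<Sum>j<4. tauE kB J1 J2 J3 T (orb 12) j * x j)"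
proof -
  have o: "orb 12 = 1" by (simp add: orb_def)
    have s0: "theta kB J1 J2 J3 T 12 1 + theta kB J1 J2 J3 T 12 16 = theta kB J1 J2 J3 T 2 1 + theta kB J1 J2 J3 T 2 16" by (simp add: add_ac)
    have s1: "theta kB J1 J2 J3 T 12 2 + theta kB J1 J2 J3 T 12 3 + theta kB J1 J2 J3 T 12 5 + theta kB J1 J2 J3 T 12 8 + theta kB J1 J2 J3 T 12 9 + theta kB J1 J2 J3 T 12 12 + theta kB J1 J2 J3 T 12 14 + theta kB J1 J2 J3 T 12 15 = theta kB J1 J2 J3 T 2 2 + theta kB J1 J2 J3 T 2 3 + theta kB J1 J2 J3 T 2 5 + theta kB J1 J2 J3 T 2 8 + theta kB J1 J2 J3 T 2 9 + theta kB J1 J2 J3 T 2 12 + theta kB J1 J2 J3 T 2 14 + theta kB J1 J2 J3 T 2 15" by (simp add: add_ac)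
    have s2: "theta kB J1 J2 J3 T 12 4 + theta kB J1 J2 J3 T 12 7 + theta kB J1 J2 J3 T 12 10 + theta kB J1 J2 J3 T 12 13 = theta kB J1 J2 J3 T 2 4 + theta kB J1 J2 J3 T 2 7 + theta kB J1 J2 J3 T 2 10 + theta kB J1 J2 J3 T 2 13" by (simp add: add_ac)
    have s3: "theta kB J1 J2 J3 T 12 6 + theta kB J1 J2 J3 T 12 11 = theta kB J1 J2 J3 T 2 6 + theta kB J1 J2 J3 T 2 11" by (simp add: add_ac)
  show ?thesis unfolding group16 sum_lt4 o tauE_vals rows_vals s0 s1 s2 s3 ..
qed

lemma lift_tau_13: "(\<Sum>l\<in>K16. theta kB J1 J2 J3 T 13 l * x (orb l)) = (\<Sum>j<4. tauE kB J1 J2 J3 T (orb 13) j * x j)"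
proof -
  have o: "orb 13 = 2" by (simp add: orb_def)
    have s0: "theta kB J1 J2 J3 T 13 1 + theta kB J1 J2 J3 T 13 16 = theta kB J1 J2 J3 T 4 1 + theta kB J1 J2 J3 T 4 16" by (simp add: add_ac)
    have s1: "theta kB J1 J2 J3 T 13 2 + theta kB J1 J2 J3 T 13 3 + theta kB J1 J2 J3 T 13 5 + theta kB J1 J2 J3 T 13 8 + theta kB J1 J2 J3 T 13 9 + theta kB J1 J2 J3 T 13 12 + theta kB J1 J2 J3 T 13 14 + theta kB J1 J2 J3 T 13 15 = theta kB J1 J2 J3 T 4 2 + theta kB J1 J2 J3 T 4 3 + theta kB J1 J2 J3 T 4 5 + theta kB J1 J2 J3 T 4 8 + theta kB J1 J2 J3 T 4 9 + theta kB J1 J2 J3 T 4 12 + theta kB J1 J2 J3 T 4 14 + theta kB J1 J2 J3 T 4 15" by (simp add: add_ac)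
    have s2: "theta kB J1 J2 J3 T 13 4 + theta kB J1 J2 J3 T 13 7 + theta kB J1 J2 J3 T 13 10 + theta kB J1 J2 J3 T 13 13 = theta kB J1 J2 J3 T 4 4 + theta kB J1 J2 J3 T 4 7 + theta kB J1 J2 J3 T 4 10 + theta kB J1 J2 J3 T 4 13" by (simp add: add_ac)
    have s3: "theta kB J1 J2 J3 T 13 6 + theta kB J1 J2 J3 T 13 11 = theta kB J1 J2 J3 T 4 6 + theta kB J1 J2 J3 T 4 11" by (simp add: add_ac)
  show ?thesis unfolding group16 sum_lt4 o tauE_vals rows_vals s0 s1 s2 s3 ..
qed

lemma lift_tau_14: "(\<Sum>l\<in>K16. theta kB J1 J2 J3 T 14 l * x (orb l)) = (\<Sum>j<4. tauE kB J1 J2 J3 T (orb 14) j * x j)"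
proof -
  have o: "orb 14 = 1" by (simp add: orb_def)
    have s0: "theta kB J1 J2 J3 T 14 1 + theta kB J1 J2 J3 T 14 16 = theta kB J1 J2 J3 T 2 1 + theta kB J1 J2 J3 T 2 16" by (simp add: add_ac)
    have s1: "theta kB J1 J2 J3 T 14 2 + theta kB J1 J2 J3 T 14 3 + theta kB J1 J2 J3 T 14 5 + theta kB J1 J2 J3 T 14 8 + theta kB J1 J2 J3 T 14 9 + theta kB J1 J2 J3 T 14 12 + theta kB J1 J2 J3 T 14 14 + theta kB J1 J2 J3 T 14 15 = theta kB J1 J2 J3 T 2 2 + theta kB J1 J2 J3 T 2 3 + theta kB J1 J2 J3 T 2 5 + theta kB J1 J2 J3 T 2 8 + theta kB J1 J2 J3 T 2 9 + theta kB J1 J2 J3 T 2 12 + theta kB J1 J2 J3 T 2 14 + theta kB J1 J2 J3 T 2 15" by (simp add: add_ac)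
    have s2: "theta kB J1 J2 J3 T 14 4 + theta kB J1 J2 J3 T 14 7 + theta kB J1 J2 J3 T 14 10 + theta kB J1 J2 J3 T 14 13 = theta kB J1 J2 J3 T 2 4 + theta kB J1 J2 J3 T 2 7 + theta kB J1 J2 J3 T 2 10 + theta kB J1 J2 J3 T 2 13" by (simp add: add_ac)
    have s3: "theta kB J1 J2 J3 T 14 6 + theta kB J1 J2 J3 T 14 11 = theta kB J1 J2 J3 T 2 6 + theta kB J1 J2 J3 T 2 11" by (simp add: add_ac)
  show ?thesis unfolding group16 sum_lt4 o tauE_vals rows_vals s0 s1 s2 s3 ..
qed

lemma lift_tau_15: "(\<Sum>l\<in>K16. theta kB J1 J2 J3 T 15 l * x (orb l)) = (\<Sum>j<4. tauE kB J1 J2 J3 T (orb 15) j * x j)"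
proof -
  have o: "orb 15 = 1" by (simp add: orb_def)
    have s0: "theta kB J1 J2 J3 T 15 1 + theta kB J1 J2 J3 T 15 16 = theta kB J1 J2 J3 T 2 1 + theta kB J1 J2 J3 T 2 16" by (simp add: add_ac)
    have s1: "theta kB J1 J2 J3 T 15 2 + theta kB J1 J2 J3 T 15 3 + theta kB J1 J2 J3 T 15 5 + theta kB J1 J2 J3 T 15 8 + theta kB J1 J2 J3 T 15 9 + theta kB J1 J2 J3 T 15 12 + theta kB J1 J2 J3 T 15 14 + theta kB J1 J2 J3 T 15 15 = theta kB J1 J2 J3 T 2 2 + theta kB J1 J2 J3 T 2 3 + theta kB J1 J2 J3 T 2 5 + theta kB J1 J2 J3 T 2 8 + theta kB J1 J2 J3 T 2 9 + theta kB J1 J2 J3 T 2 12 + theta kB J1 J2 J3 T 2 14 + theta kB J1 J2 J3 T 2 15" by (simp add: add_ac)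
    have s2: "theta kB J1 J2 J3 T 15 4 + theta kB J1 J2 J3 T 15 7 + theta kB J1 J2 J3 T 15 10 + theta kB J1 J2 J3 T 15 13 = theta kB J1 J2 J3 T 2 4 + theta kB J1 J2 J3 T 2 7 + theta kB J1 J2 J3 T 2 10 + theta kB J1 J2 J3 T 2 13" by (simp add: add_ac)
    have s3: "theta kB J1 J2 J3 T 15 6 + theta kB J1 J2 J3 T 15 11 = theta kB J1 J2 J3 T 2 6 + theta kB J1 J2 J3 T 2 11" by (simp add: add_ac)
  show ?thesis unfolding group16 sum_lt4 o tauE_vals rows_vals s0 s1 s2 s3 ..
qed

lemma lift_tau_16: "(\<Sum>l\<in>K16. theta kB J1 J2 J3 T 16 l * x (orb l)) = (\<Sum>j<4. tauE kB J1 J2 J3 T (orb 16) j * x j)"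
proof -
  have o: "orb 16 = 0" by (simp add: orb_def)
    have s0: "theta kB J1 J2 J3 T 16 1 + theta kB J1 J2 J3 T 16 16 = theta kB J1 J2 J3 T 1 1 + theta kB J1 J2 J3 T 1 16" by (simp add: add_ac)
    have s1: "theta kB J1 J2 J3 T 16 2 + theta kB J1 J2 J3 T 16 3 + theta kB J1 J2 J3 T 16 5 + theta kB J1 J2 J3 T 16 8 + theta kB J1 J2 J3 T 16 9 + theta kB J1 J2 J3 T 16 12 + theta kB J1 J2 J3 T 16 14 + theta kB J1 J2 J3 T 16 15 = theta kB J1 J2 J3 T 1 2 + theta kB J1 J2 J3 T 1 3 + theta kB J1 J2 J3 T 1 5 + theta kB J1 J2 J3 T 1 8 + theta kB J1 J2 J3 T 1 9 + theta kB J1 J2 J3 T 1 12 + theta kB J1 J2 J3 T 1 14 + theta kB J1 J2 J3 T 1 15" by (simp add: add_ac)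
    have s2: "theta kB J1 J2 J3 T 16 4 + theta kB J1 J2 J3 T 16 7 + theta kB J1 J2 J3 T 16 10 + theta kB J1 J2 J3 T 16 13 = theta kB J1 J2 J3 T 1 4 + theta kB J1 J2 J3 T 1 7 + theta kB J1 J2 J3 T 1 10 + theta kB J1 J2 J3 T 1 13" by (simp add: add_ac)
    have s3: "theta kB J1 J2 J3 T 16 6 + theta kB J1 J2 J3 T 16 11 = theta kB J1 J2 J3 T 1 6 + theta kB J1 J2 J3 T 1 11" by (simp add: add_ac)
  show ?thesis unfolding group16 sum_lt4 o tauE_vals rows_vals s0 s1 s2 s3 ..
qed

lemmas lift_tau_all = lift_tau_1 lift_tau_2 lift_tau_3 lift_tau_4 lift_tau_5 lift_tau_6 lift_tau_7 lift_tau_8 lift_tau_9 lift_tau_10 lift_tau_11 lift_tau_12 lift_tau_13 lift_tau_14 lift_tau_15 lift_tau_16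
lemma lift_tau'_1: "(\<Sum>l\<in>K7. theta kB J1 J2 J3 T 1 l * x (orb' l)) = (\<Sum>j<3. tau'E kB J1 J2 J3 T (orb' 1) j * x j)"
proof -
  have o: "orb' 1 = 0" by (simp add: orb'_def)

  show ?thesis unfolding group7 sum_lt3 o tau'E_vals rows'_vals  ..
qed

lemma lift_tau'_2: "(\<Sum>l\<in>K7. theta kB J1 J2 J3 T 2 l * x (orb' l)) = (\<Sum>j<3. tau'E kB J1 J2 J3 T (orb' 2) j * x j)"
proof -
  have o: "orb' 2 = 1" by (simp add: orb'_def)

  show ?thesis unfolding group7 sum_lt3 o tau'E_vals rows'_vals  ..
qed

lemma lift_tau'_3: "(\<Sum>l\<in>K7. theta kB J1 J2 J3 T 3 l * x (orb' l)) = (\<Sum>j<3. tau'E kB J1 J2 J3 T (orb' 3) j * x j)"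
proof -
  have o: "orb' 3 = 1" by (simp add: orb'_def)
    have s0: "theta kB J1 J2 J3 T 3 1 = theta kB J1 J2 J3 T 2 1" by (simp add: add_ac)
    have s1: "theta kB J1 J2 J3 T 3 2 + theta kB J1 J2 J3 T 3 3 + theta kB J1 J2 J3 T 3 5 + theta kB J1 J2 J3 T 3 9 = theta kB J1 J2 J3 T 2 2 + theta kB J1 J2 J3 T 2 3 + theta kB J1 J2 J3 T 2 5 + theta kB J1 J2 J3 T 2 9" by (simp add: add_ac)
    have s2: "theta kB J1 J2 J3 T 3 6 + theta kB J1 J2 J3 T 3 11 = theta kB J1 J2 J3 T 2 6 + theta kB J1 J2 J3 T 2 11" by (simp add: add_ac)
  show ?thesis unfolding group7 sum_lt3 o tau'E_vals rows'_vals s0 s1 s2 ..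
qed

lemma lift_tau'_5: "(\<Sum>l\<in>K7. theta kB J1 J2 J3 T 5 l * x (orb' l)) = (\<Sum>j<3. tau'E kB J1 J2 J3 T (orb' 5) j * x j)"
proof -
  have o: "orb' 5 = 1" by (simp add: orb'_def)
    have s0: "theta kB J1 J2 J3 T 5 1 = theta kB J1 J2 J3 T 2 1" by (simp add: add_ac)
    have s1: "theta kB J1 J2 J3 T 5 2 + theta kB J1 J2 J3 T 5 3 + theta kB J1 J2 J3 T 5 5 + theta kB J1 J2 J3 T 5 9 = theta kB J1 J2 J3 T 2 2 + theta kB J1 J2 J3 T 2 3 + theta kB J1 J2 J3 T 2 5 + theta kB J1 J2 J3 T 2 9" by (simp add: add_ac)
    have s2: "theta kB J1 J2 J3 T 5 6 + theta kB J1 J2 J3 T 5 11 = theta kB J1 J2 J3 T 2 6 + theta kB J1 J2 J3 T 2 11" by (simp add: add_ac)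
  show ?thesis unfolding group7 sum_lt3 o tau'E_vals rows'_vals s0 s1 s2 ..
qed

lemma lift_tau'_9: "(\<Sum>l\<in>K7. theta kB J1 J2 J3 T 9 l * x (orb' l)) = (\<Sum>j<3. tau'E kB J1 J2 J3 T (orb' 9) j * x j)"
proof -
  have o: "orb' 9 = 1" by (simp add: orb'_def)
    have s0: "theta kB J1 J2 J3 T 9 1 = theta kB J1 J2 J3 T 2 1" by (simp add: add_ac)
    have s1: "theta kB J1 J2 J3 T 9 2 + theta kB J1 J2 J3 T 9 3 + theta kB J1 J2 J3 T 9 5 + theta kB J1 J2 J3 T 9 9 = theta kB J1 J2 J3 T 2 2 + theta kB J1 J2 J3 T 2 3 + theta kB J1 J2 J3 T 2 5 + theta kB J1 J2 J3 T 2 9" by (simp add: add_ac)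
    have s2: "theta kB J1 J2 J3 T 9 6 + theta kB J1 J2 J3 T 9 11 = theta kB J1 J2 J3 T 2 6 + theta kB J1 J2 J3 T 2 11" by (simp add: add_ac)
  show ?thesis unfolding group7 sum_lt3 o tau'E_vals rows'_vals s0 s1 s2 ..
qed

lemma lift_tau'_6: "(\<Sum>l\<in>K7. theta kB J1 J2 J3 T 6 l * x (orb' l)) = (\<Sum>j<3. tau'E kB J1 J2 J3 T (orb' 6) j * x j)"
proof -
  have o: "orb' 6 = 2" by (simp add: orb'_def)

  show ?thesis unfolding group7 sum_lt3 o tau'E_vals rows'_vals  ..
qed

lemma lift_tau'_11: "(\<Sum>l\<in>K7. theta kB J1 J2 J3 T 11 l * x (orb' l)) = (\<Sum>j<3. tau'E kB J1 J2 J3 T (orb' 11) j * x j)"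
proof -
  have o: "orb' 11 = 2" by (simp add: orb'_def)
    have s0: "theta kB J1 J2 J3 T 11 1 = theta kB J1 J2 J3 T 6 1" by (simp add: add_ac)
    have s1: "theta kB J1 J2 J3 T 11 2 + theta kB J1 J2 J3 T 11 3 + theta kB J1 J2 J3 T 11 5 + theta kB J1 J2 J3 T 11 9 = theta kB J1 J2 J3 T 6 2 + theta kB J1 J2 J3 T 6 3 + theta kB J1 J2 J3 T 6 5 + theta kB J1 J2 J3 T 6 9" by (simp add: add_ac)
    have s2: "theta kB J1 J2 J3 T 11 6 + theta kB J1 J2 J3 T 11 11 = theta kB J1 J2 J3 T 6 6 + theta kB J1 J2 J3 T 6 11" by (simp add: add_ac)
  show ?thesis unfolding group7 sum_lt3 o tau'E_vals rows'_vals s0 s1 s2 ..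
qed

lemmas lift_tau'_all = lift_tau'_1 lift_tau'_2 lift_tau'_3 lift_tau'_5 lift_tau'_9 lift_tau'_6 lift_tau'_11




declare One_nat_def[simp del]

lemma finK16: "finite K16" "K16 \<noteq> {}" by (simp_all add: K16_def)
lemma finK7: "finite K7" "K7 \<noteq> {}" "K7 \<subseteq> K16" by (simp_all add: K7_def K16_def)

lemma Z_formula:
  "partition_fn kB J1 J2 J3 (Suc n) T = (\<Sum>a\<in>K16. PP K16 (theta kB J1 J2 J3 T) (Suc n) a a)"
proof -
  let ?F = "\<lambda>\<sigma>. exp (- hamiltonian J1 J2 J3 (Suc n) \<sigma> / (kB * T))"
  have "partition_fn kB J1 J2 J3 (Suc n) T = (\<Sum>\<sigma>\<in>{\<sigma>\<in>configs (Suc n). \<forall>m<Suc n. code (\<lambda>i. \<sigma> (i,m)) \<in> K16}. ?F \<sigma>)"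
    unfolding partition_fn_def by (simp only: configs_all[symmetric])
  also have "\<dots> = (\<Sum>c\<in>{..<Suc n} \<rightarrow>\<^sub>E K16. ?F (Psi (Suc n) c))"
    by (rule configs_reindex) simp
  also have "\<dots> = (\<Sum>c\<in>{..<Suc n} \<rightarrow>\<^sub>E K16. \<Prod>m<Suc n. theta kB J1 J2 J3 T (c m) (c (Suc m mod Suc n)))"
    by (intro sum.cong refl weight_Psi) simp
  also have "\<dots> = (\<Sum>a\<in>K16. PP K16 (theta kB J1 J2 J3 T) (Suc n) a a)"
    by (rule cyclic_sum[OF finK16(1)])
  finally show ?thesis .
qed

lemma Z'_formula:
  "partition_fn' kB J1 J2 J3 (Suc n) T = (\<Sum>a\<in>K7. PP K7 (theta kB J1 J2 J3 T) (Suc n) a a)"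
proof -
  let ?F = "\<lambda>\<sigma>. exp (- hamiltonian J1 J2 J3 (Suc n) \<sigma> / (kB * T))"
  have "partition_fn' kB J1 J2 J3 (Suc n) T = (\<Sum>\<sigma>\<in>{\<sigma>\<in>configs (Suc n). \<forall>m<Suc n. code (\<lambda>i. \<sigma> (i,m)) \<in> K7}. ?F \<sigma>)"
    unfolding partition_fn'_def by (simp only: nonperc_all)
  also have "\<dots> = (\<Sum>c\<in>{..<Suc n} \<rightarrow>\<^sub>E K7. ?F (Psi (Suc n) c))"
    by (rule configs_reindex) (rule finK7(3))
  also have "\<dots> = (\<Sum>c\<in>{..<Suc n} \<rightarrow>\<^sub>E K7. \<Prod>m<Suc n. theta kB J1 J2 J3 T (c m) (c (Suc m mod Suc n)))"
    by (intro sum.cong refl weight_Psi) simp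
  also have "\<dots> = (\<Sum>a\<in>K7. PP K7 (theta kB J1 J2 J3 T) (Suc n) a a)"
    by (rule cyclic_sum[OF finK7(1)])
  finally show ?thesis .
qed

lemma lift16:
  assumes "k \<in> K16"
  shows "(\<Sum>l\<in>K16. theta kB J1 J2 J3 T k l * x (orb l)) = (\<Sum>j<4. tauE kB J1 J2 J3 T (orb k) j * x j)"
proof -
  have "k = 1 \<or> k = 2 \<or> k = 3 \<or> k = 4 \<or> k = 5 \<or> k = 6 \<or> k = 7 \<or> k = 8 \<or> k = 9 \<or> k = 10
     \<or> k = 11 \<or> k = 12 \<or> k = 13 \<or> k = 14 \<or> k = 15 \<or> k = 16" using assms by (simp add: K16_def)
  thus ?thesis by (elim disjE; simp only: lift_tau_all)
qed

lemma lift7: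
  assumes "k \<in> K7"
  shows "(\<Sum>l\<in>K7. theta kB J1 J2 J3 T k l * x (orb' l)) = (\<Sum>j<3. tau'E kB J1 J2 J3 T (orb' k) j * x j)"
proof -
  have "k = 1 \<or> k = 2 \<or> k = 3 \<or> k = 5 \<or> k = 6 \<or> k = 9 \<or> k = 11" using assms by (simp add: K7_def)
  thus ?thesis by (elim disjE; simp only: lift_tau'_all)
qed

lemma orb_lt: "orb k < 4" by (simp add: orb_def)
lemma orb'_lt: "orb' k < 3" by (simp add: orb'_def)

lemma tau_mat_eq: "tau_mat kB J1 J2 J3 T = mat 4 4 (\<lambda>(i,j). tauE kB J1 J2 J3 T i j)"
  unfolding tau_mat_def tauE_def ..

lemma tau'_mat_eq: "tau'_mat kB J1 J2 J3 T = mat 3 3 (\<lambda>(i,j). tau'E kB J1 J2 J3 T i j)"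
  unfolding tau'_mat_def tau'E_def ..

lemma theta_pos: "theta kB J1 J2 J3 T k l > 0" by (simp add: theta_def)

lemma tauE_pos: "i < 4 \<Longrightarrow> j < 4 \<Longrightarrow> tauE kB J1 J2 J3 T i j > 0"
  unfolding lt4 by (elim disjE) (simp_all add: tauE_vals theta_pos add_pos_pos)

lemma tau'E_pos: "i < 3 \<Longrightarrow> j < 3 \<Longrightarrow> tau'E kB J1 J2 J3 T i j > 0"
proof -
  have lt3: "(i::nat) < 3 \<longleftrightarrow> i = 0 \<or> i = 1 \<or> i = 2" for i by presburger
  show "i < 3 \<Longrightarrow> j < 3 \<Longrightarrow> tau'E kB J1 J2 J3 T i j > 0"
    unfolding lt3 by (elim disjE) (simp_all add: tau'E_vals theta_pos add_pos_pos)
qed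

lemma lambda_limit:
  "(\<lambda>M. ln (partition_fn kB J1 J2 J3 M T) / real M) \<longlonglongrightarrow> ln (lambda_max kB J1 J2 J3 T)
   \<and> lambda_max kB J1 J2 J3 T > 0"
proof -
  let ?lam = "lambda_max kB J1 J2 J3 T"
  have "\<exists>x. largest_real_eig (mat 4 4 (\<lambda>(i,j). tauE kB J1 J2 J3 T i j)) > 0 \<and> (\<forall>i<4. x i > 0) \<and>
    (\<forall>i<4. (\<Sum>j<4. tauE kB J1 J2 J3 T i j * x j) = largest_real_eig (mat 4 4 (\<lambda>(i,j). tauE kB J1 J2 J3 T i j)) * x i)"
    by (rule perron_vector[where 'n=4]) (simp_all add: tauE_pos)
  then obtain x where lam: "?lam > 0" and xpos: "\<forall>i<4. x i > 0"
    and ex: "\<forall>i<4. (\<Sum>j<4. tauE kB J1 J2 J3 T i j * x j) = ?lam * x i"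
    unfolding lambda_max_def tau_mat_eq by blast
  define v where "v l = x (orb l)" for l
  have vpos: "v l > 0" for l using xpos orb_lt by (simp add: v_def)
  have eig: "(\<Sum>b\<in>K16. theta kB J1 J2 J3 T a b * v b) = ?lam * v a" if "a \<in> K16" for a
    unfolding v_def lift16[OF that] using ex orb_lt by simp
  obtain c C where cC: "c > 0" "C > 0"
    and b: "\<forall>n. c * ?lam ^ n \<le> (\<Sum>a\<in>K16. PP K16 (theta kB J1 J2 J3 T) (Suc n) a a)
      \<and> (\<Sum>a\<in>K16. PP K16 (theta kB J1 J2 J3 T) (Suc n) a a) \<le> C * ?lam ^ n"
    using Z_bounds[OF finK16 theta_pos vpos eig] by blast
  have "(\<lambda>M. ln (partition_fn kB J1 J2 J3 M T) / real M) \<longlonglongrightarrow> ln ?lam"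
    by (rule log_limit[OF cC lam]) (use b in \<open>simp add: Z_formula\<close>)
  thus ?thesis using lam by simp
qed

lemma mu_limit:
  "(\<lambda>M. ln (partition_fn' kB J1 J2 J3 M T) / real M) \<longlonglongrightarrow> ln (mu_max kB J1 J2 J3 T)
   \<and> mu_max kB J1 J2 J3 T > 0"
proof -
  let ?lam = "mu_max kB J1 J2 J3 T"
  have "\<exists>x. largest_real_eig (mat 3 3 (\<lambda>(i,j). tau'E kB J1 J2 J3 T i j)) > 0 \<and> (\<forall>i<3. x i > 0) \<and>
    (\<forall>i<3. (\<Sum>j<3. tau'E kB J1 J2 J3 T i j * x j) = largest_real_eig (mat 3 3 (\<lambda>(i,j). tau'E kB J1 J2 J3 T i j)) * x i)"
    by (rule perron_vector[where 'n=3]) (simp_all add: tau'E_pos)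
  then obtain x where lam: "?lam > 0" and xpos: "\<forall>i<3. x i > 0"
    and ex: "\<forall>i<3. (\<Sum>j<3. tau'E kB J1 J2 J3 T i j * x j) = ?lam * x i"
    unfolding mu_max_def tau'_mat_eq by blast
  define v where "v l = x (orb' l)" for l
  have vpos: "v l > 0" for l using xpos orb'_lt by (simp add: v_def)
  have eig: "(\<Sum>b\<in>K7. theta kB J1 J2 J3 T a b * v b) = ?lam * v a" if "a \<in> K7" for a
    unfolding v_def lift7[OF that] using ex orb'_lt by simp
  obtain c C where cC: "c > 0" "C > 0"
    and b: "\<forall>n. c * ?lam ^ n \<le> (\<Sum>a\<in>K7. PP K7 (theta kB J1 J2 J3 T) (Suc n) a a)
      \<and> (\<Sum>a\<in>K7. PP K7 (theta kB J1 J2 J3 T) (Suc n) a a) \<le> C * ?lam ^ n"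
    using Z_bounds[OF finK7(1,2) theta_pos vpos eig] by blast
  have "(\<lambda>M. ln (partition_fn' kB J1 J2 J3 M T) / real M) \<longlonglongrightarrow> ln ?lam"
    by (rule log_limit[OF cC lam]) (use b in \<open>simp add: Z'_formula\<close>)
  thus ?thesis using lam by simp
qed




declare One_nat_def[simp del]

lemma lambda_smooth:
  assumes kB: "kB > 0"
  shows "\<exists>L1. \<forall>s>0. lambda_max kB J1 J2 J3 s > 0
    \<and> ((\<lambda>s. lambda_max kB J1 J2 J3 s) has_real_derivative L1 s) (at s) \<and> L1 field_differentiable (at s)"
proof -
  define E where "E i l = cube_energy J1 J2 J3 (state_spin (rows_tau ! i)) (state_spin l)" for i l
  define a where "a i j s = (if i < 4 \<and> j < 4 then (\<Sum>l\<in>groups_tau ! j. exp (- E i l / (kB * s))) else 0)" for i j s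
  define a' where "a' i j s = (if i < 4 \<and> j < 4 then (\<Sum>l\<in>groups_tau ! j. exp (- E i l / (kB * s)) * (E i l / (kB * s^2))) else 0)" for i j s
  have aeq: "a i j s = tauE kB J1 J2 J3 s i j" if "i<4" "j<4" for i j s
    using that by (simp add: a_def tauE_def theta_def E_def)
  have mat_eq: "mat 4 4 (\<lambda>(i,j). a i j s) = tau_mat kB J1 J2 J3 s" for s
    unfolding tau_mat_eq by (rule eq_matI) (auto simp: aeq)
  have pos: "a i j s > 0" if "s>0" "i<4" "j<4" for s i j using aeq tauE_pos that by simp
  have dexp: "((\<lambda>s. exp (- e / (kB * s))) has_real_derivative exp (- e / (kB * s)) * (e / (kB * s^2))) (at s)"
    if "s > 0" for e s
    using that kB by (auto intro!: derivative_eq_intros simp: field_simps power2_eq_square)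
  have ader: "(a i j has_real_derivative a' i j s) (at s)" if "s > 0" for s i j
  proof (cases "i < 4 \<and> j < 4")
    case True
    have "((\<lambda>s. \<Sum>l\<in>groups_tau ! j. exp (- E i l / (kB * s))) has_real_derivative
        (\<Sum>l\<in>groups_tau ! j. exp (- E i l / (kB * s)) * (E i l / (kB * s^2)))) (at s)"
      by (intro DERIV_sum dexp[OF that])
    moreover have "a i j = (\<lambda>s. \<Sum>l\<in>groups_tau ! j. exp (- E i l / (kB * s)))"
      using True by (simp add: a_def fun_eq_iff)
    ultimately show ?thesis using True by (simp add: a'_def)
  next
    case False
    hence "a i j = (\<lambda>s. 0)" "a' i j s = 0" by (auto simp: a_def a'_def fun_eq_iff)
    thus ?thesis by simp
  qed
  have a'd: "a' i j field_differentiable (at s)" if s: "s > 0" for s i j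
  proof (cases "i < 4 \<and> j < 4")
    case True
    hence "a' i j = (\<lambda>s. \<Sum>l\<in>groups_tau ! j. exp (- E i l / (kB * s)) * (E i l / (kB * s^2)))"
      by (simp add: a'_def fun_eq_iff)
    moreover have "(\<lambda>s. \<Sum>l\<in>groups_tau ! j. exp (- E i l / (kB * s)) * (E i l / (kB * s^2))) field_differentiable (at s)"
      unfolding field_differentiable_def
      using s kB by (intro exI) (auto intro!: derivative_eq_intros)
    ultimately show ?thesis by simp
  next
    case False
    hence "a' i j = (\<lambda>s. 0)" by (auto simp: a'_def fun_eq_iff)
    thus ?thesis by simp
  qed
  have "\<exists>L1. \<forall>s>0. largest_real_eig (mat 4 4 (\<lambda>(i,j). a i j s)) > 0
     \<and> ((\<lambda>s. largest_real_eig (mat 4 4 (\<lambda>(i,j). a i j s))) has_real_derivative L1 s) (at s)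
     \<and> L1 field_differentiable (at s)"
    by (rule perron_smooth[where 'n=4 and a'=a']) (simp_all add: pos ader a'd)
  thus ?thesis unfolding mat_eq lambda_max_def .
qed

lemma ones_nonperc: "(\<lambda>p. if p \<in> {..<4} \<times> {..<M} then 1 else undefined) \<in> nonperc_configs M"
  unfolding nonperc_configs_def configs_def by (auto simp: PiE_iff extensional_def)

lemma Z_pos: "partition_fn kB J1 J2 J3 M T > 0"
  unfolding partition_fn_def
proof (rule sum_pos)
  show "finite (configs M)" unfolding configs_def by (rule finite_PiE) auto
  show "configs M \<noteq> {}" using ones_nonperc[of M] by (auto simp: nonperc_configs_def)
qed simp

lemma Z'_pos: "partition_fn' kB J1 J2 J3 M T > 0"
  unfolding partition_fn'_def
proof (rule sum_pos)
  have "finite (configs M)" unfolding configs_def by (rule finite_PiE) auto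
  thus "finite (nonperc_configs M)" unfolding nonperc_configs_def by simp
  show "nonperc_configs M \<noteq> {}" using ones_nonperc[of M] by auto
qed simp




declare One_nat_def[simp del]

theorem theorem6:
  fixes kB J1 J2 J3 T :: real
  assumes "kB > 0" and "T > 0"
  defines "g \<equiv> (\<lambda>t. ln (lambda_max kB J1 J2 J3 t) / 4)"
  shows "((\<lambda>M. ln (partition_fn kB J1 J2 J3 M T) / (4 * real M)) \<longlonglongrightarrow> g T)
    \<and> free_energy kB J1 J2 J3 T = - kB * T / 4 * ln (lambda_max kB J1 J2 J3 T)
    \<and> internal_energy kB J1 J2 J3 T = kB * (T ^ 2) * deriv g T
    \<and> heat_capacity kB J1 J2 J3 T = 2 * kB * T * deriv g T + kB * (T ^ 2) * deriv (deriv g) T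
    \<and> ((\<lambda>M. ln (partition_fn' kB J1 J2 J3 M T / partition_fn kB J1 J2 J3 M T) / real M)
           \<longlonglongrightarrow> ln (mu_max kB J1 J2 J3 T / lambda_max kB J1 J2 J3 T))"
proof -
  note kB = assms(1) and T = assms(2)
  obtain L1 where L: "\<And>s. s > 0 \<Longrightarrow> lambda_max kB J1 J2 J3 s > 0
     \<and> ((\<lambda>s. lambda_max kB J1 J2 J3 s) has_real_derivative L1 s) (at s) \<and> L1 field_differentiable (at s)"
    using lambda_smooth[OF kB, of J1 J2 J3] by blast
  define lam where "lam s = lambda_max kB J1 J2 J3 s" for s
  have lpos: "lam s > 0" if "s > 0" for s using L[OF that] by (simp add: lam_def)
  have lder: "(lam has_real_derivative L1 s) (at s)" if "s > 0" for s
    using L[OF that] by (simp add: lam_def[abs_def])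
  have L1d: "L1 field_differentiable (at s)" if "s > 0" for s using L[OF that] by simp
  have g_eq: "g = (\<lambda>t. ln (lam t) / 4)" by (simp add: g_def lam_def[abs_def])
  define G1 where "G1 t = L1 t / (4 * lam t)" for t
  have gder: "(g has_real_derivative G1 t) (at t)" if t: "t > 0" for t
    unfolding g_eq G1_def using lder[OF t] lpos[OF t]
    by (auto intro!: derivative_eq_intros simp: field_simps)
  have dg: "deriv g t = G1 t" if "t > 0" for t using gder[OF that] by (rule DERIV_imp_deriv)
  have evpos: "eventually (\<lambda>u. u > 0) (nhds t)" if "t > 0" for t :: real
    using eventually_nhds_in_open[of "{0<..}" t] that by simp
  have lim: "(\<lambda>M. ln (partition_fn kB J1 J2 J3 M t) / (4 * real M)) \<longlonglongrightarrow> g t" for t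
  proof -
    have "(\<lambda>M. ln (partition_fn kB J1 J2 J3 M t) / real M / 4) \<longlonglongrightarrow> ln (lambda_max kB J1 J2 J3 t) / 4"
      using tendsto_divide[OF conjunct1[OF lambda_limit[of kB J1 J2 J3 t]] tendsto_const, of 4] by simp
    thus ?thesis by (simp add: g_def divide_divide_eq_left mult.commute)
  qed
  have fe: "free_energy kB J1 J2 J3 t = - kB * t * g t" for t
    unfolding free_energy_def using limI[OF lim[of t]] by simp
  have ie: "internal_energy kB J1 J2 J3 t = kB * t^2 * G1 t" if t: "t > 0" for t
  proof -
    have "eventually (\<lambda>u. free_energy kB J1 J2 J3 u / u = - kB * g u) (nhds t)"
      using evpos[OF t] by eventually_elim (simp add: fe)
    hence "deriv (\<lambda>u. free_energy kB J1 J2 J3 u / u) t = deriv (\<lambda>u. - kB * g u) t"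
      by (rule deriv_cong_ev) simp
    also have "\<dots> = - kB * G1 t"
      by (rule DERIV_imp_deriv) (rule DERIV_cmult[OF gder[OF t]])
    finally show ?thesis unfolding internal_energy_def by simp
  qed
  have G1d: "G1 field_differentiable (at T)"
    unfolding G1_def[abs_def]
  proof (rule field_differentiable_divide)
    show "L1 field_differentiable (at T)" by (rule L1d[OF T])
    show "(\<lambda>t. 4 * lam t) field_differentiable (at T)"
      using lder[OF T] unfolding field_differentiable_def
      by (auto intro!: derivative_eq_intros)
    show "4 * lam T \<noteq> 0" using lpos[OF T] by simp
  qed
  then obtain D2 where D2: "(G1 has_real_derivative D2) (at T)" unfolding field_differentiable_def by blast
  have ddg: "deriv (deriv g) T = D2"
  proof -
    have "eventually (\<lambda>u. deriv g u = G1 u) (nhds T)"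
      using evpos[OF T] by eventually_elim (simp add: dg)
    hence "deriv (deriv g) T = deriv G1 T" by (rule deriv_cong_ev) simp
    also have "\<dots> = D2" using D2 by (rule DERIV_imp_deriv)
    finally show ?thesis .
  qed
  have hc: "heat_capacity kB J1 J2 J3 T = 2 * kB * T * G1 T + kB * T^2 * D2"
  proof -
    have "eventually (\<lambda>u. internal_energy kB J1 J2 J3 u = kB * u^2 * G1 u) (nhds T)"
      using evpos[OF T] by eventually_elim (simp add: ie)
    hence "heat_capacity kB J1 J2 J3 T = deriv (\<lambda>u. kB * u^2 * G1 u) T"
      unfolding heat_capacity_def by (rule deriv_cong_ev) simp
    also have "\<dots> = 2 * kB * T * G1 T + kB * T^2 * D2"
      by (rule DERIV_imp_deriv) (auto intro!: derivative_eq_intros D2 simp: algebra_simps)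
    finally show ?thesis .
  qed
  have ratio: "((\<lambda>M. ln (partition_fn' kB J1 J2 J3 M T / partition_fn kB J1 J2 J3 M T) / real M)
           \<longlonglongrightarrow> ln (mu_max kB J1 J2 J3 T / lambda_max kB J1 J2 J3 T))"
  proof -
    have l1: "(\<lambda>M. ln (partition_fn kB J1 J2 J3 M T) / real M) \<longlonglongrightarrow> ln (lambda_max kB J1 J2 J3 T)"
      and p1: "lambda_max kB J1 J2 J3 T > 0" using lambda_limit by blast+
    have l2: "(\<lambda>M. ln (partition_fn' kB J1 J2 J3 M T) / real M) \<longlonglongrightarrow> ln (mu_max kB J1 J2 J3 T)"
      and p2: "mu_max kB J1 J2 J3 T > 0" using mu_limit by blast+
    have "(\<lambda>M. ln (partition_fn' kB J1 J2 J3 M T) / real M - ln (partition_fn kB J1 J2 J3 M T) / real M)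
        \<longlonglongrightarrow> ln (mu_max kB J1 J2 J3 T) - ln (lambda_max kB J1 J2 J3 T)"
      by (rule tendsto_diff[OF l2 l1])
    moreover have "ln (partition_fn' kB J1 J2 J3 M T) / real M - ln (partition_fn kB J1 J2 J3 M T) / real M
        = ln (partition_fn' kB J1 J2 J3 M T / partition_fn kB J1 J2 J3 M T) / real M" for M
      using Z_pos[of kB J1 J2 J3 M T] Z'_pos[of kB J1 J2 J3 M T] by (simp add: ln_div diff_divide_distrib)
    moreover have "ln (mu_max kB J1 J2 J3 T) - ln (lambda_max kB J1 J2 J3 T) = ln (mu_max kB J1 J2 J3 T / lambda_max kB J1 J2 J3 T)"
      using p1 p2 by (simp add: ln_div)
    ultimately show ?thesis by simp
  qed
  show ?thesis
  proof (intro conjI)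
    show "(\<lambda>M. ln (partition_fn kB J1 J2 J3 M T) / (4 * real M)) \<longlonglongrightarrow> g T" by (rule lim)
    show "free_energy kB J1 J2 J3 T = - kB * T / 4 * ln (lambda_max kB J1 J2 J3 T)"
      by (simp add: fe g_def)
    show "internal_energy kB J1 J2 J3 T = kB * T\<^sup>2 * deriv g T" by (simp add: ie[OF T] dg[OF T])
    show "heat_capacity kB J1 J2 J3 T = 2 * kB * T * deriv g T + kB * T\<^sup>2 * deriv (deriv g) T"
      by (simp add: hc dg[OF T] ddg)
    show "(\<lambda>M. ln (partition_fn' kB J1 J2 J3 M T / partition_fn kB J1 J2 J3 M T) / real M)
        \<longlonglongrightarrow> ln (mu_max kB J1 J2 J3 T / lambda_max kB J1 J2 J3 T)" by (rule ratio)
  qed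
qed


end
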